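(* Let $L_h,L_m,L_s,n_m,n_h$ be positive integers, $\mathbf{Y}_h\in\mathbb{R}^{L_h\times n_h}$, $\mathbf{Y}_m\in\mathbb{R}^{L_m\times n_m}$, $\mathbf{B}\in\mathbb{R}^{n_m\times n_m}$ (a cyclic spatial low-pass filter), $\mathbf{M}\in\mathbb{R}^{n_m\times n_h}$ (a spatial subsampling operator), $\mathbf{R}\in\mathbb{R}^{L_m\times L_h}$, $\mathbf{E}\in\mathbb{R}^{L_h\times L_s}$, and $\rho,\lambda,\tau>0$. Let $\mathbf{W}\in\mathbb{R}^{n_m\times n_m}$ be the scene-adapted GMM denoiser matrix $\mathbf{W}=\frac1{n_p}\sum_{i=1}^N\mathbf{P}_i^T\mathbf{F}_i\mathbf{P}_i$, $\mathbf{F}_i=\sum_{j=1}^K\beta_j^i\mathbf{C}_j(\mathbf{C}_j+\sigma^2\mathbf{I})^{-1}$, with $\sigma^2=\tau/\rho$, where $\mathbf{P}_i\in\{0,1\}^{n_p\times n_m}$ extracts the $i$-th of the $N$ patches of $n_p$ pixels (unit stride, periodic boundaries), $\mathbf{C}_1,\dots,\mathbf{C}_K$ are symmetric positive semi-definite $n_p\times n_p$ matrices and $\beta_j^i\ge0$, $\sum_j\beta_j^i=1$ for each $i$. Starting from $\mathbf{V}_1^{(0)}=\mathbf{V}_2^{(0)}=\mathbf{V}_3^{(0)}=\mathbf{D}_1^{(0)}=\mathbf{D}_2^{(0)}=\mathbf{D}_3^{(0)}=0$, consider the iteration (Algorithm 1, PnP-SALSA for hyperspectral sharpening), for $k=0,1,\dots$: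 $\mathbf{X}^{(k+1)}=\arg\min_{\mathbf{X}}\|\mathbf{X}\mathbf{B}-\mathbf{V}_1^{(k)}-\mathbf{D}_1^{(k)}\|_F^2+\|\mathbf{X}-\mathbf{V}_2^{(k)}-\mathbf{D}_2^{(k)}\|_F^2+\|\mathbf{X}-\mathbf{V}_3^{(k)}-\mathbf{D}_3^{(k)}\|_F^2$; $\mathbf{V}_1^{(k+1)}=\arg\min_{\mathbf{V}_1}\|\mathbf{E}\mathbf{V}_1\mathbf{M}-\mathbf{Y}_h\|_F^2+\rho\|\mathbf{X}^{(k+1)}\mathbf{B}-\mathbf{V}_1-\mathbf{D}_1^{(k)}\|_F^2$; $\mathbf{V}_2^{(k+1)}=\arg\min_{\mathbf{V}_2}\lambda\|\mathbf{R}\mathbf{E}\mathbf{V}_2-\mathbf{Y}_m\|_F^2+\rho\|\mathbf{X}^{(k+1)}-\mathbf{V}_2-\mathbf{D}_2^{(k)}\|_F^2$; $\mathbf{V}_3^{(k+1)}=$ the result of applying $\mathbf{W}$ to each of the $L_s$ rows (coefficient images) of $\mathbf{X}^{(k+1)}-\mathbf{D}_3^{(k)}$; $\mathbf{D}_1^{(k+1)}=\mathbf{D}_1^{(k)}-(\mathbf{X}^{(k+1)}\mathbf{B}-\mathbf{V}_1^{(k+1)})$, $\mathbf{D}_2^{(k+1)}=\mathbf{D}_2^{(k)}-(\mathbf{X}^{(k+1)}-\mathbf{V}_2^{(k+1)})$, $\mathbf{D}_3^{(k+1)}=\mathbf{D}_3^{(k)}-(\mathbf{X}^{(k+1)}-\mathbf{V}_3^{(k+1)})$.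 Then Algorithm 1 converges (the sequence $(\mathbf{X}^{(k)})$ converges).
   Context: This iteration is SALSA/ADMM with penalty $\rho$ applied to $\min_{\mathbf{X}\in\mathbb{R}^{L_s\times n_m}}\frac12\|\mathbf{E}\mathbf{X}\mathbf{B}\mathbf{M}-\mathbf{Y}_h\|_F^2+\frac\lambda2\|\mathbf{R}\mathbf{E}\mathbf{X}-\mathbf{Y}_m\|_F^2+\tau\phi(\mathbf{X})$, where $\phi$ is the convex function whose proximity operator is the (row-wise) linear denoiser $\mathbf{W}$; the high-resolution hyperspectral estimate is $\mathbf{E}\mathbf{X}$. $\|\cdot\|_F$ is the Frobenius norm. *)

theory Defs
  imports Complex_Main "Jordan_Normal_Form.Matrix"
begin

definition frob_norm :: "real mat \<Rightarrow> real" where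
  "frob_norm A = sqrt (\<Sum>i<dim_row A. \<Sum>j<dim_col A. (A $$ (i,j))\<^sup>2)"

definition psd_mat :: "nat \<Rightarrow> real mat \<Rightarrow> bool" where
  "psd_mat n C \<longleftrightarrow> C \<in> carrier_mat n n \<and> transpose_mat C = C \<and>
     (\<forall>v \<in> carrier_vec n. 0 \<le> v \<bullet> (C *\<^sub>v v))"

definition inv_mat :: "nat \<Rightarrow> real mat \<Rightarrow> real mat" where
  "inv_mat n A = (SOME Bi. Bi \<in> carrier_mat n n \<and> A * Bi = 1\<^sub>m n \<and> Bi * A = 1\<^sub>m n)"

definition msum :: "nat \<Rightarrow> nat \<Rightarrow> ('i \<Rightarrow> real mat) \<Rightarrow> 'i set \<Rightarrow> real mat" where
  "msum n m f S = mat n m (\<lambda>(a,b). \<Sum>x\<in>S. f x $$ (a,b))"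

definition pix :: "nat \<Rightarrow> nat \<Rightarrow> nat \<Rightarrow> nat" where
  "pix w r c = r * w + c"

(* P_i: extracts the p x p patch (n_p = p*p pixels) whose top-left corner is pixel i
   of the h x w image (n_m = h*w pixels), unit stride, periodic boundaries *)
definition patch_mat :: "nat \<Rightarrow> nat \<Rightarrow> nat \<Rightarrow> nat \<Rightarrow> real mat" where
  "patch_mat h w p i = mat (p*p) (h*w)
     (\<lambda>(u,j). if j = pix w ((i div w + u div p) mod h) ((i mod w + u mod p) mod w) then 1 else 0)"

definition gmm_F :: "nat \<Rightarrow> nat \<Rightarrow> (nat \<Rightarrow> real mat) \<Rightarrow> (nat \<Rightarrow> nat \<Rightarrow> real) \<Rightarrow> real \<Rightarrow> nat \<Rightarrow> real mat" where
  "gmm_F np K C beta sigma2 i =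
     msum np np (\<lambda>j. beta j i \<cdot>\<^sub>m (C j * inv_mat np (C j + sigma2 \<cdot>\<^sub>m 1\<^sub>m np))) {..<K}"

(* W = (1/n_p) sum_{i=1}^N P_i^T F_i P_i, with N = n_m patches (one per pixel) *)
definition gmm_W :: "nat \<Rightarrow> nat \<Rightarrow> nat \<Rightarrow> nat \<Rightarrow> (nat \<Rightarrow> real mat) \<Rightarrow> (nat \<Rightarrow> nat \<Rightarrow> real) \<Rightarrow> real \<Rightarrow> real mat" where
  "gmm_W h w p K C beta sigma2 =
     (1 / real (p*p)) \<cdot>\<^sub>m msum (h*w) (h*w)
        (\<lambda>i. transpose_mat (patch_mat h w p i) * gmm_F (p*p) K C beta sigma2 i * patch_mat h w p i)
        {..<h*w}"

end

theory Submission
  imports Defs "Jordan_Normal_Form.Determinant"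
begin

definition fip :: "real mat \<Rightarrow> real mat \<Rightarrow> real" where
  "fip A B = (\<Sum>i<dim_row A. \<Sum>j<dim_col A. A $$ (i,j) * B $$ (i,j))"

lemma frob_sq: "(frob_norm A)\<^sup>2 = fip A A"
  unfolding frob_norm_def fip_def
  by (subst real_sqrt_pow2) (auto intro!: sum_nonneg simp: power2_eq_square)

lemma fip_comm: "A \<in> carrier_mat r c \<Longrightarrow> B \<in> carrier_mat r c \<Longrightarrow> fip A B = fip B A"
  unfolding fip_def by (auto simp: mult.commute)

lemma fip_add_left: "A \<in> carrier_mat r c \<Longrightarrow> B \<in> carrier_mat r c \<Longrightarrow> C \<in> carrier_mat r c \<Longrightarrow>
  fip (A + B) C = fip A C + fip B C"
  unfolding fip_def by (auto simp: algebra_simps sum.distrib)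

lemma fip_add_right: "A \<in> carrier_mat r c \<Longrightarrow> B \<in> carrier_mat r c \<Longrightarrow> C \<in> carrier_mat r c \<Longrightarrow>
  fip C (A + B) = fip C A + fip C B"
  unfolding fip_def by (auto simp: algebra_simps sum.distrib)

lemma fip_minus_left: "A \<in> carrier_mat r c \<Longrightarrow> B \<in> carrier_mat r c \<Longrightarrow> C \<in> carrier_mat r c \<Longrightarrow>
  fip (A - B) C = fip A C - fip B C"
  unfolding fip_def by (auto simp: algebra_simps sum_subtractf)

lemma fip_minus_right: "A \<in> carrier_mat r c \<Longrightarrow> B \<in> carrier_mat r c \<Longrightarrow> C \<in> carrier_mat r c \<Longrightarrow>
  fip C (A - B) = fip C A - fip C B"
  unfolding fip_def by (auto simp: algebra_simps sum_subtractf)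

lemma fip_smult_left: "A \<in> carrier_mat r c \<Longrightarrow> C \<in> carrier_mat r c \<Longrightarrow>
  fip (a \<cdot>\<^sub>m A) C = a * fip A C"
  unfolding fip_def by (auto simp: algebra_simps sum_distrib_left)

lemma fip_smult_right: "A \<in> carrier_mat r c \<Longrightarrow> C \<in> carrier_mat r c \<Longrightarrow>
  fip C (a \<cdot>\<^sub>m A) = a * fip C A"
  unfolding fip_def by (auto simp: algebra_simps sum_distrib_left)

lemma fip_zero_right: "A \<in> carrier_mat r c \<Longrightarrow> fip A (0\<^sub>m r c) = 0"
  unfolding fip_def by auto

lemma fip_zero_left: "A \<in> carrier_mat r c \<Longrightarrow> fip (0\<^sub>m r c) A = 0"
  unfolding fip_def by auto

lemma fip_nonneg: "0 \<le> fip A A"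
  unfolding fip_def by (auto intro!: sum_nonneg)

lemma entry_sq_le: assumes "A \<in> carrier_mat r c" "i < r" "j < c"
  shows "(A $$ (i,j))\<^sup>2 \<le> fip A A"
proof -
  have "(A $$ (i,j))\<^sup>2 \<le> (\<Sum>j'<c. A $$ (i,j') * A $$ (i,j'))"
    using member_le_sum[of j "{..<c}" "\<lambda>j'. A $$ (i,j') * A $$ (i,j')"] assms
    by (auto simp: power2_eq_square)
  also have "\<dots> \<le> (\<Sum>i'<r. \<Sum>j'<c. A $$ (i',j') * A $$ (i',j'))"
    by (rule member_le_sum) (use assms in \<open>auto intro!: sum_nonneg\<close>)
  finally show ?thesis using assms unfolding fip_def by auto
qed

lemma fip_zero_iff: assumes "A \<in> carrier_mat r c"
  shows "fip A A = 0 \<longleftrightarrow> A = 0\<^sub>m r c"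
proof
  assume h: "fip A A = 0"
  show "A = 0\<^sub>m r c"
  proof (rule eq_matI)
    fix i j assume "i < dim_row (0\<^sub>m r c)" "j < dim_col (0\<^sub>m r c)"
    then have "(A $$ (i,j))\<^sup>2 \<le> 0" using entry_sq_le[OF assms, of i j] h by auto
    then show "A $$ (i,j) = 0\<^sub>m r c $$ (i,j)" using \<open>i < _\<close> \<open>j < _\<close> by auto
  qed (use assms in auto)
qed (use assms fip_zero_left in auto)

lemma fip_mult_left: assumes P: "P \<in> carrier_mat r' r" and A: "A \<in> carrier_mat r c" and C: "C \<in> carrier_mat r' c"
  shows "fip (P * A) C = fip A (transpose_mat P * C)"
proof -
  have "fip (P * A) C = (\<Sum>i<r'. \<Sum>j<c. \<Sum>k<r. P $$ (i,k) * A $$ (k,j) * C $$ (i,j))"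
    using P A C unfolding fip_def
    by (auto simp: scalar_prod_def sum_distrib_right lessThan_atLeast0 intro!: sum.cong)
  also have "\<dots> = (\<Sum>j<c. \<Sum>i<r'. \<Sum>k<r. P $$ (i,k) * A $$ (k,j) * C $$ (i,j))"
    by (rule sum.swap)
  also have "\<dots> = (\<Sum>j<c. \<Sum>k<r. \<Sum>i<r'. P $$ (i,k) * A $$ (k,j) * C $$ (i,j))"
    by (rule sum.cong[OF refl], rule sum.swap)
  also have "\<dots> = (\<Sum>k<r. \<Sum>j<c. \<Sum>i<r'. P $$ (i,k) * A $$ (k,j) * C $$ (i,j))"
    by (rule sum.swap)
  also have "\<dots> = fip A (transpose_mat P * C)"
    using P A C unfolding fip_def
    by (auto simp: scalar_prod_def sum_distrib_left lessThan_atLeast0 algebra_simps intro!: sum.cong)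
  finally show ?thesis .
qed

lemma fip_mult_right: assumes Q: "Q \<in> carrier_mat c c'" and A: "A \<in> carrier_mat r c" and C: "C \<in> carrier_mat r c'"
  shows "fip (A * Q) C = fip A (C * transpose_mat Q)"
proof -
  have "fip (A * Q) C = (\<Sum>i<r. \<Sum>j<c'. \<Sum>k<c. A $$ (i,k) * Q $$ (k,j) * C $$ (i,j))"
    using Q A C unfolding fip_def
    by (auto simp: scalar_prod_def sum_distrib_right lessThan_atLeast0 intro!: sum.cong)
  also have "\<dots> = (\<Sum>i<r. \<Sum>k<c. \<Sum>j<c'. A $$ (i,k) * Q $$ (k,j) * C $$ (i,j))"
    by (rule sum.cong[OF refl], rule sum.swap)
  also have "\<dots> = fip A (C * transpose_mat Q)"
    using Q A C unfolding fip_def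
    by (auto simp: scalar_prod_def sum_distrib_left lessThan_atLeast0 algebra_simps intro!: sum.cong)
  finally show ?thesis .
qed

lemma vec_sq_nonneg: "0 \<le> (v :: real vec) \<bullet> v"
  unfolding scalar_prod_def by (auto intro!: sum_nonneg)

lemma vec_sq_zero: assumes "(v :: real vec) \<in> carrier_vec N" "v \<bullet> v = 0" shows "v = 0\<^sub>v N"
proof (rule eq_vecI)
  fix i assume i: "i < dim_vec (0\<^sub>v N)"
  have "v $ i * v $ i \<le> (\<Sum>i\<in>{0..<dim_vec v}. v $ i * v $ i)"
    by (rule member_le_sum) (use i assms in auto)
  then have "(v $ i)\<^sup>2 \<le> v \<bullet> v"
    unfolding scalar_prod_def by (simp add: power2_eq_square)
  then show "v $ i = 0\<^sub>v N $ i" using assms i by auto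
qed (use assms in auto)

lemma smult_mat_mult_vec: "A \<in> carrier_mat nr nc \<Longrightarrow> v \<in> carrier_vec nc \<Longrightarrow>
  (a \<cdot>\<^sub>m A) *\<^sub>v v = a \<cdot>\<^sub>v (A *\<^sub>v (v :: real vec))"
  by (intro eq_vecI) (auto simp: scalar_prod_def sum_distrib_left mult.assoc)

lemma amgm_vec: assumes "(a :: real vec) \<in> carrier_vec N" "b \<in> carrier_vec N"
  shows "a \<bullet> b \<le> (a \<bullet> a + b \<bullet> b) / 2"
proof -
  have "0 \<le> (a - b) \<bullet> (a - b)" by (rule vec_sq_nonneg)
  also have "(a - b) \<bullet> (a - b) = a \<bullet> a - 2 * (a \<bullet> b) + b \<bullet> b"
    using assms by (simp add: minus_scalar_prod_distrib scalar_prod_minus_distrib comm_scalar_prod[of b N a])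
  finally show ?thesis by simp
qed

lemma G_props:
  fixes C Ai :: "real mat" and s :: real
  assumes C: "C \<in> carrier_mat N N" and psd: "\<forall>v\<in>carrier_vec N. 0 \<le> v \<bullet> (C *\<^sub>v v)" and s: "s > 0"
    and Ai: "Ai \<in> carrier_mat N N" and inv: "(C + s \<cdot>\<^sub>m 1\<^sub>m N) * Ai = 1\<^sub>m N" and u: "u \<in> carrier_vec N"
  shows "(C * Ai *\<^sub>v u) \<bullet> (C * Ai *\<^sub>v u) \<le> u \<bullet> (C * Ai *\<^sub>v u)"
    and "u \<bullet> (C * Ai *\<^sub>v u) \<le> u \<bullet> u"
    and "u \<bullet> (C * Ai *\<^sub>v u) = u \<bullet> u \<Longrightarrow> u = 0\<^sub>v N"
proof -
  define y where "y = Ai *\<^sub>v u"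
  have y: "y \<in> carrier_vec N" using Ai u y_def by auto
  define c where "c = C *\<^sub>v y"
  have c: "c \<in> carrier_vec N" using C y c_def by auto
  have "u = ((C + s \<cdot>\<^sub>m 1\<^sub>m N) * Ai) *\<^sub>v u" using inv u by simp
  also have "\<dots> = (C + s \<cdot>\<^sub>m 1\<^sub>m N) *\<^sub>v y" using C Ai u y_def by (subst assoc_mult_mat_vec) auto
  also have "\<dots> = c + s \<cdot>\<^sub>v y" using C y c unfolding c_def
    by (subst add_mult_distrib_mat_vec[of _ N N]) (auto simp: smult_mat_mult_vec[of _ N N])
  finally have uc: "u = c + s \<cdot>\<^sub>v y" .
  have Gu: "C * Ai *\<^sub>v u = c" using C Ai u unfolding c_def y_def by simp
  have yc: "0 \<le> y \<bullet> c" using psd y c_def by auto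
  have cy: "c \<bullet> y = y \<bullet> c" using comm_scalar_prod[OF c y] .
  have e1: "u \<bullet> c = c \<bullet> c + s * (y \<bullet> c)"
    unfolding uc using c y by (simp add: add_scalar_prod_distrib)
  have e2: "u \<bullet> u = c \<bullet> c + 2 * s * (y \<bullet> c) + s * s * (y \<bullet> y)"
    unfolding uc using c y cy by (simp add: add_scalar_prod_distrib scalar_prod_add_distrib algebra_simps)
  have yy: "0 \<le> y \<bullet> y" by (rule vec_sq_nonneg)
  show "(C * Ai *\<^sub>v u) \<bullet> (C * Ai *\<^sub>v u) \<le> u \<bullet> (C * Ai *\<^sub>v u)"
    unfolding Gu e1 using s yc by simp
  show "u \<bullet> (C * Ai *\<^sub>v u) \<le> u \<bullet> u"
    unfolding Gu e1 e2 using s yc yy by (simp add: mult_nonneg_nonneg)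
  assume "u \<bullet> (C * Ai *\<^sub>v u) = u \<bullet> u"
  then have "s * (y \<bullet> c) + s * s * (y \<bullet> y) = 0" unfolding Gu e1 e2 by simp
  then have "y \<bullet> y = 0" using s yc yy
    by (smt (verit, ccfv_SIG) mult_nonneg_nonneg mult_pos_pos)
  then have "y = 0\<^sub>v N" using vec_sq_zero y by blast
  then show "u = 0\<^sub>v N" using uc c_def C by auto
qed

lemma jensen_sq: fixes \<beta> g :: "'a \<Rightarrow> real"
  assumes "finite S" "\<forall>x\<in>S. 0 \<le> \<beta> x" "sum \<beta> S = 1"
  shows "(\<Sum>x\<in>S. \<beta> x * g x)\<^sup>2 \<le> (\<Sum>x\<in>S. \<beta> x * (g x)\<^sup>2)"
proof -
  define m where "m = (\<Sum>x\<in>S. \<beta> x * g x)"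
  have "0 \<le> (\<Sum>x\<in>S. \<beta> x * (g x - m)\<^sup>2)" using assms by (auto intro!: sum_nonneg)
  also have "\<dots> = (\<Sum>x\<in>S. \<beta> x * (g x)\<^sup>2) - 2 * m * (\<Sum>x\<in>S. \<beta> x * g x) + m\<^sup>2 * sum \<beta> S"
    by (simp add: power2_eq_square algebra_simps sum.distrib sum_subtractf sum_distrib_left sum_distrib_right)
  finally show ?thesis using assms(3) unfolding m_def[symmetric] by (simp add: power2_eq_square)
qed

lemma inj_imp_inverse: assumes A: "(A :: real mat) \<in> carrier_mat N N"
  and inj: "\<forall>v\<in>carrier_vec N. A *\<^sub>v v = 0\<^sub>v N \<longrightarrow> v = 0\<^sub>v N"
  shows "\<exists>Bi. Bi \<in> carrier_mat N N \<and> A * Bi = 1\<^sub>m N \<and> Bi * A = 1\<^sub>m N"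
proof -
  have "det A \<noteq> 0" using det_0_iff_vec_prod_zero[OF A] inj by auto
  from det_non_zero_imp_unit[OF A this, of "()"]
  show ?thesis unfolding Units_def ring_mat_def by auto
qed

lemma inv_mat_props: assumes A: "(A :: real mat) \<in> carrier_mat N N"
  and inj: "\<forall>v\<in>carrier_vec N. A *\<^sub>v v = 0\<^sub>v N \<longrightarrow> v = 0\<^sub>v N"
  shows "inv_mat N A \<in> carrier_mat N N" "A * inv_mat N A = 1\<^sub>m N" "inv_mat N A * A = 1\<^sub>m N"
proof -
  have "\<exists>Bi. Bi \<in> carrier_mat N N \<and> A * Bi = 1\<^sub>m N \<and> Bi * A = 1\<^sub>m N" by (rule inj_imp_inverse[OF A inj])
  from someI_ex[OF this] show "inv_mat N A \<in> carrier_mat N N" "A * inv_mat N A = 1\<^sub>m N" "inv_mat N A * A = 1\<^sub>m N"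
    unfolding inv_mat_def by auto
qed

lemma shift_inj: assumes C: "C \<in> carrier_mat N N" and psd: "\<forall>v\<in>carrier_vec N. 0 \<le> v \<bullet> (C *\<^sub>v v)"
  and s: "(s::real) > 0"
  shows "\<forall>v\<in>carrier_vec N. (C + s \<cdot>\<^sub>m 1\<^sub>m N) *\<^sub>v v = 0\<^sub>v N \<longrightarrow> v = 0\<^sub>v N"
proof (intro ballI impI)
  fix v :: "real vec" assume v: "v \<in> carrier_vec N" and z: "(C + s \<cdot>\<^sub>m 1\<^sub>m N) *\<^sub>v v = 0\<^sub>v N"
  have "(C + s \<cdot>\<^sub>m 1\<^sub>m N) *\<^sub>v v = C *\<^sub>v v + s \<cdot>\<^sub>v v"
    using C v by (subst add_mult_distrib_mat_vec[of _ N N]) (auto simp: smult_mat_mult_vec[of _ N N])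
  then have "0 = v \<bullet> (C *\<^sub>v v + s \<cdot>\<^sub>v v)" using z v by (metis scalar_prod_right_zero)
  also have "\<dots> = v \<bullet> (C *\<^sub>v v) + s * (v \<bullet> v)" using v C by (simp add: scalar_prod_add_distrib[of _ N])
  finally have "v \<bullet> v = 0" using psd v s vec_sq_nonneg[of v]
    by (smt (verit) mult_pos_pos mult_nonneg_nonneg)
  then show "v = 0\<^sub>v N" using vec_sq_zero v by blast
qed

lemma msum_carrier: "msum n m f S \<in> carrier_mat n m"
  unfolding msum_def by auto

lemma msum_mult_vec: assumes "\<forall>x\<in>S. f x \<in> carrier_mat n m" "v \<in> carrier_vec m" "finite S"
  shows "msum n m f S *\<^sub>v v = vec n (\<lambda>a. \<Sum>x\<in>S. (f x *\<^sub>v v) $ a)"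
proof (rule eq_vecI)
  fix a assume "a < dim_vec (vec n (\<lambda>a. \<Sum>x\<in>S. (f x *\<^sub>v v) $ a))"
  then have a: "a < n" by simp
  have "(msum n m f S *\<^sub>v v) $ a = (\<Sum>b<m. (\<Sum>x\<in>S. f x $$ (a,b)) * v $ b)"
    using a assms unfolding msum_def by (auto simp: scalar_prod_def lessThan_atLeast0)
  also have "\<dots> = (\<Sum>x\<in>S. \<Sum>b<m. f x $$ (a,b) * v $ b)"
    by (simp add: sum_distrib_right sum.swap[of _ S])
  also have "\<dots> = (\<Sum>x\<in>S. (f x *\<^sub>v v) $ a)"
    using a assms by (auto simp: scalar_prod_def lessThan_atLeast0 intro!: sum.cong)
  finally show "(msum n m f S *\<^sub>v v) $ a = vec n (\<lambda>a. \<Sum>x\<in>S. (f x *\<^sub>v v) $ a) $ a" using a by simp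
qed (auto simp: msum_def)

lemma F_props:
  fixes C :: "nat \<Rightarrow> real mat" and beta :: "nat \<Rightarrow> nat \<Rightarrow> real"
  assumes Cpsd: "\<forall>j<K. psd_mat N (C j)" and bnn: "\<forall>j<K. 0 \<le> beta j i"
    and bs: "(\<Sum>j<K. beta j i) = 1" and s: "s > 0" and u: "u \<in> carrier_vec N"
  shows "gmm_F N K C beta s i \<in> carrier_mat N N"
    "(gmm_F N K C beta s i *\<^sub>v u) \<bullet> (gmm_F N K C beta s i *\<^sub>v u) \<le> u \<bullet> (gmm_F N K C beta s i *\<^sub>v u)"
    "u \<bullet> (gmm_F N K C beta s i *\<^sub>v u) \<le> u \<bullet> u"
    "u \<bullet> (gmm_F N K C beta s i *\<^sub>v u) = u \<bullet> u \<Longrightarrow> u = 0\<^sub>v N"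
proof -
  define G where "G j = C j * inv_mat N (C j + s \<cdot>\<^sub>m 1\<^sub>m N)" for j
  define g where "g j = G j *\<^sub>v u" for j
  define F where "F = gmm_F N K C beta s i"
  have Cc: "C j \<in> carrier_mat N N" and Cp: "\<forall>v\<in>carrier_vec N. 0 \<le> v \<bullet> (C j *\<^sub>v v)" if "j < K" for j
    using Cpsd that unfolding psd_mat_def by auto
  have Ainv: "inv_mat N (C j + s \<cdot>\<^sub>m 1\<^sub>m N) \<in> carrier_mat N N"
      "(C j + s \<cdot>\<^sub>m 1\<^sub>m N) * inv_mat N (C j + s \<cdot>\<^sub>m 1\<^sub>m N) = 1\<^sub>m N" if "j < K" for j
    using inv_mat_props[OF _ shift_inj[OF Cc[OF that] Cp[OF that] s]] Cc[OF that] by auto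
  have Gc: "G j \<in> carrier_mat N N" if "j < K" for j using Ainv[OF that] Cc[OF that] unfolding G_def by auto
  have gc: "g j \<in> carrier_vec N" if "j < K" for j using Gc[OF that] u unfolding g_def by auto
  have gd: "dim_vec (g j) = N" if "j < K" for j using gc[OF that] by auto
  note GP = G_props[OF Cc Cp s Ainv u, folded G_def, folded g_def]
  have Fc: "F \<in> carrier_mat N N" unfolding F_def gmm_F_def by (rule msum_carrier)
  then show "gmm_F N K C beta s i \<in> carrier_mat N N" unfolding F_def .
  have Fu: "F *\<^sub>v u = vec N (\<lambda>a. \<Sum>j<K. beta j i * g j $ a)"
    unfolding F_def gmm_F_def
    by (subst msum_mult_vec) (use Gc u in \<open>auto simp: G_def[symmetric] g_def smult_mat_mult_vec[of _ N N] intro!: eq_vecI sum.cong\<close>, subst index_smult_vec, use Gc in auto)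
  have e1: "u \<bullet> (F *\<^sub>v u) = (\<Sum>j<K. beta j i * (u \<bullet> g j))"
  proof -
    have "u \<bullet> (F *\<^sub>v u) = (\<Sum>a<N. u $ a * (\<Sum>j<K. beta j i * g j $ a))"
      unfolding Fu using u by (auto simp: scalar_prod_def lessThan_atLeast0)
    also have "\<dots> = (\<Sum>j<K. beta j i * (\<Sum>a<N. u $ a * g j $ a))"
      by (simp add: sum_distrib_left sum.swap[of _ "{..<K}"] algebra_simps)
    also have "\<dots> = (\<Sum>j<K. beta j i * (u \<bullet> g j))"
      using gd u by (auto simp: scalar_prod_def lessThan_atLeast0 intro!: sum.cong)
    finally show ?thesis .
  qed
  have e2: "(F *\<^sub>v u) \<bullet> (F *\<^sub>v u) \<le> (\<Sum>j<K. beta j i * (g j \<bullet> g j))"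
  proof -
    have "(F *\<^sub>v u) \<bullet> (F *\<^sub>v u) = (\<Sum>a<N. (\<Sum>j<K. beta j i * g j $ a)\<^sup>2)"
      unfolding Fu by (auto simp: scalar_prod_def lessThan_atLeast0 power2_eq_square)
    also have "\<dots> \<le> (\<Sum>a<N. \<Sum>j<K. beta j i * (g j $ a)\<^sup>2)"
      by (intro sum_mono jensen_sq) (use bnn bs in auto)
    also have "\<dots> = (\<Sum>j<K. beta j i * (\<Sum>a<N. (g j $ a)\<^sup>2))"
      by (simp add: sum_distrib_left sum.swap[of _ "{..<K}"])
    also have "\<dots> = (\<Sum>j<K. beta j i * (g j \<bullet> g j))"
      using gd by (auto simp: scalar_prod_def lessThan_atLeast0 power2_eq_square intro!: sum.cong)
    finally show ?thesis .
  qed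
  have "(\<Sum>j<K. beta j i * (g j \<bullet> g j)) \<le> (\<Sum>j<K. beta j i * (u \<bullet> g j))"
    by (intro sum_mono mult_left_mono) (use GP(1) bnn in \<open>auto simp: g_def\<close>)
  with e1 e2 show "(gmm_F N K C beta s i *\<^sub>v u) \<bullet> (gmm_F N K C beta s i *\<^sub>v u) \<le> u \<bullet> (gmm_F N K C beta s i *\<^sub>v u)"
    unfolding F_def by linarith
  have le: "(\<Sum>j<K. beta j i * (u \<bullet> g j)) \<le> (\<Sum>j<K. beta j i * (u \<bullet> u))"
    by (intro sum_mono mult_left_mono) (use GP(2) bnn in \<open>auto simp: g_def\<close>)
  have uu: "(\<Sum>j<K. beta j i * (u \<bullet> u)) = u \<bullet> u" using bs by (simp add: sum_distrib_right[symmetric])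
  show "u \<bullet> (gmm_F N K C beta s i *\<^sub>v u) \<le> u \<bullet> u" using le uu e1 unfolding F_def by linarith
  assume eq: "u \<bullet> (gmm_F N K C beta s i *\<^sub>v u) = u \<bullet> u"
  have z: "(\<Sum>j<K. beta j i * (u \<bullet> u - u \<bullet> g j)) = 0"
    using eq e1 uu unfolding F_def by (simp add: algebra_simps sum_subtractf)
  have nn: "\<forall>j\<in>{..<K}. 0 \<le> beta j i * (u \<bullet> u - u \<bullet> g j)"
    using GP(2) bnn by (auto simp: g_def)
  have "\<exists>j<K. beta j i \<noteq> 0"
  proof (rule ccontr)
    assume "\<not> ?thesis" then have "\<forall>j<K. beta j i = 0" by blast
    then show False using bs by simp
  qed
  then obtain j where j: "j < K" "beta j i \<noteq> 0" by blast
  have "beta j i * (u \<bullet> u - u \<bullet> g j) = 0"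
    by (rule sum_nonneg_0[where s="{..<K}" and f="\<lambda>j. beta j i * (u \<bullet> u - u \<bullet> g j)"])
       (use z nn j(1) in auto)
  then have "u \<bullet> g j = u \<bullet> u" using j(2) by simp
  then show "u = 0\<^sub>v N" using GP(3)[of j] j(1) unfolding g_def by auto
qed

lemma mod_cancel_lt: fixes x y a h :: nat assumes "x < h" "y < h" "(x + a) mod h = (y + a) mod h" shows "x = y"
proof -
  have *: "x = y" if "x \<le> y" "x < h" "y < h" "(x + a) mod h = (y + a) mod h" for x y
  proof -
    have "h dvd (y + a) - (x + a)" using that mod_eq_dvd_iff_nat[of "x+a" "y+a" h] by simp
    then have "h dvd y - x" by simp
    moreover have "y - x < h" using that by simp
    ultimately have "y - x = 0" using dvd_imp_le by (metis not_gr0 not_le)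
    then show ?thesis using that by simp
  qed
  show ?thesis using *[of x y] *[of y x] assms by (cases "x \<le> y") auto
qed

definition idx :: "nat \<Rightarrow> nat \<Rightarrow> nat \<Rightarrow> nat \<Rightarrow> nat \<Rightarrow> nat" where
  "idx h w p i u = pix w ((i div w + u div p) mod h) ((i mod w + u mod p) mod w)"

lemma pix_lt: "r < h \<Longrightarrow> c < w \<Longrightarrow> pix w r c < h * w"
proof -
  assume "r < h" "c < w"
  then have "r * w + c < r * w + w" by simp
  also have "\<dots> = (r + 1) * w" by simp
  also have "\<dots> \<le> h * w" using \<open>r < h\<close> by (intro mult_right_mono) auto
  finally show ?thesis unfolding pix_def .
qed

lemma idx_lt: "0 < h \<Longrightarrow> 0 < w \<Longrightarrow> idx h w p i u < h * w"
  unfolding idx_def by (rule pix_lt) auto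

lemma idx_inj: assumes h: "0 < h" and w: "0 < w"
  shows "inj_on (\<lambda>i. idx h w p i u) {..<h*w}"
proof (rule inj_onI)
  fix i j assume i: "i \<in> {..<h*w}" and j: "j \<in> {..<h*w}" and e: "idx h w p i u = idx h w p j u"
  let ?r = "\<lambda>i. (i div w + u div p) mod h" and ?c = "\<lambda>i. (i mod w + u mod p) mod w"
  have cw: "?c i < w" "?c j < w" using w by auto
  have "idx h w p i u div w = ?r i" "idx h w p i u mod w = ?c i"
       "idx h w p j u div w = ?r j" "idx h w p j u mod w = ?c j"
    using cw unfolding idx_def pix_def by auto
  then have r: "?r i = ?r j" and c: "?c i = ?c j" using e by metis+
  have "i div w < h" "j div w < h" using i j by (auto simp: less_mult_imp_div_less)
  then have "i div w = j div w" using mod_cancel_lt r by blast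
  moreover have "i mod w = j mod w" using mod_cancel_lt c w by (meson mod_less_divisor)
  ultimately show "i = j" by (metis div_mult_mod_eq)
qed

lemma idx_bij: assumes h: "0 < h" and w: "0 < w"
  shows "(\<lambda>i. idx h w p i u) ` {..<h*w} = {..<h*w}"
  by (rule endo_inj_surj) (use idx_inj[OF h w] idx_lt[OF h w] in auto)

lemma sum_idx: assumes h: "0 < h" and w: "0 < w"
  shows "(\<Sum>i<h*w. f (idx h w p i u)) = (\<Sum>j<h*w. f j)"
proof -
  have "(\<Sum>j<h*w. f j) = (\<Sum>j\<in>(\<lambda>i. idx h w p i u) ` {..<h*w}. f j)" using idx_bij[OF h w] by simp
  also have "\<dots> = (\<Sum>i<h*w. f (idx h w p i u))" by (rule sum.reindex[OF idx_inj[OF h w], unfolded comp_def])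
  finally show ?thesis by simp
qed

lemma patch_carrier: "patch_mat h w p i \<in> carrier_mat (p*p) (h*w)"
  unfolding patch_mat_def by auto

lemma patch_mult: assumes h: "0 < h" and w: "0 < w" and z: "z \<in> carrier_vec (h*w)"
  shows "patch_mat h w p i *\<^sub>v z = vec (p*p) (\<lambda>u. z $ idx h w p i u)"
proof (rule eq_vecI)
  fix u assume "u < dim_vec (vec (p*p) (\<lambda>u. z $ idx h w p i u))"
  then have u: "u < p*p" by simp
  have "(patch_mat h w p i *\<^sub>v z) $ u = (\<Sum>j<h*w. (if j = idx h w p i u then 1 else 0) * z $ j)"
    using u z unfolding patch_mat_def idx_def by (auto simp: scalar_prod_def lessThan_atLeast0)
  also have "\<dots> = z $ idx h w p i u" using idx_lt[OF h w] by (simp add: if_distrib[of "\<lambda>x. x * _"] cong: if_cong)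
  finally show "(patch_mat h w p i *\<^sub>v z) $ u = vec (p*p) (\<lambda>u. z $ idx h w p i u) $ u" using u by simp
qed (auto simp: patch_mat_def)

lemma patch_sum_sq: assumes h: "0 < h" and w: "0 < w" and z: "z \<in> carrier_vec (h*w)"
  shows "(\<Sum>i<h*w. (patch_mat h w p i *\<^sub>v z) \<bullet> (patch_mat h w p i *\<^sub>v z)) = real (p*p) * (z \<bullet> z)"
proof -
  have "(\<Sum>i<h*w. (patch_mat h w p i *\<^sub>v z) \<bullet> (patch_mat h w p i *\<^sub>v z))
      = (\<Sum>i<h*w. \<Sum>u<p*p. (z $ idx h w p i u)\<^sup>2)"
    by (simp add: patch_mult[OF h w z] scalar_prod_def lessThan_atLeast0 power2_eq_square)
  also have "\<dots> = (\<Sum>u<p*p. \<Sum>i<h*w. (z $ idx h w p i u)\<^sup>2)" by (rule sum.swap)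
  also have "\<dots> = (\<Sum>u<p*p. \<Sum>j<h*w. (z $ j)\<^sup>2)" using sum_idx[OF h w, of "\<lambda>j. (z $ j)\<^sup>2"] by simp
  also have "\<dots> = real (p*p) * (z \<bullet> z)"
    using z by (simp add: scalar_prod_def lessThan_atLeast0 power2_eq_square)
  finally show ?thesis .
qed

lemma msum_scalar: assumes "\<forall>x\<in>S. f x \<in> carrier_mat n m" "v \<in> carrier_vec m" "finite S" "z \<in> carrier_vec n"
  shows "z \<bullet> (msum n m f S *\<^sub>v v) = (\<Sum>x\<in>S. z \<bullet> (f x *\<^sub>v v))"
proof -
  have "z \<bullet> (msum n m f S *\<^sub>v v) = (\<Sum>a<n. z $ a * (\<Sum>x\<in>S. (f x *\<^sub>v v) $ a))"
    unfolding msum_mult_vec[OF assms(1-3)] using assms(4) by (auto simp: scalar_prod_def lessThan_atLeast0)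
  also have "\<dots> = (\<Sum>x\<in>S. \<Sum>a<n. z $ a * (f x *\<^sub>v v) $ a)"
    by (simp add: sum_distrib_left sum.swap[of _ S])
  also have "\<dots> = (\<Sum>x\<in>S. z \<bullet> (f x *\<^sub>v v))"
    using assms by (auto simp: scalar_prod_def lessThan_atLeast0 intro!: sum.cong)
  finally show ?thesis .
qed

lemma W_props:
  fixes C :: "nat \<Rightarrow> real mat" and beta :: "nat \<Rightarrow> nat \<Rightarrow> real"
  assumes h: "0 < h" and w: "0 < w" and p: "0 < p"
    and Cpsd: "\<forall>j<K. psd_mat (p*p) (C j)" and bnn: "\<forall>i<h*w. \<forall>j<K. 0 \<le> beta j i"
    and bs: "\<forall>i<h*w. (\<Sum>j<K. beta j i) = 1" and s: "s > 0" and x: "x \<in> carrier_vec (h*w)"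
  shows "gmm_W h w p K C beta s \<in> carrier_mat (h*w) (h*w)"
    "(gmm_W h w p K C beta s *\<^sub>v x) \<bullet> (gmm_W h w p K C beta s *\<^sub>v x) \<le> x \<bullet> (gmm_W h w p K C beta s *\<^sub>v x)"
    "gmm_W h w p K C beta s *\<^sub>v x = x \<Longrightarrow> x = 0\<^sub>v (h*w)"
proof -
  define n where "n = h * w"
  define np where "np = p * p"
  define P where "P i = patch_mat h w p i" for i
  define F where "F i = gmm_F np K C beta s i" for i
  define W where "W = gmm_W h w p K C beta s"
  have x': "x \<in> carrier_vec n" using x n_def by simp
  have np: "real np > 0" using p np_def by simp
  have Pc: "P i \<in> carrier_mat np n" for i unfolding P_def np_def n_def by (rule patch_carrier)
  have Fc: "F i \<in> carrier_mat np np" if "i < n" for i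
    unfolding F_def np_def by (rule F_props(1)[where u="0\<^sub>v (p*p)"]) (use Cpsd bnn bs that s n_def in auto)
  have Wdef: "W = (1 / real np) \<cdot>\<^sub>m msum n n (\<lambda>i. transpose_mat (P i) * F i * P i) {..<n}"
    unfolding W_def gmm_W_def P_def F_def n_def np_def ..
  have Qc: "\<forall>i\<in>{..<n}. transpose_mat (P i) * F i * P i \<in> carrier_mat n n"
    using Pc Fc by (metis lessThan_iff mult_carrier_mat transpose_carrier_mat)
  have Wc: "W \<in> carrier_mat n n" unfolding Wdef by (simp add: msum_carrier)
  then show "gmm_W h w p K C beta s \<in> carrier_mat (h*w) (h*w)" unfolding W_def n_def .
  have Wz: "z \<bullet> (W *\<^sub>v x) = (1 / real np) * (\<Sum>i<n. (P i *\<^sub>v z) \<bullet> (F i *\<^sub>v (P i *\<^sub>v x)))"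
    if z: "z \<in> carrier_vec n" for z
  proof -
    have "z \<bullet> (W *\<^sub>v x) = (1 / real np) * (z \<bullet> (msum n n (\<lambda>i. transpose_mat (P i) * F i * P i) {..<n} *\<^sub>v x))"
    proof -
      have Wx: "W *\<^sub>v x = (1 / real np) \<cdot>\<^sub>v (msum n n (\<lambda>i. transpose_mat (P i) * F i * P i) {..<n} *\<^sub>v x)"
        unfolding Wdef by (rule smult_mat_mult_vec[OF msum_carrier x'])
      have d: "dim_vec z = dim_vec (msum n n (\<lambda>i. transpose_mat (P i) * F i * P i) {..<n} *\<^sub>v x)"
      proof -
        have mc: "msum n n (\<lambda>i. transpose_mat (P i) * F i * P i) {..<n} *\<^sub>v x \<in> carrier_vec n"
          by (rule mult_mat_vec_carrier[OF msum_carrier x'])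
        show ?thesis using carrier_vecD[OF z] carrier_vecD[OF mc] by simp
      qed
      show ?thesis unfolding Wx using scalar_prod_smult_right[OF d] by simp
    qed
    also have "\<dots> = (1 / real np) * (\<Sum>i<n. z \<bullet> ((transpose_mat (P i) * F i * P i) *\<^sub>v x))"
      by (subst msum_scalar[OF Qc x']) (use z in auto)
    also have "\<dots> = (1 / real np) * (\<Sum>i<n. (P i *\<^sub>v z) \<bullet> (F i *\<^sub>v (P i *\<^sub>v x)))"
    proof -
      have "z \<bullet> ((transpose_mat (P i) * F i * P i) *\<^sub>v x) = (P i *\<^sub>v z) \<bullet> (F i *\<^sub>v (P i *\<^sub>v x))" if i: "i < n" for i
      proof -
        have "(transpose_mat (P i) * F i * P i) *\<^sub>v x = transpose_mat (P i) *\<^sub>v (F i *\<^sub>v (P i *\<^sub>v x))"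
        proof -
          have "(transpose_mat (P i) * F i * P i) *\<^sub>v x = (transpose_mat (P i) * F i) *\<^sub>v (P i *\<^sub>v x)"
            by (rule assoc_mult_mat_vec[of _ n np _ n]) (use Pc[of i] Fc[OF i] x' in auto)
          also have "\<dots> = transpose_mat (P i) *\<^sub>v (F i *\<^sub>v (P i *\<^sub>v x))"
            by (rule assoc_mult_mat_vec[of _ n np _ np]) (use Pc[of i] Fc[OF i] x' in auto)
          finally show ?thesis .
        qed
        moreover have "z \<bullet> (transpose_mat (P i) *\<^sub>v (F i *\<^sub>v (P i *\<^sub>v x))) = (F i *\<^sub>v (P i *\<^sub>v x)) \<bullet> (P i *\<^sub>v z)"
          using transpose_vec_mult_scalar[OF Pc[of i] z, of "F i *\<^sub>v (P i *\<^sub>v x)"] Pc[of i] Fc[OF i] x' z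
          by (subst comm_scalar_prod[of _ n]) auto
        ultimately show ?thesis using Pc[of i] Fc[OF i] x' z by (simp add: comm_scalar_prod[of _ np])
      qed
      then show ?thesis by simp
    qed
    finally show ?thesis .
  qed
  define u where "u i = P i *\<^sub>v x" for i
  have uc: "u i \<in> carrier_vec np" for i unfolding u_def by (rule mult_mat_vec_carrier[OF Pc x'])
  have Fu: "F i *\<^sub>v u i \<in> carrier_vec np" if "i < n" for i using Fc[OF that] uc by auto
  have F1: "(F i *\<^sub>v u i) \<bullet> (F i *\<^sub>v u i) \<le> u i \<bullet> (F i *\<^sub>v u i)"
   and F2: "u i \<bullet> (F i *\<^sub>v u i) \<le> u i \<bullet> u i"
   and F3: "u i \<bullet> (F i *\<^sub>v u i) = u i \<bullet> u i \<Longrightarrow> u i = 0\<^sub>v np" if "i < n" for i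
    unfolding F_def np_def
    by (rule F_props(2), use Cpsd bnn bs that s n_def uc np_def in auto)
       (rule F_props(3), use Cpsd bnn bs that s n_def uc np_def in auto,
        rule F_props(4), use Cpsd bnn bs that s n_def uc np_def in auto)
  have xWx: "x \<bullet> (W *\<^sub>v x) = (1 / real np) * (\<Sum>i<n. u i \<bullet> (F i *\<^sub>v u i))"
    using Wz[OF x'] unfolding u_def .
  have psum: "(\<Sum>i<n. (P i *\<^sub>v z) \<bullet> (P i *\<^sub>v z)) = real np * (z \<bullet> z)" if "z \<in> carrier_vec n" for z
    using patch_sum_sq[OF h w, of z p] that unfolding P_def n_def np_def by simp
  {
    define z where "z = W *\<^sub>v x"
    have z: "z \<in> carrier_vec n" using Wc x' z_def by auto
    have "z \<bullet> z = (1 / real np) * (\<Sum>i<n. (P i *\<^sub>v z) \<bullet> (F i *\<^sub>v u i))"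
      using Wz[OF z] unfolding z_def u_def by simp
    also have "\<dots> \<le> (1 / real np) * (\<Sum>i<n. ((P i *\<^sub>v z) \<bullet> (P i *\<^sub>v z) + (F i *\<^sub>v u i) \<bullet> (F i *\<^sub>v u i)) / 2)"
      using np mult_mat_vec_carrier[OF Pc z] Fu by (intro mult_left_mono sum_mono amgm_vec[of _ np]) auto
    also have "\<dots> \<le> (1 / real np) * (\<Sum>i<n. ((P i *\<^sub>v z) \<bullet> (P i *\<^sub>v z) + u i \<bullet> (F i *\<^sub>v u i)) / 2)"
      using np F1 by (intro mult_left_mono sum_mono) auto
    also have "\<dots> = (1 / real np) * ((\<Sum>i<n. (P i *\<^sub>v z) \<bullet> (P i *\<^sub>v z)) + (\<Sum>i<n. u i \<bullet> (F i *\<^sub>v u i))) / 2"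
      by (simp add: sum.distrib sum_divide_distrib[symmetric])
    also have "\<dots> = (z \<bullet> z) / 2 + (x \<bullet> (W *\<^sub>v x)) / 2"
      unfolding psum[OF z] xWx using np by (simp add: field_simps)
    finally have "z \<bullet> z \<le> x \<bullet> (W *\<^sub>v x)" by simp
    then show "(gmm_W h w p K C beta s *\<^sub>v x) \<bullet> (gmm_W h w p K C beta s *\<^sub>v x) \<le> x \<bullet> (gmm_W h w p K C beta s *\<^sub>v x)"
      unfolding z_def W_def .
  }
  assume fx: "gmm_W h w p K C beta s *\<^sub>v x = x"
  then have "x \<bullet> x = (1 / real np) * (\<Sum>i<n. u i \<bullet> (F i *\<^sub>v u i))" using xWx fx unfolding W_def by simp
  moreover have uu: "(\<Sum>i<n. u i \<bullet> u i) = real np * (x \<bullet> x)" using psum[OF x'] unfolding u_def .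
  ultimately have z0: "(\<Sum>i<n. u i \<bullet> u i - u i \<bullet> (F i *\<^sub>v u i)) = 0"
    using np by (simp add: sum_subtractf field_simps)
  have nn0: "\<And>i. i \<in> {..<n} \<Longrightarrow> 0 \<le> u i \<bullet> u i - u i \<bullet> (F i *\<^sub>v u i)" using F2 by auto
  have "\<forall>i\<in>{..<n}. u i \<bullet> u i - u i \<bullet> (F i *\<^sub>v u i) = 0"
    using sum_nonneg_eq_0_iff[where A="{..<n}" and f="\<lambda>i. u i \<bullet> u i - u i \<bullet> (F i *\<^sub>v u i)", OF finite_lessThan nn0] z0
    by simp
  then have "\<forall>i<n. u i = 0\<^sub>v np" using F3 by auto
  then have "(\<Sum>i<n. u i \<bullet> u i) = 0" by simp
  then have "x \<bullet> x = 0" using uu np by simp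
  then show "x = 0\<^sub>v (h*w)" using vec_sq_zero x by blast
qed

lemmas carr = minus_carrier_mat add_carrier_mat smult_carrier_mat mult_carrier_mat transpose_carrier_mat zero_carrier_mat

lemma fip_expand: assumes "A \<in> carrier_mat r c" "C \<in> carrier_mat r c"
  shows "fip (A + t \<cdot>\<^sub>m C) (A + t \<cdot>\<^sub>m C) = fip A A + 2 * t * fip A C + t\<^sup>2 * fip C C"
  using assms unfolding fip_def
  by (auto simp: algebra_simps power2_eq_square sum.distrib sum_distrib_left intro!: sum.cong)

lemma quad_zero: fixes a b f0 :: real assumes "\<forall>t. f0 \<le> f0 + 2 * t * a + t\<^sup>2 * b" "0 \<le> b"
  shows "a = 0"
proof (rule ccontr)
  assume a: "a \<noteq> 0"
  define t where "t = - a / (b + 1)"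
  have "f0 \<le> f0 + 2 * t * a + t\<^sup>2 * b" using assms by blast
  then have "0 \<le> 2 * t * a + t\<^sup>2 * b" by simp
  also have "2 * t * a + t\<^sup>2 * b = t * (2 * a + t * b)" by (simp add: power2_eq_square algebra_simps)
  also have "2 * a + t * b = a * (b + 2) / (b + 1)" unfolding t_def using assms(2) by (simp add: field_simps)
  also have "t * (a * (b + 2) / (b + 1)) = - (a * a) * (b + 2) / ((b + 1) * (b + 1))"
    unfolding t_def by simp
  also have "\<dots> < 0"
  proof -
    have aa: "0 < a * a" using a by (cases "a > 0") (auto simp: zero_less_mult_iff)
    show ?thesis using aa assms(2) by (intro divide_neg_pos mult_neg_pos) auto
  qed
  finally show False by simp
qed

lemma grad_zero: assumes "G \<in> carrier_mat r c" "\<forall>Z\<in>carrier_mat r c. fip G Z = 0"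
  shows "G = 0\<^sub>m r c"
  using assms fip_zero_iff[OF assms(1)] by auto

lemma mult_transpose_eq: "(W :: real mat) \<in> carrier_mat n n \<Longrightarrow> Z \<in> carrier_mat l n \<Longrightarrow>
  transpose_mat (W * transpose_mat Z) = Z * transpose_mat W"
  using transpose_mult[of W n n "transpose_mat Z" l] by auto

lemma fip_rows: assumes "A \<in> carrier_mat r c" "B \<in> carrier_mat r c"
  shows "fip A B = (\<Sum>i<r. row A i \<bullet> row B i)"
  using assms unfolding fip_def by (auto simp: scalar_prod_def lessThan_atLeast0 intro!: sum.cong)

lemma row_mult_transpose: assumes "(W :: real mat) \<in> carrier_mat n n" "Y \<in> carrier_mat l n" "i < l"
  shows "row (Y * transpose_mat W) i = W *\<^sub>v row Y i"
proof (rule eq_vecI)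
  fix j assume "j < dim_vec (W *\<^sub>v row Y i)"
  then have j: "j < n" using assms by simp
  show "row (Y * transpose_mat W) i $ j = (W *\<^sub>v row Y i) $ j"
    using comm_scalar_prod[of "row Y i" n "row W j"] assms j by auto
qed (use assms in auto)

lemma W_mat:
  fixes C :: "nat \<Rightarrow> real mat" and beta :: "nat \<Rightarrow> nat \<Rightarrow> real"
  assumes h: "0 < h" and w: "0 < w" and p: "0 < p"
    and Cpsd: "\<forall>j<K. psd_mat (p*p) (C j)" and bnn: "\<forall>i<h*w. \<forall>j<K. 0 \<le> beta j i"
    and bs: "\<forall>i<h*w. (\<Sum>j<K. beta j i) = 1" and s: "s > 0"
    and Y: "Y \<in> carrier_mat l (h*w)"
  shows "fip (Y * transpose_mat (gmm_W h w p K C beta s)) (Y * transpose_mat (gmm_W h w p K C beta s))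
         \<le> fip Y (Y * transpose_mat (gmm_W h w p K C beta s))"
    "Y * transpose_mat (gmm_W h w p K C beta s) = Y \<Longrightarrow> Y = 0\<^sub>m l (h*w)"
proof -
  define W where "W = gmm_W h w p K C beta s"
  note WP = W_props[OF h w p Cpsd bnn bs s, folded W_def]
  have Wc: "W \<in> carrier_mat (h*w) (h*w)" using WP(1)[of "0\<^sub>v (h*w)"] by auto
  have YW: "Y * transpose_mat W \<in> carrier_mat l (h*w)" using Wc Y by auto
  have rY: "row Y i \<in> carrier_vec (h*w)" if "i < l" for i using Y that by auto
  have "fip (Y * transpose_mat W) (Y * transpose_mat W) = (\<Sum>i<l. (W *\<^sub>v row Y i) \<bullet> (W *\<^sub>v row Y i))"
    by (subst fip_rows[OF YW YW]) (use row_mult_transpose[OF Wc Y] in simp)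
  also have "\<dots> \<le> (\<Sum>i<l. row Y i \<bullet> (W *\<^sub>v row Y i))"
    by (intro sum_mono WP(2)) (use rY in auto)
  also have "\<dots> = fip Y (Y * transpose_mat W)"
    by (subst fip_rows[OF Y YW]) (use row_mult_transpose[OF Wc Y] in simp)
  finally show "fip (Y * transpose_mat (gmm_W h w p K C beta s)) (Y * transpose_mat (gmm_W h w p K C beta s))
         \<le> fip Y (Y * transpose_mat (gmm_W h w p K C beta s))" unfolding W_def .
  assume e: "Y * transpose_mat (gmm_W h w p K C beta s) = Y"
  show "Y = 0\<^sub>m l (h*w)"
  proof (rule eq_matI)
    fix i j assume i: "i < dim_row (0\<^sub>m l (h*w))" and j: "j < dim_col (0\<^sub>m l (h*w))"
    have "W *\<^sub>v row Y i = row Y i" using row_mult_transpose[OF Wc Y, of i] e i unfolding W_def by simp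
    then have "row Y i = 0\<^sub>v (h*w)" using WP(3) rY i by auto
    then have "row Y i $ j = 0" using j by simp
    then show "Y $$ (i,j) = 0\<^sub>m l (h*w) $$ (i,j)" using i j Y by auto
  qed (use Y in auto)
qed

lemma xstep_grad:
  fixes X B V1 V2 V3 D1 D2 D3 :: "real mat"
  assumes Xc: "X \<in> carrier_mat l n" and Bc: "B \<in> carrier_mat n n"
    and c: "V1 \<in> carrier_mat l n" "V2 \<in> carrier_mat l n" "V3 \<in> carrier_mat l n"
      "D1 \<in> carrier_mat l n" "D2 \<in> carrier_mat l n" "D3 \<in> carrier_mat l n"
    and min: "\<forall>Z \<in> carrier_mat l n.
            (frob_norm (X * B - V1 - D1))\<^sup>2 + (frob_norm (X - V2 - D2))\<^sup>2 + (frob_norm (X - V3 - D3))\<^sup>2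
          \<le> (frob_norm (Z * B - V1 - D1))\<^sup>2 + (frob_norm (Z - V2 - D2))\<^sup>2 + (frob_norm (Z - V3 - D3))\<^sup>2"
  shows "(X * B - V1 - D1) * transpose_mat B + (X - V2 - D2) + (X - V3 - D3) = 0\<^sub>m l n"
proof (rule grad_zero)
  define A1 where "A1 = X * B - V1 - D1"
  define A2 where "A2 = X - V2 - D2"
  define A3 where "A3 = X - V3 - D3"
  have A: "A1 \<in> carrier_mat l n" "A2 \<in> carrier_mat l n" "A3 \<in> carrier_mat l n"
    unfolding A1_def A2_def A3_def using c by (auto intro!: carr)
  show "A1 * transpose_mat B + A2 + A3 \<in> carrier_mat l n" using A Bc by auto
  show "\<forall>Z\<in>carrier_mat l n. fip ((X * B - V1 - D1) * transpose_mat B + (X - V2 - D2) + (X - V3 - D3)) Z = 0"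
  proof
    fix Z :: "real mat" assume Z: "Z \<in> carrier_mat l n"
    have ZB: "Z * B \<in> carrier_mat l n" using Z Bc by auto
    have "\<forall>t. fip A1 A1 + fip A2 A2 + fip A3 A3 \<le> fip A1 A1 + fip A2 A2 + fip A3 A3 +
       2 * t * (fip A1 (Z * B) + fip A2 Z + fip A3 Z) + t\<^sup>2 * (fip (Z * B) (Z * B) + fip Z Z + fip Z Z)"
    proof
      fix t :: real
      have e1: "(X + t \<cdot>\<^sub>m Z) * B - V1 - D1 = A1 + t \<cdot>\<^sub>m (Z * B)"
        unfolding A1_def using Xc Z Bc c
        by (intro eq_matI) (auto simp: scalar_prod_def sum.distrib algebra_simps sum_distrib_left)
      have e2: "(X + t \<cdot>\<^sub>m Z) - V2 - D2 = A2 + t \<cdot>\<^sub>m Z"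
        unfolding A2_def using Xc Z c by (intro eq_matI) auto
      have e3: "(X + t \<cdot>\<^sub>m Z) - V3 - D3 = A3 + t \<cdot>\<^sub>m Z"
        unfolding A3_def using Xc Z c by (intro eq_matI) auto
      have "X + t \<cdot>\<^sub>m Z \<in> carrier_mat l n" using Z by auto
      from min[rule_format, OF this] show "fip A1 A1 + fip A2 A2 + fip A3 A3 \<le> fip A1 A1 + fip A2 A2 + fip A3 A3 +
       2 * t * (fip A1 (Z * B) + fip A2 Z + fip A3 Z) + t\<^sup>2 * (fip (Z * B) (Z * B) + fip Z Z + fip Z Z)"
        unfolding frob_sq e1 e2 e3 A1_def[symmetric] A2_def[symmetric] A3_def[symmetric]
        using fip_expand[OF A(1) ZB, of t] fip_expand[OF A(2) Z, of t] fip_expand[OF A(3) Z, of t]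
        by (simp add: algebra_simps)
    qed
    then have "fip A1 (Z * B) + fip A2 Z + fip A3 Z = 0"
      by (rule quad_zero) (auto intro!: add_nonneg_nonneg fip_nonneg)
    moreover have "fip (A1 * transpose_mat B + A2 + A3) Z = fip A1 (Z * B) + fip A2 Z + fip A3 Z"
      using A Bc Z
      by (simp add: fip_add_left[of _ l n] fip_mult_right[of _ n n _ l])
    ultimately show "fip ((X * B - V1 - D1) * transpose_mat B + (X - V2 - D2) + (X - V3 - D3)) Z = 0"
      unfolding A1_def A2_def A3_def by simp
  qed
qed

lemma v1step_grad:
  fixes E M Yh XB V D :: "real mat" and rho :: real
  assumes Ec: "E \<in> carrier_mat Lh l" and Mc: "M \<in> carrier_mat n nh" and Yc: "Yh \<in> carrier_mat Lh nh"
    and XBc: "XB \<in> carrier_mat l n" and Vc: "V \<in> carrier_mat l n" and Dc: "D \<in> carrier_mat l n"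
    and rho: "0 < rho"
    and min: "\<forall>Z \<in> carrier_mat l n.
            (frob_norm (E * V * M - Yh))\<^sup>2 + rho * (frob_norm (XB - V - D))\<^sup>2
          \<le> (frob_norm (E * Z * M - Yh))\<^sup>2 + rho * (frob_norm (XB - Z - D))\<^sup>2"
  shows "transpose_mat E * (E * V * M - Yh) * transpose_mat M - rho \<cdot>\<^sub>m (XB - V - D) = 0\<^sub>m l n"
proof (rule grad_zero)
  define A1 where "A1 = E * V * M - Yh"
  define A2 where "A2 = XB - V - D"
  have A: "A1 \<in> carrier_mat Lh nh" "A2 \<in> carrier_mat l n"
    unfolding A1_def A2_def using Ec Mc Yc Vc Dc by (auto intro!: carr)
  show "transpose_mat E * (E * V * M - Yh) * transpose_mat M - rho \<cdot>\<^sub>m (XB - V - D) \<in> carrier_mat l n"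
    using Dc by (auto intro!: carr)
  show "\<forall>Z\<in>carrier_mat l n. fip (transpose_mat E * (E * V * M - Yh) * transpose_mat M - rho \<cdot>\<^sub>m (XB - V - D)) Z = 0"
  proof
    fix Z :: "real mat" assume Z: "Z \<in> carrier_mat l n"
    have EZM: "E * Z * M \<in> carrier_mat Lh nh" using Ec Z Mc by auto
    have mZ: "(-1) \<cdot>\<^sub>m Z \<in> carrier_mat l n" using Z by auto
    have "\<forall>t. fip A1 A1 + rho * fip A2 A2 \<le> fip A1 A1 + rho * fip A2 A2 +
       2 * t * (fip A1 (E * Z * M) + rho * fip A2 ((-1) \<cdot>\<^sub>m Z)) + t\<^sup>2 * (fip (E * Z * M) (E * Z * M) + rho * fip Z Z)"
    proof
      fix t :: real
      have "E * (V + t \<cdot>\<^sub>m Z) * M = E * V * M + t \<cdot>\<^sub>m (E * Z * M)"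
        using Ec Vc Z Mc
        by (simp add: mult_add_distrib_mat[of _ Lh l] mult_smult_distrib[of _ Lh l]
             add_mult_distrib_mat[of _ Lh n] mult_smult_assoc_mat[of _ Lh n])
      then have e1: "E * (V + t \<cdot>\<^sub>m Z) * M - Yh = A1 + t \<cdot>\<^sub>m (E * Z * M)"
        unfolding A1_def using Ec Vc Z Mc Yc by (intro eq_matI) auto
      have e2: "XB - (V + t \<cdot>\<^sub>m Z) - D = A2 + t \<cdot>\<^sub>m ((-1) \<cdot>\<^sub>m Z)"
        unfolding A2_def using XBc Vc Z Dc by (intro eq_matI) auto
      have ff: "fip ((-1) \<cdot>\<^sub>m Z) ((-1) \<cdot>\<^sub>m Z) = fip Z Z"
        using Z by (simp add: fip_smult_left[of _ l n] fip_smult_right[of _ l n])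
      have "V + t \<cdot>\<^sub>m Z \<in> carrier_mat l n" using Z by auto
      from min[rule_format, OF this] show "fip A1 A1 + rho * fip A2 A2 \<le> fip A1 A1 + rho * fip A2 A2 +
       2 * t * (fip A1 (E * Z * M) + rho * fip A2 ((-1) \<cdot>\<^sub>m Z)) + t\<^sup>2 * (fip (E * Z * M) (E * Z * M) + rho * fip Z Z)"
        unfolding frob_sq e1 e2 A1_def[symmetric] A2_def[symmetric]
        using fip_expand[OF A(1) EZM, of t] fip_expand[OF A(2) mZ, of t] ff
        by (simp add: algebra_simps)
    qed
    then have "fip A1 (E * Z * M) + rho * fip A2 ((-1) \<cdot>\<^sub>m Z) = 0"
      by (rule quad_zero) (use rho in \<open>auto intro!: add_nonneg_nonneg fip_nonneg mult_nonneg_nonneg\<close>)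
    moreover have "fip A1 (E * Z * M) = fip (transpose_mat E * A1 * transpose_mat M) Z"
    proof -
      have "fip A1 (E * Z * M) = fip (E * Z * M) A1" using A EZM by (simp add: fip_comm)
      also have "\<dots> = fip (E * Z) (A1 * transpose_mat M)" by (rule fip_mult_right[of _ n nh _ Lh]) (use A Ec Z Mc in auto)
      also have "\<dots> = fip Z (transpose_mat E * (A1 * transpose_mat M))" by (rule fip_mult_left[of _ Lh l _ n]) (use A Ec Z Mc in auto)
      also have "\<dots> = fip (transpose_mat E * A1 * transpose_mat M) Z" using A Ec Z Mc
        by (subst assoc_mult_mat[of _ l Lh _ nh _ n]) (auto simp: fip_comm[of _ l n])
      finally show ?thesis .
    qed
    moreover have "fip A2 ((-1) \<cdot>\<^sub>m Z) = - fip A2 Z" using A Z by (simp add: fip_smult_right[of _ l n])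
    moreover have "fip (transpose_mat E * A1 * transpose_mat M - rho \<cdot>\<^sub>m A2) Z
        = fip (transpose_mat E * A1 * transpose_mat M) Z - rho * fip A2 Z"
      using A Z Ec Mc by (simp add: fip_minus_left[of _ l n] fip_smult_left[of _ l n])
    ultimately show "fip (transpose_mat E * (E * V * M - Yh) * transpose_mat M - rho \<cdot>\<^sub>m (XB - V - D)) Z = 0"
      unfolding A1_def A2_def by simp
  qed
qed

lemma v2step_grad:
  fixes RE Ym X V D :: "real mat" and rho lambda :: real
  assumes REc: "RE \<in> carrier_mat Lm l" and Yc: "Ym \<in> carrier_mat Lm n"
    and Xc: "X \<in> carrier_mat l n" and Vc: "V \<in> carrier_mat l n" and Dc: "D \<in> carrier_mat l n"
    and rho: "0 < rho" and lam: "0 < lambda"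
    and min: "\<forall>Z \<in> carrier_mat l n.
            lambda * (frob_norm (RE * V - Ym))\<^sup>2 + rho * (frob_norm (X - V - D))\<^sup>2
          \<le> lambda * (frob_norm (RE * Z - Ym))\<^sup>2 + rho * (frob_norm (X - Z - D))\<^sup>2"
  shows "lambda \<cdot>\<^sub>m (transpose_mat RE * (RE * V - Ym)) - rho \<cdot>\<^sub>m (X - V - D) = 0\<^sub>m l n"
proof (rule grad_zero)
  define A1 where "A1 = RE * V - Ym"
  define A2 where "A2 = X - V - D"
  have A: "A1 \<in> carrier_mat Lm n" "A2 \<in> carrier_mat l n"
    unfolding A1_def A2_def using REc Yc Vc Dc by (auto intro!: carr)
  show "lambda \<cdot>\<^sub>m (transpose_mat RE * (RE * V - Ym)) - rho \<cdot>\<^sub>m (X - V - D) \<in> carrier_mat l n"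
    using Dc by (auto intro!: carr)
  show "\<forall>Z\<in>carrier_mat l n. fip (lambda \<cdot>\<^sub>m (transpose_mat RE * (RE * V - Ym)) - rho \<cdot>\<^sub>m (X - V - D)) Z = 0"
  proof
    fix Z :: "real mat" assume Z: "Z \<in> carrier_mat l n"
    have REZ: "RE * Z \<in> carrier_mat Lm n" using REc Z by auto
    have mZ: "(-1) \<cdot>\<^sub>m Z \<in> carrier_mat l n" using Z by auto
    have "\<forall>t. lambda * fip A1 A1 + rho * fip A2 A2 \<le> lambda * fip A1 A1 + rho * fip A2 A2 +
       2 * t * (lambda * fip A1 (RE * Z) + rho * fip A2 ((-1) \<cdot>\<^sub>m Z)) + t\<^sup>2 * (lambda * fip (RE * Z) (RE * Z) + rho * fip Z Z)"
    proof
      fix t :: real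
      have "RE * (V + t \<cdot>\<^sub>m Z) = RE * V + t \<cdot>\<^sub>m (RE * Z)"
        using REc Vc Z by (simp add: mult_add_distrib_mat[of _ Lm l] mult_smult_distrib[of _ Lm l])
      then have e1: "RE * (V + t \<cdot>\<^sub>m Z) - Ym = A1 + t \<cdot>\<^sub>m (RE * Z)"
        unfolding A1_def using REc Vc Z Yc by (intro eq_matI) auto
      have e2: "X - (V + t \<cdot>\<^sub>m Z) - D = A2 + t \<cdot>\<^sub>m ((-1) \<cdot>\<^sub>m Z)"
        unfolding A2_def using Xc Vc Z Dc by (intro eq_matI) auto
      have ff: "fip ((-1) \<cdot>\<^sub>m Z) ((-1) \<cdot>\<^sub>m Z) = fip Z Z"
        using Z by (simp add: fip_smult_left[of _ l n] fip_smult_right[of _ l n])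
      have "V + t \<cdot>\<^sub>m Z \<in> carrier_mat l n" using Z by auto
      from min[rule_format, OF this] show "lambda * fip A1 A1 + rho * fip A2 A2 \<le> lambda * fip A1 A1 + rho * fip A2 A2 +
       2 * t * (lambda * fip A1 (RE * Z) + rho * fip A2 ((-1) \<cdot>\<^sub>m Z)) + t\<^sup>2 * (lambda * fip (RE * Z) (RE * Z) + rho * fip Z Z)"
        unfolding frob_sq e1 e2 A1_def[symmetric] A2_def[symmetric]
        using fip_expand[OF A(1) REZ, of t] fip_expand[OF A(2) mZ, of t] ff
        by (simp add: algebra_simps)
    qed
    then have "lambda * fip A1 (RE * Z) + rho * fip A2 ((-1) \<cdot>\<^sub>m Z) = 0"
      by (rule quad_zero) (use rho lam in \<open>auto intro!: add_nonneg_nonneg fip_nonneg mult_nonneg_nonneg\<close>)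
    moreover have "fip A1 (RE * Z) = fip (transpose_mat RE * A1) Z"
    proof -
      have "fip A1 (RE * Z) = fip (RE * Z) A1" using A REZ by (simp add: fip_comm)
      also have "\<dots> = fip Z (transpose_mat RE * A1)" by (rule fip_mult_left[of _ Lm l _ n]) (use A REc Z in auto)
      also have "\<dots> = fip (transpose_mat RE * A1) Z" using A REc Z by (auto simp: fip_comm[of _ l n])
      finally show ?thesis .
    qed
    moreover have "fip A2 ((-1) \<cdot>\<^sub>m Z) = - fip A2 Z" using A Z by (simp add: fip_smult_right[of _ l n])
    moreover have "fip (lambda \<cdot>\<^sub>m (transpose_mat RE * A1) - rho \<cdot>\<^sub>m A2) Z
        = lambda * fip (transpose_mat RE * A1) Z - rho * fip A2 Z"
      using A Z REc by (simp add: fip_minus_left[of _ l n] fip_smult_left[of _ l n])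
    ultimately show "fip (lambda \<cdot>\<^sub>m (transpose_mat RE * (RE * V - Ym)) - rho \<cdot>\<^sub>m (X - V - D)) Z = 0"
      unfolding A1_def A2_def by simp
  qed
qed

definition linmap :: "(real mat \<Rightarrow> real mat) \<Rightarrow> nat \<Rightarrow> nat \<Rightarrow> nat \<Rightarrow> nat \<Rightarrow> bool" where
  "linmap f r c r' c' \<longleftrightarrow> (\<forall>Y\<in>carrier_mat r c. f Y \<in> carrier_mat r' c') \<and>
     (\<forall>Y\<in>carrier_mat r c. \<forall>Z\<in>carrier_mat r c. f (Y + Z) = f Y + f Z) \<and>
     (\<forall>Y\<in>carrier_mat r c. \<forall>a. f (a \<cdot>\<^sub>m Y) = a \<cdot>\<^sub>m f Y)"

lemma linmapD: assumes "linmap f r c r' c'"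
  shows "Y \<in> carrier_mat r c \<Longrightarrow> f Y \<in> carrier_mat r' c'"
    "Y \<in> carrier_mat r c \<Longrightarrow> Z \<in> carrier_mat r c \<Longrightarrow> f (Y + Z) = f Y + f Z"
    "Y \<in> carrier_mat r c \<Longrightarrow> f (a \<cdot>\<^sub>m Y) = a \<cdot>\<^sub>m f Y"
  using assms unfolding linmap_def by auto

lemma linmap_zero: assumes "linmap f r c r' c'" shows "f (0\<^sub>m r c) = 0\<^sub>m r' c'"
proof -
  have "f (0\<^sub>m r c) = f (0 \<cdot>\<^sub>m 0\<^sub>m r c)" by (intro arg_cong[of _ _ f] eq_matI) auto
  also have "\<dots> = 0 \<cdot>\<^sub>m f (0\<^sub>m r c)" by (rule linmapD(3)[OF assms]) simp
  also have "\<dots> = 0\<^sub>m r' c'" using linmapD(1)[OF assms, of "0\<^sub>m r c"] by (intro eq_matI) auto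
  finally show ?thesis .
qed

lemma linmap_minus: assumes "linmap f r c r' c'" "Y \<in> carrier_mat r c" "Z \<in> carrier_mat r c"
  shows "f (Y - Z) = f Y - f Z"
proof -
  have "Y - Z = Y + (-1) \<cdot>\<^sub>m Z" using assms by (intro eq_matI) auto
  then have "f (Y - Z) = f Y + (-1) \<cdot>\<^sub>m f Z" using linmapD[OF assms(1)] assms by auto
  also have "\<dots> = f Y - f Z" using linmapD(1)[OF assms(1)] assms by (intro eq_matI) auto
  finally show ?thesis .
qed

lemma linmap_left: "P \<in> carrier_mat r' r \<Longrightarrow> linmap (\<lambda>Y. P * Y) r c r' c"
  unfolding linmap_def by (auto simp: mult_add_distrib_mat[of _ r' r] mult_smult_distrib[of _ r' r])

lemma linmap_right: "Q \<in> carrier_mat c c' \<Longrightarrow> linmap (\<lambda>Y. Y * Q) r c r c'"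
  unfolding linmap_def by (auto simp: add_mult_distrib_mat[of _ r c] mult_smult_assoc_mat[of _ r c])

lemma linmap_id: "linmap (\<lambda>Y. Y) r c r c"
  unfolding linmap_def by auto

lemma linmap_comp: "linmap f r c r' c' \<Longrightarrow> linmap g r' c' r'' c'' \<Longrightarrow> linmap (\<lambda>Y. g (f Y)) r c r'' c''"
  unfolding linmap_def by auto

lemma linmap_add: assumes "linmap f r c r' c'" "linmap g r c r' c'"
  shows "linmap (\<lambda>Y. f Y + g Y) r c r' c'"
proof -
  note fc = linmapD(1)[OF assms(1)] and gc = linmapD(1)[OF assms(2)]
  show ?thesis unfolding linmap_def
  proof (intro conjI ballI allI)
    fix Y :: "real mat" assume Y: "Y \<in> carrier_mat r c"
    show "f Y + g Y \<in> carrier_mat r' c'" using gc[OF Y] by simp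
    fix a show "f (a \<cdot>\<^sub>m Y) + g (a \<cdot>\<^sub>m Y) = a \<cdot>\<^sub>m (f Y + g Y)"
      using linmapD(3)[OF assms(1) Y] linmapD(3)[OF assms(2) Y] fc[OF Y] gc[OF Y]
      by (intro eq_matI) (auto simp: algebra_simps)
  next
    fix Y Z :: "real mat" assume Y: "Y \<in> carrier_mat r c" and Z: "Z \<in> carrier_mat r c"
    show "f (Y + Z) + g (Y + Z) = f Y + g Y + (f Z + g Z)"
      using linmapD(2)[OF assms(1) Y Z] linmapD(2)[OF assms(2) Y Z] fc[OF Y] gc[OF Y] fc[OF Z] gc[OF Z]
      by (intro eq_matI) auto
  qed
qed

lemma linmap_sub: assumes "linmap f r c r' c'" "linmap g r c r' c'"
  shows "linmap (\<lambda>Y. f Y - g Y) r c r' c'"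
proof -
  note fc = linmapD(1)[OF assms(1)] and gc = linmapD(1)[OF assms(2)]
  show ?thesis unfolding linmap_def
  proof (intro conjI ballI allI)
    fix Y :: "real mat" assume Y: "Y \<in> carrier_mat r c"
    show "f Y - g Y \<in> carrier_mat r' c'" using gc[OF Y] by (simp add: minus_carrier_mat)
    fix a show "f (a \<cdot>\<^sub>m Y) - g (a \<cdot>\<^sub>m Y) = a \<cdot>\<^sub>m (f Y - g Y)"
      using linmapD(3)[OF assms(1) Y] linmapD(3)[OF assms(2) Y] fc[OF Y] gc[OF Y]
      by (intro eq_matI) (auto simp: algebra_simps)
  next
    fix Y Z :: "real mat" assume Y: "Y \<in> carrier_mat r c" and Z: "Z \<in> carrier_mat r c"
    show "f (Y + Z) - g (Y + Z) = f Y - g Y + (f Z - g Z)"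
      using linmapD(2)[OF assms(1) Y Z] linmapD(2)[OF assms(2) Y Z] fc[OF Y] gc[OF Y] fc[OF Z] gc[OF Z]
      by (intro eq_matI) auto
  qed
qed

lemma linmap_smult: assumes "linmap f r c r' c'"
  shows "linmap (\<lambda>Y. a \<cdot>\<^sub>m f Y) r c r' c'"
proof -
  note fc = linmapD(1)[OF assms(1)]
  show ?thesis unfolding linmap_def
  proof (intro conjI ballI allI)
    fix Y :: "real mat" assume Y: "Y \<in> carrier_mat r c"
    show "a \<cdot>\<^sub>m f Y \<in> carrier_mat r' c'" using fc[OF Y] by simp
    fix b show "a \<cdot>\<^sub>m f (b \<cdot>\<^sub>m Y) = b \<cdot>\<^sub>m (a \<cdot>\<^sub>m f Y)"
      using linmapD(3)[OF assms(1) Y] fc[OF Y]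
      by (intro eq_matI) (auto simp: algebra_simps)
  next
    fix Y Z :: "real mat" assume Y: "Y \<in> carrier_mat r c" and Z: "Z \<in> carrier_mat r c"
    show "a \<cdot>\<^sub>m f (Y + Z) = a \<cdot>\<^sub>m f Y + a \<cdot>\<^sub>m f Z"
      using linmapD(2)[OF assms(1) Y Z] fc[OF Y] fc[OF Z]
      by (intro eq_matI) (auto simp: algebra_simps)
  qed
qed

lemma msum_empty: "msum r c g {} = 0\<^sub>m r c"
  unfolding msum_def by (intro eq_matI) auto

lemma msum_insert: "finite S \<Longrightarrow> x \<notin> S \<Longrightarrow> msum r c g (insert x S) = g x + msum r c g S"
  unfolding msum_def by (intro eq_matI) auto

lemma linmap_msum: assumes f: "linmap f r c r' c'" and S: "finite S" and g: "\<forall>x\<in>S. g x \<in> carrier_mat r c"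
  shows "f (msum r c g S) = msum r' c' (\<lambda>x. f (g x)) S"
  using S g
proof (induction S rule: finite_induct)
  case empty
  then show ?case using linmap_zero[OF f] by (simp add: msum_empty)
next
  case (insert x S)
  then show ?case using linmapD(2)[OF f] by (simp add: msum_insert msum_carrier)
qed

lemma sum_mult_delta: "finite S \<Longrightarrow> (\<Sum>x\<in>S. f x * (if a = x then 1 else 0)) = (if a \<in> S then f a else (0::real))"
proof -
  assume S: "finite S"
  have "(\<Sum>x\<in>S. f x * (if a = x then 1 else 0)) = (\<Sum>x\<in>S. if a = x then f x else 0)" by (rule sum.cong) auto
  then show ?thesis using S by (simp add: sum.delta')
qed

lemma idx_arith: fixes i j c :: nat assumes "j < c" shows "(i * c + j) div c = i" "(i * c + j) mod c = j"
  using assms by auto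

lemma idx_lt2: fixes i j r c :: nat assumes "i < r" "j < c" shows "i * c + j < r * c"
proof -
  have "i * c + j < i * c + c" using assms by simp
  also have "\<dots> = (i + 1) * c" by simp
  also have "\<dots> \<le> r * c" using assms by (intro mult_right_mono) auto
  finally show ?thesis .
qed

lemma lin_surj: assumes f: "linmap f r c r c"
  and inj: "\<forall>Y\<in>carrier_mat r c. f Y = 0\<^sub>m r c \<longrightarrow> Y = 0\<^sub>m r c"
  and T: "T \<in> carrier_mat r c"
  shows "\<exists>Y\<in>carrier_mat r c. f Y = T"
proof -
  define N where "N = r * c"
  define vecm where "vecm A = vec N (\<lambda>k. A $$ (k div c, k mod c))" for A :: "real mat"
  define unvec where "unvec v = mat r c (\<lambda>(i,j). v $ (i * c + j))" for v :: "real vec"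
  define unit where "unit k = mat r c (\<lambda>(i,j). if i * c + j = k then 1 else (0::real))" for k
  define Mf where "Mf = mat N N (\<lambda>(a,b). f (unit b) $$ (a div c, a mod c))"
  have kd: "k div c < r" "k mod c < c" "k div c * c + k mod c = k" if "k < N" for k
    using that unfolding N_def by (auto simp: less_mult_imp_div_less) (metis mod_less_divisor gr0I mult_0_right not_less0)
  have unitc: "unit k \<in> carrier_mat r c" for k unfolding unit_def by auto
  have fu: "f (unit k) \<in> carrier_mat r c" for k using linmapD(1)[OF f unitc] .
  have fud: "dim_row (f (unit k)) = r" "dim_col (f (unit k)) = c" for k using fu[of k] by auto
  have decomp: "Y = msum r c (\<lambda>k. Y $$ (k div c, k mod c) \<cdot>\<^sub>m unit k) {..<N}" if Y: "Y \<in> carrier_mat r c" for Y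
  proof (rule eq_matI)
    fix i j assume i: "i < dim_row (msum r c (\<lambda>k. Y $$ (k div c, k mod c) \<cdot>\<^sub>m unit k) {..<N})"
      and j: "j < dim_col (msum r c (\<lambda>k. Y $$ (k div c, k mod c) \<cdot>\<^sub>m unit k) {..<N})"
    then have i: "i < r" and j: "j < c" by (auto simp: msum_def)
    have lt: "i * c + j < N" using idx_lt2[OF i j] N_def by simp
    have "msum r c (\<lambda>k. Y $$ (k div c, k mod c) \<cdot>\<^sub>m unit k) {..<N} $$ (i,j)
        = (\<Sum>k<N. Y $$ (k div c, k mod c) * (if i * c + j = k then 1 else 0))"
      using i j unfolding msum_def unit_def by (auto intro!: sum.cong)
    also have "\<dots> = Y $$ (i, j)" using lt idx_arith[OF j] by (simp add: sum_mult_delta)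
    finally show "Y $$ (i, j) = msum r c (\<lambda>k. Y $$ (k div c, k mod c) \<cdot>\<^sub>m unit k) {..<N} $$ (i, j)" by simp
  qed (use that in \<open>auto simp: msum_def\<close>)
  have fY: "f Y = msum r c (\<lambda>k. Y $$ (k div c, k mod c) \<cdot>\<^sub>m f (unit k)) {..<N}" if Y: "Y \<in> carrier_mat r c" for Y
    apply (subst decomp[OF Y])
    apply (subst linmap_msum[OF f])
    using linmapD(3)[OF f unitc] unitc by auto
  have Mfc: "Mf \<in> carrier_mat N N" unfolding Mf_def by auto
  have Mv: "Mf *\<^sub>v vecm Y = vecm (f Y)" if Y: "Y \<in> carrier_mat r c" for Y
  proof (rule eq_vecI)
    fix a assume "a < dim_vec (vecm (f Y))"
    then have a: "a < N" unfolding vecm_def by simp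
    have "(Mf *\<^sub>v vecm Y) $ a = (\<Sum>b<N. f (unit b) $$ (a div c, a mod c) * Y $$ (b div c, b mod c))"
      using a unfolding Mf_def vecm_def by (auto simp: scalar_prod_def lessThan_atLeast0)
    also have "\<dots> = f Y $$ (a div c, a mod c)"
      unfolding fY[OF Y] msum_def using kd[OF a] by (auto simp: mult.commute fud intro!: sum.cong)
    finally show "(Mf *\<^sub>v vecm Y) $ a = vecm (f Y) $ a" using a unfolding vecm_def by simp
  qed (auto simp: Mf_def vecm_def)
  have vu: "vecm (unvec v) = v" if "v \<in> carrier_vec N" for v
    using that kd unfolding vecm_def unvec_def by (intro eq_vecI) auto
  have uv: "unvec (vecm A) = A" if "A \<in> carrier_mat r c" for A
    using that idx_lt2 idx_arith unfolding vecm_def unvec_def N_def by (intro eq_matI) auto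
  have unvc: "unvec v \<in> carrier_mat r c" for v unfolding unvec_def by auto
  have vmc: "vecm A \<in> carrier_vec N" for A unfolding vecm_def by auto
  have "\<forall>v\<in>carrier_vec N. Mf *\<^sub>v v = 0\<^sub>v N \<longrightarrow> v = 0\<^sub>v N"
  proof (intro ballI impI)
    fix v :: "real vec" assume v: "v \<in> carrier_vec N" and z: "Mf *\<^sub>v v = 0\<^sub>v N"
    have "vecm (f (unvec v)) = Mf *\<^sub>v vecm (unvec v)" using Mv[OF unvc[of v]] by simp
    also have "\<dots> = 0\<^sub>v N" using vu[OF v] z by simp
    finally have "vecm (f (unvec v)) = 0\<^sub>v N" .
    then have "f (unvec v) = unvec (0\<^sub>v N)" using uv[OF linmapD(1)[OF f unvc]] by metis
    also have "unvec (0\<^sub>v N) = 0\<^sub>m r c" unfolding unvec_def using idx_lt2 N_def by (intro eq_matI) auto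
    finally have "unvec v = 0\<^sub>m r c" using inj unvc by blast
    then have "vecm (unvec v) = 0\<^sub>v N" unfolding vecm_def using kd by (intro eq_vecI) auto
    then show "v = 0\<^sub>v N" using vu[OF v] by simp
  qed
  from inj_imp_inverse[OF Mfc this] obtain Mi where Mi: "Mi \<in> carrier_mat N N" "Mf * Mi = 1\<^sub>m N" by blast
  define Y where "Y = unvec (Mi *\<^sub>v vecm T)"
  have mic: "Mi *\<^sub>v vecm T \<in> carrier_vec N" using Mi(1) vmc by auto
  have "vecm (f Y) = Mf *\<^sub>v vecm Y" using Mv[OF unvc[of "Mi *\<^sub>v vecm T"]] unfolding Y_def by simp
  also have "\<dots> = Mf *\<^sub>v (Mi *\<^sub>v vecm T)" unfolding Y_def using vu[OF mic] by simp
  finally have "vecm (f Y) = Mf *\<^sub>v (Mi *\<^sub>v vecm T)" .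
  also have "\<dots> = (Mf * Mi) *\<^sub>v vecm T" using Mfc Mi vmc by (subst assoc_mult_mat_vec) auto
  also have "\<dots> = vecm T" using Mi vmc by simp
  finally have "f Y = T" using uv[OF linmapD(1)[OF f unvc]] uv[OF T] unfolding Y_def by metis
  then show ?thesis using unvc unfolding Y_def by blast
qed

definition mconv :: "(nat \<Rightarrow> real mat) \<Rightarrow> real mat \<Rightarrow> nat \<Rightarrow> nat \<Rightarrow> bool" where
  "mconv S A r c \<longleftrightarrow> (\<forall>i<r. \<forall>j<c. (\<lambda>k. S k $$ (i,j)) \<longlonglongrightarrow> A $$ (i,j))"

lemma mconv_add: assumes "mconv S A r c" "mconv T B r c" "\<forall>k. T k \<in> carrier_mat r c" "B \<in> carrier_mat r c"
  shows "mconv (\<lambda>k. S k + T k) (A + B) r c"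
  unfolding mconv_def
proof (intro allI impI)
  fix i j assume i: "i < r" and j: "j < c"
  have Td: "\<And>k. dim_row (T k) = r" "\<And>k. dim_col (T k) = c" using assms(3) by auto
  have "(\<lambda>k. (S k + T k) $$ (i,j)) = (\<lambda>k. S k $$ (i,j) + T k $$ (i,j))"
    by (intro ext) (use Td i j in auto)
  then show "(\<lambda>k. (S k + T k) $$ (i, j)) \<longlonglongrightarrow> (A + B) $$ (i, j)"
    using assms i j unfolding mconv_def by (auto intro!: tendsto_add)
qed

lemma mconv_minus: assumes "mconv S A r c" "mconv T B r c" "\<forall>k. T k \<in> carrier_mat r c" "B \<in> carrier_mat r c"
  shows "mconv (\<lambda>k. S k - T k) (A - B) r c"
  unfolding mconv_def
proof (intro allI impI)
  fix i j assume i: "i < r" and j: "j < c"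
  have Td: "\<And>k. dim_row (T k) = r" "\<And>k. dim_col (T k) = c" using assms(3) by auto
  have "(\<lambda>k. (S k - T k) $$ (i,j)) = (\<lambda>k. S k $$ (i,j) - T k $$ (i,j))"
    by (intro ext) (use Td i j in auto)
  then show "(\<lambda>k. (S k - T k) $$ (i, j)) \<longlonglongrightarrow> (A - B) $$ (i, j)"
    using assms i j unfolding mconv_def by (auto intro!: tendsto_diff)
qed

lemma mconv_smult: assumes "mconv S A r c" "\<forall>k. S k \<in> carrier_mat r c" "A \<in> carrier_mat r c"
  shows "mconv (\<lambda>k. a \<cdot>\<^sub>m S k) (a \<cdot>\<^sub>m A) r c"
  unfolding mconv_def
proof (intro allI impI)
  fix i j assume i: "i < r" and j: "j < c"
  have Sd: "\<And>k. dim_row (S k) = r" "\<And>k. dim_col (S k) = c" using assms(2) by auto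
  have "(\<lambda>k. (a \<cdot>\<^sub>m S k) $$ (i,j)) = (\<lambda>k. a * S k $$ (i,j))"
    by (intro ext) (use Sd i j in auto)
  then show "(\<lambda>k. (a \<cdot>\<^sub>m S k) $$ (i, j)) \<longlonglongrightarrow> (a \<cdot>\<^sub>m A) $$ (i, j)"
    using assms i j unfolding mconv_def by (auto intro!: tendsto_mult_left)
qed

lemma mconv_const: "mconv (\<lambda>k. A) A r c"
  unfolding mconv_def by auto

lemma mconv_mult_left: assumes "mconv S A r c" "\<forall>k. S k \<in> carrier_mat r c" "A \<in> carrier_mat r c"
  "P \<in> carrier_mat r' r"
  shows "mconv (\<lambda>k. P * S k) (P * A) r' c"
  unfolding mconv_def
proof (intro allI impI)
  fix i j assume i: "i < r'" and j: "j < c"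
  have Sd: "\<And>k. dim_row (S k) = r" "\<And>k. dim_col (S k) = c" using assms(2) by auto
  have "(\<lambda>k. \<Sum>l<r. P $$ (i,l) * S k $$ (l,j)) \<longlonglongrightarrow> (\<Sum>l<r. P $$ (i,l) * A $$ (l,j))"
    using assms j unfolding mconv_def by (auto intro!: tendsto_sum tendsto_mult_left)
  moreover have "(\<lambda>k. (P * S k) $$ (i, j)) = (\<lambda>k. \<Sum>l<r. P $$ (i,l) * S k $$ (l,j))"
    by (intro ext) (use Sd assms(4) i j in \<open>auto simp: scalar_prod_def lessThan_atLeast0\<close>)
  moreover have "(P * A) $$ (i, j) = (\<Sum>l<r. P $$ (i,l) * A $$ (l,j))"
    using assms(3,4) i j by (auto simp: scalar_prod_def lessThan_atLeast0)
  ultimately show "(\<lambda>k. (P * S k) $$ (i, j)) \<longlonglongrightarrow> (P * A) $$ (i, j)" by simp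
qed

lemma mconv_mult_right: assumes "mconv S A r c" "\<forall>k. S k \<in> carrier_mat r c" "A \<in> carrier_mat r c"
  "Q \<in> carrier_mat c c'"
  shows "mconv (\<lambda>k. S k * Q) (A * Q) r c'"
  unfolding mconv_def
proof (intro allI impI)
  fix i j assume i: "i < r" and j: "j < c'"
  have Sd: "\<And>k. dim_row (S k) = r" "\<And>k. dim_col (S k) = c" using assms(2) by auto
  have "(\<lambda>k. \<Sum>l<c. S k $$ (i,l) * Q $$ (l,j)) \<longlonglongrightarrow> (\<Sum>l<c. A $$ (i,l) * Q $$ (l,j))"
    using assms i unfolding mconv_def by (auto intro!: tendsto_sum tendsto_mult_right)
  moreover have "(\<lambda>k. (S k * Q) $$ (i, j)) = (\<lambda>k. \<Sum>l<c. S k $$ (i,l) * Q $$ (l,j))"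
    by (intro ext) (use Sd assms(4) i j in \<open>auto simp: scalar_prod_def lessThan_atLeast0\<close>)
  moreover have "(A * Q) $$ (i, j) = (\<Sum>l<c. A $$ (i,l) * Q $$ (l,j))"
    using assms(3,4) i j by (auto simp: scalar_prod_def lessThan_atLeast0)
  ultimately show "(\<lambda>k. (S k * Q) $$ (i, j)) \<longlonglongrightarrow> (A * Q) $$ (i, j)" by simp
qed

lemma mconv_fip: assumes "mconv S A r c" "mconv T B r c" "\<forall>k. S k \<in> carrier_mat r c" "A \<in> carrier_mat r c"
  shows "(\<lambda>k. fip (S k) (T k)) \<longlonglongrightarrow> fip A B"
proof -
  have "(\<lambda>k. fip (S k) (T k)) = (\<lambda>k. \<Sum>i<r. \<Sum>j<c. S k $$ (i,j) * T k $$ (i,j))"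
  proof -
    have Sd: "\<And>k. dim_row (S k) = r" "\<And>k. dim_col (S k) = c" using assms(3) by auto
    show ?thesis unfolding fip_def by (intro ext) (simp add: Sd)
  qed
  moreover have "fip A B = (\<Sum>i<r. \<Sum>j<c. A $$ (i,j) * B $$ (i,j))" using assms(4) unfolding fip_def by auto
  moreover have "(\<lambda>k. \<Sum>i<r. \<Sum>j<c. S k $$ (i,j) * T k $$ (i,j)) \<longlonglongrightarrow> (\<Sum>i<r. \<Sum>j<c. A $$ (i,j) * B $$ (i,j))"
    using assms(1,2) unfolding mconv_def by (auto intro!: tendsto_sum tendsto_mult)
  ultimately show ?thesis by simp
qed

lemma mconv_unique: assumes "mconv S A r c" "mconv S A' r c" "A \<in> carrier_mat r c" "A' \<in> carrier_mat r c"
  shows "A = A'"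
proof (rule eq_matI)
  fix i j assume "i < dim_row A'" "j < dim_col A'"
  then have i: "i < r" and j: "j < c" using assms by auto
  show "A $$ (i,j) = A' $$ (i,j)"
  proof (rule LIMSEQ_unique)
    show "(\<lambda>k. S k $$ (i,j)) \<longlonglongrightarrow> A $$ (i,j)" using assms(1) i j unfolding mconv_def by blast
    show "(\<lambda>k. S k $$ (i,j)) \<longlonglongrightarrow> A' $$ (i,j)" using assms(2) i j unfolding mconv_def by blast
  qed
qed (use assms in auto)

lemma mconv_subseq: assumes "mconv S A r c" "strict_mono g"
  shows "mconv (\<lambda>k. S (g k)) A r c"
  using assms unfolding mconv_def by (auto intro: LIMSEQ_subseq_LIMSEQ[unfolded comp_def])

lemma mconv_shift: assumes "mconv (\<lambda>k. S (Suc k)) A r c" shows "mconv S A r c"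
  using assms unfolding mconv_def by (auto intro: LIMSEQ_imp_Suc)

lemma mconv_of_fip: assumes "(\<lambda>k. fip (S k - A) (S k - A)) \<longlonglongrightarrow> 0"
  "\<forall>k. S k \<in> carrier_mat r c" "A \<in> carrier_mat r c"
  shows "mconv S A r c"
  unfolding mconv_def
proof (intro allI impI)
  fix i j assume i: "i < r" and j: "j < c"
  have "((\<lambda>k. (S k - A) $$ (i,j))) \<longlonglongrightarrow> 0"
  proof (rule tendsto_sandwich[where f="\<lambda>k. - sqrt (fip (S k - A) (S k - A))" and h="\<lambda>k. sqrt (fip (S k - A) (S k - A))"])
    have le: "((S k - A) $$ (i,j))\<^sup>2 \<le> fip (S k - A) (S k - A)" for k
      using entry_sq_le[of "S k - A" r c i j] assms i j by (auto intro: carr)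
    show "\<forall>\<^sub>F n in sequentially. - sqrt (fip (S n - A) (S n - A)) \<le> (S n - A) $$ (i, j)"
      using le by (auto intro!: always_eventually) (metis abs_le_D2 minus_le_iff real_sqrt_abs real_sqrt_le_mono)
    show "\<forall>\<^sub>F n in sequentially. (S n - A) $$ (i, j) \<le> sqrt (fip (S n - A) (S n - A))"
      using le by (auto intro!: always_eventually) (metis abs_le_D1 real_sqrt_abs real_sqrt_le_mono)
    show "(\<lambda>k. - sqrt (fip (S k - A) (S k - A))) \<longlonglongrightarrow> 0"
      using tendsto_real_sqrt[OF assms(1)] tendsto_minus by fastforce
    show "(\<lambda>k. sqrt (fip (S k - A) (S k - A))) \<longlonglongrightarrow> 0"
      using tendsto_real_sqrt[OF assms(1)] by simp
  qed
  then have "(\<lambda>k. S k $$ (i,j) - A $$ (i,j)) \<longlonglongrightarrow> 0" using assms i j by simp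
  then show "(\<lambda>k. S k $$ (i, j)) \<longlonglongrightarrow> A $$ (i, j)" by (simp add: LIM_zero_iff)
qed

lemma bounded_subseq: fixes f :: "nat \<Rightarrow> 'a \<Rightarrow> real"
  assumes "finite I" "\<forall>x\<in>I. \<exists>b. \<forall>k. \<bar>f k x\<bar> \<le> b"
  shows "\<exists>g. strict_mono g \<and> (\<forall>x\<in>I. convergent (\<lambda>k. f (g k) x))"
  using assms
proof (induction I rule: finite_induct)
  case empty
  then show ?case by (auto intro: strict_mono_id[unfolded id_def])
next
  case (insert x I)
  then obtain g where g: "strict_mono g" "\<forall>y\<in>I. convergent (\<lambda>k. f (g k) y)" by auto
  obtain b where b: "\<forall>k. \<bar>f k x\<bar> \<le> b" using insert by auto
  obtain g' where g': "strict_mono g'" "monoseq (\<lambda>k. f (g (g' k)) x)"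
    using seq_monosub[of "\<lambda>k. f (g k) x"] by (auto simp: comp_def)
  have "Bseq (\<lambda>k. f (g (g' k)) x)" using b by (intro BseqI'[of _ b]) auto
  then have cx: "convergent (\<lambda>k. f (g (g' k)) x)" using g'(2) Bseq_monoseq_convergent by blast
  have "convergent (\<lambda>k. f (g (g' k)) y)" if "y \<in> I" for y
    using convergent_subseq_convergent[OF g(2)[rule_format, OF that] g'(1)] by (simp add: comp_def)
  moreover have "strict_mono (\<lambda>k. g (g' k))" using g(1) g'(1) by (simp add: strict_mono_def)
  ultimately show ?case using cx by auto
qed

lemma fip_sq_minus: assumes "A \<in> carrier_mat r c" "B \<in> carrier_mat r c"
  shows "fip (A - B) (A - B) = fip A A - 2 * fip A B + fip B B"
  using assms by (simp add: fip_minus_left[of _ r c] fip_minus_right[of _ r c] fip_comm[of B r c A] minus_carrier_mat)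

lemma core_mono: assumes c: "a1 \<in> carrier_mat r c" "a2 \<in> carrier_mat r c" "a3 \<in> carrier_mat r c"
  "b1 \<in> carrier_mat r c" "b2 \<in> carrier_mat r c" "b3 \<in> carrier_mat r c"
  and H1: "fip a1 b1 + fip a2 b2 + fip a3 b3 \<le> 0"
  shows "fip a1 a1 + fip b1 b1 + fip a2 a2 + fip b2 b2 + fip a3 a3 + fip b3 b3
    \<le> fip (a1 - b1) (a1 - b1) + fip (a2 - b2) (a2 - b2) + fip (a3 - b3) (a3 - b3)"
  using H1 c by (simp add: fip_sq_minus[of _ r c])

lemma core_fejer: assumes c: "a1 \<in> carrier_mat r c" "a2 \<in> carrier_mat r c" "a3 \<in> carrier_mat r c"
  "b1 \<in> carrier_mat r c" "b2 \<in> carrier_mat r c" "b3 \<in> carrier_mat r c"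
  "u1 \<in> carrier_mat r c" "u2 \<in> carrier_mat r c" "u3 \<in> carrier_mat r c"
  and H1: "fip a1 b1 + fip a2 b2 + fip a3 b3 \<le> 0"
  and H2: "fip u1 (u1 - a1 - b1) + fip u2 (u2 - a2 - b2) + fip u3 (u3 - a3 - b3) = 0"
  shows "fip (u1 - b1) (u1 - b1) + fip (u2 - b2) (u2 - b2) + fip (u3 - b3) (u3 - b3)
     + (fip (u1 - a1) (u1 - a1) + fip (u2 - a2) (u2 - a2) + fip (u3 - a3) (u3 - a3))
    \<le> fip (a1 - b1) (a1 - b1) + fip (a2 - b2) (a2 - b2) + fip (a3 - b3) (a3 - b3)"
proof -
  have "fip u1 (u1 - a1 - b1) = fip u1 u1 - fip u1 a1 - fip u1 b1"
       "fip u2 (u2 - a2 - b2) = fip u2 u2 - fip u2 a2 - fip u2 b2"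
       "fip u3 (u3 - a3 - b3) = fip u3 u3 - fip u3 a3 - fip u3 b3"
    using c by (auto simp: fip_minus_right[of _ r c] minus_carrier_mat)
  with H1 H2 c show ?thesis by (simp add: fip_sq_minus[of _ r c])
qed

lemma decseq_subseq_zero: fixes e :: "nat \<Rightarrow> real"
  assumes "\<forall>k. e (Suc k) \<le> e k" "\<forall>k. 0 \<le> e k" "strict_mono g" "(\<lambda>k. e (g k)) \<longlonglongrightarrow> 0"
  shows "e \<longlonglongrightarrow> 0"
proof -
  have dec: "decseq e" using assms(1) by (simp add: decseq_SucI)
  have "Bseq e" using dec assms(2) by (intro BseqI'[of _ "e 0"]) (auto simp: decseq_def)
  then have "convergent e" using Bseq_monoseq_convergent[OF \<open>Bseq e\<close>] dec by (simp add: monoseq_iff)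
  then obtain L where L: "e \<longlonglongrightarrow> L" by (auto simp: convergent_def)
  have "(\<lambda>k. e (g k)) \<longlonglongrightarrow> L" using LIMSEQ_subseq_LIMSEQ[OF L assms(3)] by (simp add: comp_def)
  then have "L = 0" using assms(4) LIMSEQ_unique by blast
  then show ?thesis using L by simp
qed

locale admm =
  fixes l n Lh Lm nh :: nat
    and Yh Ym B M RE E Wt :: "real mat"
    and rho lambda :: real
    and X V1 V2 V3 D1 D2 D3 :: "nat \<Rightarrow> real mat"
  assumes Yh: "Yh \<in> carrier_mat Lh nh" and Ym: "Ym \<in> carrier_mat Lm n"
    and B: "B \<in> carrier_mat n n" and M: "M \<in> carrier_mat n nh"
    and RE: "RE \<in> carrier_mat Lm l" and E: "E \<in> carrier_mat Lh l" and Wt: "Wt \<in> carrier_mat n n"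
    and rho: "0 < rho" and lam: "0 < lambda"
    and W1: "\<forall>Y\<in>carrier_mat l n. fip (Y * Wt) (Y * Wt) \<le> fip Y (Y * Wt)"
    and W2: "\<forall>Y\<in>carrier_mat l n. Y * Wt = Y \<longrightarrow> Y = 0\<^sub>m l n"
    and cV: "\<forall>k. V1 k \<in> carrier_mat l n \<and> V2 k \<in> carrier_mat l n \<and> V3 k \<in> carrier_mat l n \<and>
                 D1 k \<in> carrier_mat l n \<and> D2 k \<in> carrier_mat l n \<and> D3 k \<in> carrier_mat l n"
    and cX: "\<forall>k. X (Suc k) \<in> carrier_mat l n"
    and XO: "\<forall>k. (X (Suc k) * B - V1 k - D1 k) * transpose_mat B + (X (Suc k) - V2 k - D2 k)
                 + (X (Suc k) - V3 k - D3 k) = 0\<^sub>m l n"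
    and BR1k: "\<forall>k. transpose_mat E * (E * V1 (Suc k) * M - Yh) * transpose_mat M + rho \<cdot>\<^sub>m D1 (Suc k) = 0\<^sub>m l n"
    and BR2k: "\<forall>k. lambda \<cdot>\<^sub>m (transpose_mat RE * (RE * V2 (Suc k) - Ym)) + rho \<cdot>\<^sub>m D2 (Suc k) = 0\<^sub>m l n"
    and BR3k: "\<forall>k. V3 (Suc k) = (V3 (Suc k) - D3 (Suc k)) * Wt"
    and Dupd1: "\<forall>k. D1 (Suc k) = D1 k - (X (Suc k) * B - V1 (Suc k))"
    and Dupd2: "\<forall>k. D2 (Suc k) = D2 k - (X (Suc k) - V2 (Suc k))"
    and Dupd3: "\<forall>k. D3 (Suc k) = D3 k - (X (Suc k) - V3 (Suc k))"
begin

lemma cV': "V1 k \<in> carrier_mat l n" "V2 k \<in> carrier_mat l n" "V3 k \<in> carrier_mat l n"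
  "D1 k \<in> carrier_mat l n" "D2 k \<in> carrier_mat l n" "D3 k \<in> carrier_mat l n" "X (Suc k) \<in> carrier_mat l n"
  using cV cX by auto

definition BR :: "real mat \<Rightarrow> real mat \<Rightarrow> real mat \<Rightarrow> real mat \<Rightarrow> real mat \<Rightarrow> real mat \<Rightarrow> bool" where
  "BR v1 v2 v3 d1 d2 d3 \<longleftrightarrow> v1 \<in> carrier_mat l n \<and> v2 \<in> carrier_mat l n \<and> v3 \<in> carrier_mat l n \<and>
     d1 \<in> carrier_mat l n \<and> d2 \<in> carrier_mat l n \<and> d3 \<in> carrier_mat l n \<and>
     transpose_mat E * (E * v1 * M - Yh) * transpose_mat M + rho \<cdot>\<^sub>m d1 = 0\<^sub>m l n \<and>
     lambda \<cdot>\<^sub>m (transpose_mat RE * (RE * v2 - Ym)) + rho \<cdot>\<^sub>m d2 = 0\<^sub>m l n \<and>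
     v3 = (v3 - d3) * Wt"

definition saddle :: "real mat \<Rightarrow> real mat \<Rightarrow> real mat \<Rightarrow> real mat \<Rightarrow> real mat \<Rightarrow> real mat \<Rightarrow> real mat \<Rightarrow> bool" where
  "saddle x v1 v2 v3 d1 d2 d3 \<longleftrightarrow> x \<in> carrier_mat l n \<and> BR v1 v2 v3 d1 d2 d3 \<and>
     x * B = v1 \<and> x = v2 \<and> x = v3 \<and> d1 * transpose_mat B + d2 + d3 = 0\<^sub>m l n"

lemma BR_iter: "BR (V1 (Suc k)) (V2 (Suc k)) (V3 (Suc k)) (D1 (Suc k)) (D2 (Suc k)) (D3 (Suc k))"
  unfolding BR_def using cV' BR1k BR2k BR3k by blast

lemma adj1: assumes z: "z \<in> carrier_mat l n" and A: "A \<in> carrier_mat Lh nh"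
  shows "fip z (transpose_mat E * A * transpose_mat M) = fip (E * z * M) A"
proof -
  have "fip (E * z * M) A = fip (E * z) (A * transpose_mat M)" by (rule fip_mult_right[of _ n nh _ Lh]) (use A E z M in auto)
  also have "\<dots> = fip z (transpose_mat E * (A * transpose_mat M))" by (rule fip_mult_left[of _ Lh l _ n]) (use A E z M in auto)
  also have "\<dots> = fip z (transpose_mat E * A * transpose_mat M)" using A E z M
    by (subst assoc_mult_mat[of _ l Lh _ nh _ n]) auto
  finally show ?thesis by simp
qed

lemma adj2: assumes z: "z \<in> carrier_mat l n" and A: "A \<in> carrier_mat Lm n"
  shows "fip z (transpose_mat RE * A) = fip (RE * z) A"
  by (rule sym, rule fip_mult_left[of _ Lm l _ n]) (use A RE z in auto)

lemma linEM: "linmap (\<lambda>Y. E * Y * M) l n Lh nh"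
  by (rule linmap_comp[OF linmap_left[OF E] linmap_right[OF M]])

lemma mono: assumes "BR v1 v2 v3 d1 d2 d3" "BR v1' v2' v3' d1' d2' d3'"
  shows "fip (v1 - v1') (d1 - d1') + fip (v2 - v2') (d2 - d2') + fip (v3 - v3') (d3 - d3') \<le> 0"
proof -
  from assms have c: "v1 \<in> carrier_mat l n" "v2 \<in> carrier_mat l n" "v3 \<in> carrier_mat l n"
     "d1 \<in> carrier_mat l n" "d2 \<in> carrier_mat l n" "d3 \<in> carrier_mat l n"
     "v1' \<in> carrier_mat l n" "v2' \<in> carrier_mat l n" "v3' \<in> carrier_mat l n"
     "d1' \<in> carrier_mat l n" "d2' \<in> carrier_mat l n" "d3' \<in> carrier_mat l n" unfolding BR_def by auto
  from assms have r1: "transpose_mat E * (E * v1 * M - Yh) * transpose_mat M + rho \<cdot>\<^sub>m d1 = 0\<^sub>m l n"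
    and r1': "transpose_mat E * (E * v1' * M - Yh) * transpose_mat M + rho \<cdot>\<^sub>m d1' = 0\<^sub>m l n"
    and r2: "lambda \<cdot>\<^sub>m (transpose_mat RE * (RE * v2 - Ym)) + rho \<cdot>\<^sub>m d2 = 0\<^sub>m l n"
    and r2': "lambda \<cdot>\<^sub>m (transpose_mat RE * (RE * v2' - Ym)) + rho \<cdot>\<^sub>m d2' = 0\<^sub>m l n"
    and r3: "v3 = (v3 - d3) * Wt" and r3': "v3' = (v3' - d3') * Wt"
    unfolding BR_def by auto
  define z1 where "z1 = v1 - v1'"
  have z1: "z1 \<in> carrier_mat l n" unfolding z1_def using c by (auto intro: carr)
  have A1: "E * v1 * M - Yh \<in> carrier_mat Lh nh" "E * v1' * M - Yh \<in> carrier_mat Lh nh" using Yh by (auto intro: carr)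
  have T1: "transpose_mat E * (E * v1 * M - Yh) * transpose_mat M \<in> carrier_mat l n"
           "transpose_mat E * (E * v1' * M - Yh) * transpose_mat M \<in> carrier_mat l n" using E M A1 by auto
  have "fip z1 (transpose_mat E * (E * v1 * M - Yh) * transpose_mat M) + rho * fip z1 d1 = 0"
    using arg_cong[OF r1, of "fip z1"] z1 T1 c
    by (simp add: fip_add_right[of _ l n] fip_smult_right[of _ l n] fip_zero_right)
  moreover have "fip z1 (transpose_mat E * (E * v1' * M - Yh) * transpose_mat M) + rho * fip z1 d1' = 0"
    using arg_cong[OF r1', of "fip z1"] z1 T1 c
    by (simp add: fip_add_right[of _ l n] fip_smult_right[of _ l n] fip_zero_right)
  moreover have "fip z1 (transpose_mat E * (E * v1 * M - Yh) * transpose_mat M)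
      - fip z1 (transpose_mat E * (E * v1' * M - Yh) * transpose_mat M) = fip (E * z1 * M) (E * z1 * M)"
  proof -
    have "E * z1 * M = E * v1 * M - E * v1' * M" unfolding z1_def using linmap_minus[OF linEM c(1) c(7)] .
    also have "\<dots> = (E * v1 * M - Yh) - (E * v1' * M - Yh)" using E M c Yh by (intro eq_matI) auto
    finally have e: "E * z1 * M = (E * v1 * M - Yh) - (E * v1' * M - Yh)" .
    show ?thesis unfolding adj1[OF z1 A1(1)] adj1[OF z1 A1(2)] using A1 E M z1
      by (subst (2) e, subst fip_minus_right[of _ Lh nh]) auto
  qed
  ultimately have b1: "rho * fip z1 (d1 - d1') = - fip (E * z1 * M) (E * z1 * M)"
    using c z1 by (simp add: fip_minus_right[of _ l n] algebra_simps)
  have q1: "fip z1 (d1 - d1') \<le> 0"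
  proof -
    have "rho * fip z1 (d1 - d1') \<le> 0" using b1 fip_nonneg[of "E * z1 * M"] by simp
    then show ?thesis using rho by (simp add: mult_le_0_iff)
  qed
  define z2 where "z2 = v2 - v2'"
  have z2: "z2 \<in> carrier_mat l n" unfolding z2_def using c by (auto intro: carr)
  have A2: "RE * v2 - Ym \<in> carrier_mat Lm n" "RE * v2' - Ym \<in> carrier_mat Lm n" using Ym by (auto intro: carr)
  have T2: "transpose_mat RE * (RE * v2 - Ym) \<in> carrier_mat l n"
           "transpose_mat RE * (RE * v2' - Ym) \<in> carrier_mat l n" using RE A2 by auto
  have "lambda * fip z2 (transpose_mat RE * (RE * v2 - Ym)) + rho * fip z2 d2 = 0"
    using arg_cong[OF r2, of "fip z2"] z2 T2 c
    by (simp add: fip_add_right[of _ l n] fip_smult_right[of _ l n] fip_zero_right)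
  moreover have "lambda * fip z2 (transpose_mat RE * (RE * v2' - Ym)) + rho * fip z2 d2' = 0"
    using arg_cong[OF r2', of "fip z2"] z2 T2 c
    by (simp add: fip_add_right[of _ l n] fip_smult_right[of _ l n] fip_zero_right)
  moreover have "fip z2 (transpose_mat RE * (RE * v2 - Ym))
      - fip z2 (transpose_mat RE * (RE * v2' - Ym)) = fip (RE * z2) (RE * z2)"
  proof -
    have "RE * z2 = RE * v2 - RE * v2'" unfolding z2_def using linmap_minus[OF linmap_left[OF RE] c(2) c(8)] .
    also have "\<dots> = (RE * v2 - Ym) - (RE * v2' - Ym)" using RE c Ym by (intro eq_matI) auto
    finally have e: "RE * z2 = (RE * v2 - Ym) - (RE * v2' - Ym)" .
    show ?thesis unfolding adj2[OF z2 A2(1)] adj2[OF z2 A2(2)] using A2 RE z2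
      by (subst (2) e, subst fip_minus_right[of _ Lm n]) auto
  qed
  ultimately have b2: "rho * fip z2 (d2 - d2') = - lambda * fip (RE * z2) (RE * z2)"
    using c z2 by (simp add: fip_minus_right[of _ l n] algebra_simps)
  have q2: "fip z2 (d2 - d2') \<le> 0"
  proof -
    have "rho * fip z2 (d2 - d2') \<le> 0" using b2 fip_nonneg[of "RE * z2"] lam by (simp add: mult_nonneg_nonneg)
    then show ?thesis using rho by (simp add: mult_le_0_iff)
  qed
  define y where "y = (v3 - d3) - (v3' - d3')"
  have y: "y \<in> carrier_mat l n" unfolding y_def using c by (auto intro: carr)
  have e3: "v3 - v3' = y * Wt"
  proof -
    have "y * Wt = (v3 - d3) * Wt - (v3' - d3') * Wt"
      unfolding y_def by (rule linmap_minus[OF linmap_right[OF Wt]]) (use c in \<open>auto intro: carr\<close>)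
    then show ?thesis using r3 r3' by simp
  qed
  have e3': "d3 - d3' = y * Wt - y"
  proof -
    have "d3 - d3' = (v3 - v3') - y" unfolding y_def using c by (intro eq_matI) auto
    then show ?thesis using e3 by simp
  qed
  have yW: "y * Wt \<in> carrier_mat l n" using y Wt by auto
  have q3: "fip (v3 - v3') (d3 - d3') \<le> 0"
  proof -
    have "fip (y * Wt) y = fip y (y * Wt)" using fip_comm[OF yW y] .
    then show ?thesis unfolding e3 e3' using W1 y yW by (simp add: fip_minus_right[of _ l n])
  qed
  show ?thesis using q1 q2 q3 unfolding z1_def z2_def by simp
qed

end

context admm begin

lemma dims[simp]: "dim_row (V1 k) = l" "dim_col (V1 k) = n" "dim_row (V2 k) = l" "dim_col (V2 k) = n"
  "dim_row (V3 k) = l" "dim_col (V3 k) = n" "dim_row (D1 k) = l" "dim_col (D1 k) = n"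
  "dim_row (D2 k) = l" "dim_col (D2 k) = n" "dim_row (D3 k) = l" "dim_col (D3 k) = n"
  "dim_row (X (Suc k)) = l" "dim_col (X (Suc k)) = n"
  using cV'(1)[of k] cV'(2)[of k] cV'(3)[of k] cV'(4)[of k] cV'(5)[of k] cV'(6)[of k] cV'(7)[of k]
  by auto

definition ee :: "real mat \<Rightarrow> real mat \<Rightarrow> real mat \<Rightarrow> real mat \<Rightarrow> real mat \<Rightarrow> real mat \<Rightarrow> nat \<Rightarrow> real" where
  "ee v1s v2s v3s d1s d2s d3s k =
     fip (V1 (Suc k) - D1 (Suc k) - (v1s - d1s)) (V1 (Suc k) - D1 (Suc k) - (v1s - d1s)) +
     fip (V2 (Suc k) - D2 (Suc k) - (v2s - d2s)) (V2 (Suc k) - D2 (Suc k) - (v2s - d2s)) +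
     fip (V3 (Suc k) - D3 (Suc k) - (v3s - d3s)) (V3 (Suc k) - D3 (Suc k) - (v3s - d3s))"

definition phi :: "real mat \<Rightarrow> real mat \<Rightarrow> real mat \<Rightarrow> real mat \<Rightarrow> real mat \<Rightarrow> real mat \<Rightarrow> nat \<Rightarrow> real" where
  "phi v1s v2s v3s d1s d2s d3s k =
     fip (V1 (Suc k) - v1s) (V1 (Suc k) - v1s) + fip (D1 (Suc k) - d1s) (D1 (Suc k) - d1s) +
     fip (V2 (Suc k) - v2s) (V2 (Suc k) - v2s) + fip (D2 (Suc k) - d2s) (D2 (Suc k) - d2s) +
     fip (V3 (Suc k) - v3s) (V3 (Suc k) - v3s) + fip (D3 (Suc k) - d3s) (D3 (Suc k) - d3s)"

definition dw :: "nat \<Rightarrow> real" where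
  "dw k =
     fip ((V1 (Suc (Suc k)) - D1 (Suc (Suc k))) - (V1 (Suc k) - D1 (Suc k))) ((V1 (Suc (Suc k)) - D1 (Suc (Suc k))) - (V1 (Suc k) - D1 (Suc k))) +
     fip ((V2 (Suc (Suc k)) - D2 (Suc (Suc k))) - (V2 (Suc k) - D2 (Suc k))) ((V2 (Suc (Suc k)) - D2 (Suc (Suc k))) - (V2 (Suc k) - D2 (Suc k))) +
     fip ((V3 (Suc (Suc k)) - D3 (Suc (Suc k))) - (V3 (Suc k) - D3 (Suc k))) ((V3 (Suc (Suc k)) - D3 (Suc (Suc k))) - (V3 (Suc k) - D3 (Suc k)))"

lemma saddle_carrier: assumes "saddle xs v1s v2s v3s d1s d2s d3s"
  shows "xs \<in> carrier_mat l n" "v1s \<in> carrier_mat l n" "v2s \<in> carrier_mat l n" "v3s \<in> carrier_mat l n"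
    "d1s \<in> carrier_mat l n" "d2s \<in> carrier_mat l n" "d3s \<in> carrier_mat l n"
  using assms unfolding saddle_def BR_def by auto

lemma phi_le_ee: assumes S: "saddle xs v1s v2s v3s d1s d2s d3s"
  shows "phi v1s v2s v3s d1s d2s d3s k \<le> ee v1s v2s v3s d1s d2s d3s k"
proof -
  note sc = saddle_carrier[OF S]
  have H1: "fip (V1 (Suc k) - v1s) (D1 (Suc k) - d1s) + fip (V2 (Suc k) - v2s) (D2 (Suc k) - d2s)
      + fip (V3 (Suc k) - v3s) (D3 (Suc k) - d3s) \<le> 0"
    by (rule mono[OF BR_iter]) (use S in \<open>simp add: saddle_def\<close>)
  have "V1 (Suc k) - D1 (Suc k) - (v1s - d1s) = (V1 (Suc k) - v1s) - (D1 (Suc k) - d1s)"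
       "V2 (Suc k) - D2 (Suc k) - (v2s - d2s) = (V2 (Suc k) - v2s) - (D2 (Suc k) - d2s)"
       "V3 (Suc k) - D3 (Suc k) - (v3s - d3s) = (V3 (Suc k) - v3s) - (D3 (Suc k) - d3s)"
    using sc cV' by (auto intro!: eq_matI)
  then show ?thesis unfolding phi_def ee_def
    using core_mono[OF _ _ _ _ _ _ H1, of l n] sc cV' by (auto simp: minus_carrier_mat algebra_simps)
qed

lemma fejer: assumes S: "saddle xs v1s v2s v3s d1s d2s d3s"
  shows "ee v1s v2s v3s d1s d2s d3s (Suc k) + dw k \<le> ee v1s v2s v3s d1s d2s d3s k"
proof -
  note sc = saddle_carrier[OF S]
  have s1: "v1s = xs * B" and s2: "v2s = xs" and s3: "v3s = xs" and sG: "d1s * transpose_mat B + d2s + d3s = 0\<^sub>m l n"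
    using S unfolding saddle_def by auto
  define X2 where "X2 = X (Suc (Suc k))"
  have X2: "X2 \<in> carrier_mat l n" unfolding X2_def using cV' by simp
  have X2B: "X2 * B \<in> carrier_mat l n" using X2 B by simp
  have xsB: "xs * B \<in> carrier_mat l n" using sc B by simp
  define a1 where "a1 = V1 (Suc k) - v1s"
  define a2 where "a2 = V2 (Suc k) - v2s"
  define a3 where "a3 = V3 (Suc k) - v3s"
  define b1 where "b1 = D1 (Suc k) - d1s"
  define b2 where "b2 = D2 (Suc k) - d2s"
  define b3 where "b3 = D3 (Suc k) - d3s"
  define u1 where "u1 = X2 * B - xs * B"
  define u2 where "u2 = X2 - xs"
  define u3 where "u3 = X2 - xs"
  have c: "a1 \<in> carrier_mat l n" "a2 \<in> carrier_mat l n" "a3 \<in> carrier_mat l n"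
    "b1 \<in> carrier_mat l n" "b2 \<in> carrier_mat l n" "b3 \<in> carrier_mat l n"
    "u1 \<in> carrier_mat l n" "u2 \<in> carrier_mat l n" "u3 \<in> carrier_mat l n"
    unfolding a1_def a2_def a3_def b1_def b2_def b3_def u1_def u2_def u3_def
    using sc xsB by (auto intro: carr)
  have H1: "fip a1 b1 + fip a2 b2 + fip a3 b3 \<le> 0"
    unfolding a1_def a2_def a3_def b1_def b2_def b3_def
    by (rule mono[OF BR_iter]) (use S in \<open>simp add: saddle_def\<close>)
  have D1u: "D1 (Suc (Suc k)) = D1 (Suc k) - (X2 * B - V1 (Suc (Suc k)))" using Dupd1 unfolding X2_def by blast
  have D2u: "D2 (Suc (Suc k)) = D2 (Suc k) - (X2 - V2 (Suc (Suc k)))" using Dupd2 unfolding X2_def by blast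
  have D3u: "D3 (Suc (Suc k)) = D3 (Suc k) - (X2 - V3 (Suc (Suc k)))" using Dupd3 unfolding X2_def by blast
  have I1: "V1 (Suc (Suc k)) - D1 (Suc (Suc k)) - (v1s - d1s) = u1 - b1"
    "V2 (Suc (Suc k)) - D2 (Suc (Suc k)) - (v2s - d2s) = u2 - b2"
    "V3 (Suc (Suc k)) - D3 (Suc (Suc k)) - (v3s - d3s) = u3 - b3"
    unfolding D1u D2u D3u u1_def u2_def u3_def b1_def b2_def b3_def s1 s2 s3
    using cV' sc X2 X2B xsB by (auto intro!: eq_matI)
  have I2: "(V1 (Suc (Suc k)) - D1 (Suc (Suc k))) - (V1 (Suc k) - D1 (Suc k)) = u1 - a1"
    "(V2 (Suc (Suc k)) - D2 (Suc (Suc k))) - (V2 (Suc k) - D2 (Suc k)) = u2 - a2"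
    "(V3 (Suc (Suc k)) - D3 (Suc (Suc k))) - (V3 (Suc k) - D3 (Suc k)) = u3 - a3"
    unfolding D1u D2u D3u u1_def u2_def u3_def a1_def a2_def a3_def s1 s2 s3
    using cV' sc X2 X2B xsB by (auto intro!: eq_matI)
  have I3: "V1 (Suc k) - D1 (Suc k) - (v1s - d1s) = a1 - b1"
    "V2 (Suc k) - D2 (Suc k) - (v2s - d2s) = a2 - b2"
    "V3 (Suc k) - D3 (Suc k) - (v3s - d3s) = a3 - b3"
    unfolding a1_def a2_def a3_def b1_def b2_def b3_def
    using cV' sc by (auto intro!: eq_matI)
  define g1 where "g1 = X2 * B - V1 (Suc k) - D1 (Suc k)"
  define g2 where "g2 = X2 - V2 (Suc k) - D2 (Suc k)"
  define g3 where "g3 = X2 - V3 (Suc k) - D3 (Suc k)"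
  have gc: "g1 \<in> carrier_mat l n" "g2 \<in> carrier_mat l n" "g3 \<in> carrier_mat l n"
    unfolding g1_def g2_def g3_def using cV' by (auto intro: carr)
  have G0: "g1 * transpose_mat B + g2 + g3 = 0\<^sub>m l n" using XO unfolding g1_def g2_def g3_def X2_def by blast
  have R: "u1 - a1 - b1 = g1 + d1s" "u2 - a2 - b2 = g2 + d2s" "u3 - a3 - b3 = g3 + d3s"
    unfolding u1_def u2_def u3_def a1_def a2_def a3_def b1_def b2_def b3_def g1_def g2_def g3_def s1 s2 s3
    using cV' sc X2 X2B xsB by (auto intro!: eq_matI)
  define dx where "dx = X2 - xs"
  have dx: "dx \<in> carrier_mat l n" unfolding dx_def using sc by (auto intro: carr)
  have u1e: "u1 = dx * B" unfolding u1_def dx_def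
    by (rule linmap_minus[OF linmap_right[OF B], symmetric]) (use X2 sc in auto)
  have Tc: "(g1 + d1s) * transpose_mat B \<in> carrier_mat l n" using B sc by auto
  have sum0: "(g1 + d1s) * transpose_mat B + (g2 + d2s) + (g3 + d3s) = 0\<^sub>m l n"
  proof -
    have "(g1 + d1s) * transpose_mat B = g1 * transpose_mat B + d1s * transpose_mat B"
      using gc sc B by (simp add: add_mult_distrib_mat[of _ l n])
    then have "(g1 + d1s) * transpose_mat B + (g2 + d2s) + (g3 + d3s)
        = (g1 * transpose_mat B + g2 + g3) + (d1s * transpose_mat B + d2s + d3s)"
      using gc sc B by (auto intro!: eq_matI)
    then show ?thesis using G0 sG by simp
  qed
  have H2: "fip u1 (u1 - a1 - b1) + fip u2 (u2 - a2 - b2) + fip u3 (u3 - a3 - b3) = 0"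
  proof -
    have "fip u1 (u1 - a1 - b1) = fip dx ((g1 + d1s) * transpose_mat B)"
      by (subst R, subst u1e, rule fip_mult_right[of _ n n _ l]) (use B dx gc sc in auto)
    moreover have "fip u2 (u2 - a2 - b2) = fip dx (g2 + d2s)" "fip u3 (u3 - a3 - b3) = fip dx (g3 + d3s)"
      by (subst R, simp add: u2_def dx_def, subst R, simp add: u3_def dx_def)
    moreover have "fip dx ((g1 + d1s) * transpose_mat B) + fip dx (g2 + d2s) + fip dx (g3 + d3s)
        = fip dx ((g1 + d1s) * transpose_mat B + (g2 + d2s) + (g3 + d3s))"
      using Tc gc sc dx by (simp add: fip_add_right[of _ l n])
    ultimately show ?thesis using sum0 dx by (simp add: fip_zero_right)
  qed
  from core_fejer[OF c H1 H2]
  show ?thesis unfolding ee_def dw_def I1 I2 I3 by simp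
qed

lemma dw_mono: "fip (V1 (Suc (Suc k)) - V1 (Suc k)) (V1 (Suc (Suc k)) - V1 (Suc k))
   + fip (D1 (Suc (Suc k)) - D1 (Suc k)) (D1 (Suc (Suc k)) - D1 (Suc k))
   + fip (V2 (Suc (Suc k)) - V2 (Suc k)) (V2 (Suc (Suc k)) - V2 (Suc k))
   + fip (D2 (Suc (Suc k)) - D2 (Suc k)) (D2 (Suc (Suc k)) - D2 (Suc k))
   + fip (V3 (Suc (Suc k)) - V3 (Suc k)) (V3 (Suc (Suc k)) - V3 (Suc k))
   + fip (D3 (Suc (Suc k)) - D3 (Suc k)) (D3 (Suc (Suc k)) - D3 (Suc k)) \<le> dw k"
proof -
  have H1: "fip (V1 (Suc (Suc k)) - V1 (Suc k)) (D1 (Suc (Suc k)) - D1 (Suc k))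
      + fip (V2 (Suc (Suc k)) - V2 (Suc k)) (D2 (Suc (Suc k)) - D2 (Suc k))
      + fip (V3 (Suc (Suc k)) - V3 (Suc k)) (D3 (Suc (Suc k)) - D3 (Suc k)) \<le> 0"
    by (rule mono[OF BR_iter BR_iter])
  have "(V1 (Suc (Suc k)) - D1 (Suc (Suc k))) - (V1 (Suc k) - D1 (Suc k)) = (V1 (Suc (Suc k)) - V1 (Suc k)) - (D1 (Suc (Suc k)) - D1 (Suc k))"
       "(V2 (Suc (Suc k)) - D2 (Suc (Suc k))) - (V2 (Suc k) - D2 (Suc k)) = (V2 (Suc (Suc k)) - V2 (Suc k)) - (D2 (Suc (Suc k)) - D2 (Suc k))"
       "(V3 (Suc (Suc k)) - D3 (Suc (Suc k))) - (V3 (Suc k) - D3 (Suc k)) = (V3 (Suc (Suc k)) - V3 (Suc k)) - (D3 (Suc (Suc k)) - D3 (Suc k))"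
    using cV' by (auto intro!: eq_matI)
  then show ?thesis unfolding dw_def
    using core_mono[OF _ _ _ _ _ _ H1, of l n] cV' by (auto simp: minus_carrier_mat algebra_simps)
qed

end

context admm begin

definition LL :: "real mat \<Rightarrow> real mat" where
  "LL Y = transpose_mat E * (E * (Y * Wt * B) * M) * transpose_mat M * transpose_mat B
     + lambda \<cdot>\<^sub>m (transpose_mat RE * (RE * (Y * Wt))) + rho \<cdot>\<^sub>m (Y - Y * Wt)"

lemma LL_lin: "linmap LL l n l n"
proof -
  have l1: "linmap (\<lambda>Y. Y * Wt * B) l n l n" by (rule linmap_comp[OF linmap_right[OF Wt] linmap_right[OF B]])
  have l2: "linmap (\<lambda>Y. E * (Y * Wt * B)) l n Lh n" by (rule linmap_comp[OF l1 linmap_left[OF E]])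
  have l3: "linmap (\<lambda>Y. E * (Y * Wt * B) * M) l n Lh nh" by (rule linmap_comp[OF l2 linmap_right[OF M]])
  have l4: "linmap (\<lambda>Y. transpose_mat E * (E * (Y * Wt * B) * M)) l n l nh"
    by (rule linmap_comp[OF l3 linmap_left]) (use E in simp)
  have l5: "linmap (\<lambda>Y. transpose_mat E * (E * (Y * Wt * B) * M) * transpose_mat M) l n l n"
    by (rule linmap_comp[OF l4 linmap_right]) (use M in simp)
  have l6: "linmap (\<lambda>Y. transpose_mat E * (E * (Y * Wt * B) * M) * transpose_mat M * transpose_mat B) l n l n"
    by (rule linmap_comp[OF l5 linmap_right]) (use B in simp)
  have m1: "linmap (\<lambda>Y. RE * (Y * Wt)) l n Lm n" by (rule linmap_comp[OF linmap_right[OF Wt] linmap_left[OF RE]])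
  have m2: "linmap (\<lambda>Y. transpose_mat RE * (RE * (Y * Wt))) l n l n"
    by (rule linmap_comp[OF m1 linmap_left]) (use RE in simp)
  have m3: "linmap (\<lambda>Y. lambda \<cdot>\<^sub>m (transpose_mat RE * (RE * (Y * Wt)))) l n l n" by (rule linmap_smult[OF m2])
  have n1: "linmap (\<lambda>Y. Y - Y * Wt) l n l n" by (rule linmap_sub[OF linmap_id linmap_right[OF Wt]])
  have n2: "linmap (\<lambda>Y. rho \<cdot>\<^sub>m (Y - Y * Wt)) l n l n" by (rule linmap_smult[OF n1])
  have "linmap (\<lambda>Y. transpose_mat E * (E * (Y * Wt * B) * M) * transpose_mat M * transpose_mat B
     + lambda \<cdot>\<^sub>m (transpose_mat RE * (RE * (Y * Wt))) + rho \<cdot>\<^sub>m (Y - Y * Wt)) l n l n"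
    by (rule linmap_add[OF linmap_add[OF l6 m3] n2])
  then show ?thesis unfolding LL_def[abs_def] .
qed

lemma LL_inj: assumes Y: "Y \<in> carrier_mat l n" and z: "LL Y = 0\<^sub>m l n" shows "Y = 0\<^sub>m l n"
proof -
  define Z where "Z = Y * Wt"
  have Zc: "Z \<in> carrier_mat l n" unfolding Z_def using Y Wt by simp
  define A where "A = E * (Z * B) * M"
  have Ac: "A \<in> carrier_mat Lh nh" unfolding A_def using Zc E B M by (meson mult_carrier_mat)
  define Q where "Q = RE * Z"
  have Qc: "Q \<in> carrier_mat Lm n" unfolding Q_def using Zc RE by simp
  have LLe: "LL Y = transpose_mat E * A * transpose_mat M * transpose_mat B + lambda \<cdot>\<^sub>m (transpose_mat RE * Q) + rho \<cdot>\<^sub>m (Y - Z)"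
    unfolding LL_def A_def Q_def Z_def ..
  have T1c: "transpose_mat E * A * transpose_mat M \<in> carrier_mat l n" using E M Ac by (meson mult_carrier_mat transpose_carrier_mat)
  have f1: "fip (transpose_mat E * A * transpose_mat M * transpose_mat B) Z = fip A A"
  proof -
    have "fip (transpose_mat E * A * transpose_mat M * transpose_mat B) Z = fip (transpose_mat E * A * transpose_mat M) (Z * transpose_mat (transpose_mat B))"
      by (rule fip_mult_right[of _ n n _ l]) (use T1c B Zc in auto)
    also have "\<dots> = fip (Z * B) (transpose_mat E * A * transpose_mat M)"
      using fip_comm[of "transpose_mat E * A * transpose_mat M" l n "Z * B"] T1c Zc B by simp
    also have "\<dots> = fip A A"
    proof -
      have "Z * B \<in> carrier_mat l n" using Zc B by simp
      from adj1[OF this Ac] show ?thesis unfolding A_def .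
    qed
    finally show ?thesis .
  qed
  have f2: "fip (transpose_mat RE * Q) Z = fip Q Q"
    using fip_comm[of "transpose_mat RE * Q" l n Z] adj2[OF Zc Qc] RE Qc Zc unfolding Q_def by simp
  have f3: "fip (Y - Z) Z = fip Y Z - fip Z Z" using Y Zc by (simp add: fip_minus_left[of _ l n])
  have W1': "fip Z Z \<le> fip Y Z" using W1 Y unfolding Z_def by blast
  have "fip (LL Y) Z = fip A A + lambda * fip Q Q + rho * (fip Y Z - fip Z Z)"
  proof -
    define T1 where "T1 = transpose_mat E * A * transpose_mat M * transpose_mat B"
    define T2 where "T2 = transpose_mat RE * Q"
    have c1: "T1 \<in> carrier_mat l n" unfolding T1_def using T1c B by (meson mult_carrier_mat transpose_carrier_mat)
    have c2: "T2 \<in> carrier_mat l n" unfolding T2_def using RE Qc by (meson mult_carrier_mat transpose_carrier_mat)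
    have c3: "Y - Z \<in> carrier_mat l n" using Zc by (rule minus_carrier_mat)
    have "fip (LL Y) Z = fip (T1 + lambda \<cdot>\<^sub>m T2) Z + fip (rho \<cdot>\<^sub>m (Y - Z)) Z"
      unfolding LLe T1_def[symmetric] T2_def[symmetric]
      by (rule fip_add_left[of _ l n]) (use c1 c2 c3 Zc in auto)
    also have "fip (T1 + lambda \<cdot>\<^sub>m T2) Z = fip T1 Z + fip (lambda \<cdot>\<^sub>m T2) Z"
      by (rule fip_add_left[of _ l n]) (use c1 c2 Zc in auto)
    also have "fip (lambda \<cdot>\<^sub>m T2) Z = lambda * fip T2 Z" by (rule fip_smult_left[OF c2 Zc])
    also have "fip (rho \<cdot>\<^sub>m (Y - Z)) Z = rho * fip (Y - Z) Z" by (rule fip_smult_left[OF c3 Zc])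
    finally show ?thesis unfolding T1_def T2_def f1 f2 f3 .
  qed
  moreover have "fip (LL Y) Z = 0" using z Zc by (simp add: fip_zero_left)
  ultimately have "fip A A + lambda * fip Q Q + rho * (fip Y Z - fip Z Z) = 0" by simp
  moreover have "0 \<le> fip A A" "0 \<le> fip Q Q" by (rule fip_nonneg)+
  moreover have "0 \<le> rho * (fip Y Z - fip Z Z)" using rho W1' by simp
  ultimately have "fip A A = 0" "lambda * fip Q Q = 0" using lam
    by (smt (verit) mult_nonneg_nonneg)+
  then have A0: "A = 0\<^sub>m Lh nh" and Q0: "Q = 0\<^sub>m Lm n" using fip_zero_iff[OF Ac] fip_zero_iff[OF Qc] lam by auto
  have "LL Y = rho \<cdot>\<^sub>m (Y - Z)"
    unfolding LLe A0 Q0 using E M B RE Y Zc by (intro eq_matI) auto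
  then have eq: "rho \<cdot>\<^sub>m (Y - Z) = 0\<^sub>m l n" using z by simp
  have "Z = Y"
  proof (rule eq_matI)
    fix i j assume i: "i < dim_row Y" and j: "j < dim_col Y"
    have "(rho \<cdot>\<^sub>m (Y - Z)) $$ (i,j) = 0\<^sub>m l n $$ (i,j)" using eq by simp
    then show "Z $$ (i,j) = Y $$ (i,j)" using i j Y Zc rho by simp
  qed (use Y Zc in auto)
  then have "Y * Wt = Y" unfolding Z_def .
  then show ?thesis using W2 Y by blast
qed

end

context admm begin

lemma saddle_exists: "\<exists>xs v1s v2s v3s d1s d2s d3s. saddle xs v1s v2s v3s d1s d2s d3s"
proof -
  define g where "g A = transpose_mat E * A * transpose_mat M * transpose_mat B" for A
  have glin: "linmap g Lh nh l n"
  proof -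
    have "linmap (\<lambda>A. transpose_mat E * A * transpose_mat M * transpose_mat B) Lh nh l n"
      by (rule linmap_comp[OF linmap_comp[OF linmap_left linmap_right] linmap_right]) (use E M B in auto)
    then show ?thesis unfolding g_def[abs_def] .
  qed
  define c0 where "c0 = g Yh + lambda \<cdot>\<^sub>m (transpose_mat RE * Ym)"
  have c0c: "c0 \<in> carrier_mat l n" unfolding c0_def using RE Ym by (auto intro: carr)
  obtain Y where Y: "Y \<in> carrier_mat l n" "LL Y = c0"
    using lin_surj[OF LL_lin _ c0c] LL_inj by blast
  define xs where "xs = Y * Wt"
  have xc: "xs \<in> carrier_mat l n" unfolding xs_def using Y Wt by simp
  have xBc: "xs * B \<in> carrier_mat l n" using xc B by simp
  have EM: "E * (xs * B) * M \<in> carrier_mat Lh nh" using E xBc M by (meson mult_carrier_mat)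
  define T1 where "T1 = transpose_mat E * (E * (xs * B) * M - Yh) * transpose_mat M"
  define T2 where "T2 = lambda \<cdot>\<^sub>m (transpose_mat RE * (RE * xs - Ym))"
  have T1c: "T1 \<in> carrier_mat l n" unfolding T1_def using E M Yh
    by (meson mult_carrier_mat transpose_carrier_mat minus_carrier_mat)
  have T2c: "T2 \<in> carrier_mat l n" unfolding T2_def using RE Ym
    by (meson mult_carrier_mat transpose_carrier_mat minus_carrier_mat smult_carrier_mat)
  define d1s where "d1s = (-1 / rho) \<cdot>\<^sub>m T1"
  define d2s where "d2s = (-1 / rho) \<cdot>\<^sub>m T2"
  define d3s where "d3s = xs - Y"
  have dc: "d1s \<in> carrier_mat l n" "d2s \<in> carrier_mat l n" "d3s \<in> carrier_mat l n"
    unfolding d1s_def d2s_def d3s_def using T1c T2c Y by (auto intro: carr)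
  have br1: "T1 + rho \<cdot>\<^sub>m d1s = 0\<^sub>m l n" unfolding d1s_def using T1c rho by (intro eq_matI) auto
  have br2: "T2 + rho \<cdot>\<^sub>m d2s = 0\<^sub>m l n" unfolding d2s_def using T2c rho by (intro eq_matI) auto
  have xd: "xs - d3s = Y" unfolding d3s_def using xc Y by (intro eq_matI) auto
  have br3: "xs = (xs - d3s) * Wt" by (subst xd) (simp add: xs_def)
  have BRs: "BR (xs * B) xs xs d1s d2s d3s"
    unfolding BR_def using xc xBc dc br1 br2 br3 unfolding T1_def T2_def by auto
  define P1 where "P1 = g (E * (xs * B) * M)"
  define P2 where "P2 = g Yh"
  define Q1 where "Q1 = transpose_mat RE * (RE * xs)"
  define Q2 where "Q2 = transpose_mat RE * Ym"
  have Pc: "P1 \<in> carrier_mat l n" "P2 \<in> carrier_mat l n" "Q1 \<in> carrier_mat l n" "Q2 \<in> carrier_mat l n"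
    unfolding P1_def P2_def Q1_def Q2_def using linmapD(1)[OF glin EM] linmapD(1)[OF glin Yh] RE xc Ym
    by (auto intro: carr)
  have h1: "d1s * transpose_mat B = (-1 / rho) \<cdot>\<^sub>m (P1 - P2)"
  proof -
    have "d1s * transpose_mat B = (-1 / rho) \<cdot>\<^sub>m (T1 * transpose_mat B)"
      unfolding d1s_def by (rule mult_smult_assoc_mat[of _ l n]) (use T1c B in auto)
    also have "T1 * transpose_mat B = g (E * (xs * B) * M - Yh)" unfolding T1_def g_def ..
    also have "\<dots> = P1 - P2" unfolding P1_def P2_def by (rule linmap_minus[OF glin EM Yh])
    finally show ?thesis .
  qed
  have h2: "d2s = (-1 / rho) \<cdot>\<^sub>m (lambda \<cdot>\<^sub>m (Q1 - Q2))"
  proof -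
    have "transpose_mat RE * (RE * xs - Ym) = Q1 - Q2" unfolding Q1_def Q2_def
      by (rule mult_minus_distrib_mat[of _ l Lm]) (use RE xc Ym in auto)
    then show ?thesis unfolding d2s_def T2_def by simp
  qed
  have hL: "LL Y = P1 + lambda \<cdot>\<^sub>m Q1 + rho \<cdot>\<^sub>m (Y - xs)"
    unfolding LL_def P1_def Q1_def g_def xs_def ..
  have hc: "c0 = P2 + lambda \<cdot>\<^sub>m Q2" unfolding c0_def P2_def Q2_def ..
  have G0: "d1s * transpose_mat B + d2s + d3s = 0\<^sub>m l n"
  proof (rule eq_matI)
    fix i j assume "i < dim_row (0\<^sub>m l n)" "j < dim_col (0\<^sub>m l n)"
    then have i: "i < l" and j: "j < n" by auto
    have "(LL Y) $$ (i,j) = c0 $$ (i,j)" using Y by simp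
    then have e: "P1 $$ (i,j) + lambda * Q1 $$ (i,j) + rho * (Y $$ (i,j) - xs $$ (i,j)) = P2 $$ (i,j) + lambda * Q2 $$ (i,j)"
      unfolding hL hc using Pc Y xc i j by simp
    have "(d1s * transpose_mat B + d2s + d3s) $$ (i,j)
        = (-1 / rho) * (P1 $$ (i,j) - P2 $$ (i,j)) + (-1 / rho) * (lambda * (Q1 $$ (i,j) - Q2 $$ (i,j))) + (xs $$ (i,j) - Y $$ (i,j))"
      unfolding h1 h2 d3s_def using Pc Y xc i j by simp
    also have "\<dots> = 0" using arg_cong[OF e, of "\<lambda>x. rho * x"] rho by (simp add: field_simps)
    finally show "(d1s * transpose_mat B + d2s + d3s) $$ (i,j) = 0\<^sub>m l n $$ (i,j)" using i j by simp
  qed (use dc B in auto)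
  have "saddle xs (xs * B) xs xs d1s d2s d3s" unfolding saddle_def using xc BRs G0 by auto
  then show ?thesis by blast
qed

end

lemma fip_swap: assumes "A \<in> carrier_mat r c" "B \<in> carrier_mat r c"
  shows "fip (A - B) (A - B) = fip (B - A) (B - A)"
  using assms by (simp add: fip_sq_minus[of _ r c] fip_comm[of A r c B])

lemma mconv_of_fip0: assumes "(\<lambda>k. fip (S k) (S k)) \<longlonglongrightarrow> 0" "\<forall>k. S k \<in> carrier_mat r c"
  shows "mconv S (0\<^sub>m r c) r c"
proof (rule mconv_of_fip)
  have "S k - 0\<^sub>m r c = S k" for k using assms(2)[rule_format, of k] by (intro eq_matI) auto
  then show "(\<lambda>k. fip (S k - 0\<^sub>m r c) (S k - 0\<^sub>m r c)) \<longlonglongrightarrow> 0" using assms(1) by simp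
qed (use assms in auto)

definition lm :: "(nat \<Rightarrow> real mat) \<Rightarrow> nat \<Rightarrow> nat \<Rightarrow> real mat" where
  "lm S r c = mat r c (\<lambda>(i,j). lim (\<lambda>k. S k $$ (i,j)))"

lemma lm_mconv: assumes "\<forall>i<r. \<forall>j<c. convergent (\<lambda>k. S k $$ (i,j))"
  shows "mconv S (lm S r c) r c" "lm S r c \<in> carrier_mat r c"
  using assms unfolding mconv_def lm_def by (auto simp: convergent_LIMSEQ_iff)

lemma sandwich0: fixes f g :: "nat \<Rightarrow> real" assumes "\<forall>k. 0 \<le> f k" "\<forall>k. f k \<le> g k" "g \<longlonglongrightarrow> 0"
  shows "f \<longlonglongrightarrow> 0"
  by (rule tendsto_sandwich[of "\<lambda>_. 0" f sequentially g]) (use assms in auto)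

context admm begin

lemma ee_nonneg: "0 \<le> ee v1s v2s v3s d1s d2s d3s k"
  unfolding ee_def by (intro add_nonneg_nonneg fip_nonneg)

lemma dw_nonneg: "0 \<le> dw k"
  unfolding dw_def by (intro add_nonneg_nonneg fip_nonneg)

lemma dw_zero: "dw \<longlonglongrightarrow> 0"
proof -
  obtain xs v1s v2s v3s d1s d2s d3s where S: "saddle xs v1s v2s v3s d1s d2s d3s"
    using saddle_exists by blast
  let ?e = "ee v1s v2s v3s d1s d2s d3s"
  have "?e K + (\<Sum>k<K. dw k) \<le> ?e 0" for K
  proof (induction K)
    case (Suc K)
    then show ?case using fejer[OF S, of K] by simp
  qed simp
  then have "(\<Sum>k<K. dw k) \<le> ?e 0" for K using ee_nonneg[of v1s v2s v3s d1s d2s d3s K] by smt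
  then have "summable dw" using dw_nonneg by (intro summableI_nonneg_bounded) auto
  then show ?thesis by (rule summable_LIMSEQ_zero)
qed

lemma dV_zero:
  shows "mconv (\<lambda>m. V1 (Suc m) - V1 m) (0\<^sub>m l n) l n" "mconv (\<lambda>m. V2 (Suc m) - V2 m) (0\<^sub>m l n) l n"
    "mconv (\<lambda>m. V3 (Suc m) - V3 m) (0\<^sub>m l n) l n"
    "mconv (\<lambda>m. D1 m - D1 (Suc m)) (0\<^sub>m l n) l n" "mconv (\<lambda>m. D2 m - D2 (Suc m)) (0\<^sub>m l n) l n"
    "mconv (\<lambda>m. D3 m - D3 (Suc m)) (0\<^sub>m l n) l n"
proof -
  let ?f = "\<lambda>S k. fip (S (Suc (Suc k)) - S (Suc k)) (S (Suc (Suc k)) - S (Suc k))"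
  have nn: "0 \<le> ?f S k" for S k by (rule fip_nonneg)
  have le: "?f V1 k \<le> dw k" "?f V2 k \<le> dw k" "?f V3 k \<le> dw k" "?f D1 k \<le> dw k" "?f D2 k \<le> dw k" "?f D3 k \<le> dw k" for k
    using dw_mono[of k] nn[of V1 k] nn[of V2 k] nn[of V3 k] nn[of D1 k] nn[of D2 k] nn[of D3 k] by linarith+
  have z: "?f V1 \<longlonglongrightarrow> 0" "?f V2 \<longlonglongrightarrow> 0" "?f V3 \<longlonglongrightarrow> 0" "?f D1 \<longlonglongrightarrow> 0" "?f D2 \<longlonglongrightarrow> 0" "?f D3 \<longlonglongrightarrow> 0"
    by (rule sandwich0[OF _ _ dw_zero], use nn le in auto)+
  have sw: "?f D k = fip (D (Suc k) - D (Suc (Suc k))) (D (Suc k) - D (Suc (Suc k)))"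
    if "\<forall>k. D k \<in> carrier_mat l n" for D k using fip_swap[of "D (Suc (Suc k))" l n "D (Suc k)"] that by auto
  show "mconv (\<lambda>m. V1 (Suc m) - V1 m) (0\<^sub>m l n) l n"
    by (rule mconv_shift, rule mconv_of_fip0[OF z(1)]) (use cV' in \<open>auto intro: carr\<close>)
  show "mconv (\<lambda>m. V2 (Suc m) - V2 m) (0\<^sub>m l n) l n"
    by (rule mconv_shift, rule mconv_of_fip0[OF z(2)]) (use cV' in \<open>auto intro: carr\<close>)
  show "mconv (\<lambda>m. V3 (Suc m) - V3 m) (0\<^sub>m l n) l n"
    by (rule mconv_shift, rule mconv_of_fip0[OF z(3)]) (use cV' in \<open>auto intro: carr\<close>)
  show "mconv (\<lambda>m. D1 m - D1 (Suc m)) (0\<^sub>m l n) l n"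
    by (rule mconv_shift, rule mconv_of_fip0) (use z(4) sw[of D1] cV' in \<open>auto intro: carr\<close>)
  show "mconv (\<lambda>m. D2 m - D2 (Suc m)) (0\<^sub>m l n) l n"
    by (rule mconv_shift, rule mconv_of_fip0) (use z(5) sw[of D2] cV' in \<open>auto intro: carr\<close>)
  show "mconv (\<lambda>m. D3 m - D3 (Suc m)) (0\<^sub>m l n) l n"
    by (rule mconv_shift, rule mconv_of_fip0) (use z(6) sw[of D3] cV' in \<open>auto intro: carr\<close>)
qed

end

lemma mconv_zero_seq: assumes "mconv S A r c" "\<forall>k. S k = Z" "A \<in> carrier_mat r c" "Z \<in> carrier_mat r c"
  shows "A = Z"
proof -
  have "S = (\<lambda>k. Z)" using assms(2) by auto
  then have "mconv (\<lambda>k. Z) A r c" using assms(1) by simp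
  then show ?thesis using mconv_unique[OF _ mconv_const assms(3,4)] by blast
qed

context admm begin

lemma BR1_closed: assumes m1: "mconv S A l n" and m2: "mconv T Bm l n"
  and Sc: "\<forall>k. S k \<in> carrier_mat l n" and Tc: "\<forall>k. T k \<in> carrier_mat l n"
  and Ac: "A \<in> carrier_mat l n" and Bc: "Bm \<in> carrier_mat l n"
  and z: "\<forall>k. transpose_mat E * (E * S k * M - Yh) * transpose_mat M + rho \<cdot>\<^sub>m T k = 0\<^sub>m l n"
  shows "transpose_mat E * (E * A * M - Yh) * transpose_mat M + rho \<cdot>\<^sub>m Bm = 0\<^sub>m l n"
proof (rule mconv_zero_seq[OF _ z])
  have c1: "\<forall>k. E * S k \<in> carrier_mat Lh n" using Sc E by auto
  have c2: "\<forall>k. E * S k * M \<in> carrier_mat Lh nh" using c1 M mult_carrier_mat by blast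
  have c3: "\<forall>k. E * S k * M - Yh \<in> carrier_mat Lh nh" using Yh by (auto intro: carr)
  have c4: "\<forall>k. transpose_mat E * (E * S k * M - Yh) \<in> carrier_mat l nh" using c3 E mult_carrier_mat transpose_carrier_mat by blast
  have c5: "\<forall>k. transpose_mat E * (E * S k * M - Yh) * transpose_mat M \<in> carrier_mat l n" using c4 M mult_carrier_mat transpose_carrier_mat by blast
  have c6: "\<forall>k. rho \<cdot>\<^sub>m T k \<in> carrier_mat l n" using Tc by auto
  have a1: "E * A \<in> carrier_mat Lh n" using Ac E by auto
  have a2: "E * A * M \<in> carrier_mat Lh nh" using a1 M by auto
  have a3: "E * A * M - Yh \<in> carrier_mat Lh nh" using Yh by (auto intro: carr)
  have a4: "transpose_mat E * (E * A * M - Yh) \<in> carrier_mat l nh" using a3 E by auto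
  have a5: "transpose_mat E * (E * A * M - Yh) * transpose_mat M \<in> carrier_mat l n" using a4 M by auto
  have k1: "mconv (\<lambda>k. E * S k) (E * A) Lh n" by (rule mconv_mult_left[OF m1 Sc Ac E])
  have k2: "mconv (\<lambda>k. E * S k * M) (E * A * M) Lh nh" by (rule mconv_mult_right[OF k1 c1 a1 M])
  have k3: "mconv (\<lambda>k. E * S k * M - Yh) (E * A * M - Yh) Lh nh"
    by (rule mconv_minus[OF k2 mconv_const]) (use Yh in auto)
  have k4: "mconv (\<lambda>k. transpose_mat E * (E * S k * M - Yh)) (transpose_mat E * (E * A * M - Yh)) l nh"
    by (rule mconv_mult_left[OF k3 c3 a3]) (use E in auto)
  have k5: "mconv (\<lambda>k. transpose_mat E * (E * S k * M - Yh) * transpose_mat M) (transpose_mat E * (E * A * M - Yh) * transpose_mat M) l n"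
    by (rule mconv_mult_right[OF k4 c4 a4]) (use M in auto)
  have k6: "mconv (\<lambda>k. rho \<cdot>\<^sub>m T k) (rho \<cdot>\<^sub>m Bm) l n" by (rule mconv_smult[OF m2 Tc Bc])
  show "mconv (\<lambda>k. transpose_mat E * (E * S k * M - Yh) * transpose_mat M + rho \<cdot>\<^sub>m T k)
     (transpose_mat E * (E * A * M - Yh) * transpose_mat M + rho \<cdot>\<^sub>m Bm) l n"
    by (rule mconv_add[OF k5 k6 c6]) (use Bc in auto)
  show "transpose_mat E * (E * A * M - Yh) * transpose_mat M + rho \<cdot>\<^sub>m Bm \<in> carrier_mat l n" using Bc by auto
qed auto

lemma BR2_closed: assumes m1: "mconv S A l n" and m2: "mconv T Bm l n"
  and Sc: "\<forall>k. S k \<in> carrier_mat l n" and Tc: "\<forall>k. T k \<in> carrier_mat l n"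
  and Ac: "A \<in> carrier_mat l n" and Bc: "Bm \<in> carrier_mat l n"
  and z: "\<forall>k. lambda \<cdot>\<^sub>m (transpose_mat RE * (RE * S k - Ym)) + rho \<cdot>\<^sub>m T k = 0\<^sub>m l n"
  shows "lambda \<cdot>\<^sub>m (transpose_mat RE * (RE * A - Ym)) + rho \<cdot>\<^sub>m Bm = 0\<^sub>m l n"
proof (rule mconv_zero_seq[OF _ z])
  have c1: "\<forall>k. RE * S k \<in> carrier_mat Lm n" using Sc RE by auto
  have c3: "\<forall>k. RE * S k - Ym \<in> carrier_mat Lm n" using Ym by (auto intro: carr)
  have c4: "\<forall>k. transpose_mat RE * (RE * S k - Ym) \<in> carrier_mat l n" using c3 RE mult_carrier_mat transpose_carrier_mat by blast
  have c6: "\<forall>k. rho \<cdot>\<^sub>m T k \<in> carrier_mat l n" using Tc by auto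
  have a1: "RE * A \<in> carrier_mat Lm n" using Ac RE by auto
  have a3: "RE * A - Ym \<in> carrier_mat Lm n" using Ym by (auto intro: carr)
  have a4: "transpose_mat RE * (RE * A - Ym) \<in> carrier_mat l n" using a3 RE by auto
  have k1: "mconv (\<lambda>k. RE * S k) (RE * A) Lm n" by (rule mconv_mult_left[OF m1 Sc Ac RE])
  have k3: "mconv (\<lambda>k. RE * S k - Ym) (RE * A - Ym) Lm n"
    by (rule mconv_minus[OF k1 mconv_const]) (use Ym in auto)
  have k4: "mconv (\<lambda>k. transpose_mat RE * (RE * S k - Ym)) (transpose_mat RE * (RE * A - Ym)) l n"
    by (rule mconv_mult_left[OF k3 c3 a3]) (use RE in auto)
  have k5: "mconv (\<lambda>k. lambda \<cdot>\<^sub>m (transpose_mat RE * (RE * S k - Ym))) (lambda \<cdot>\<^sub>m (transpose_mat RE * (RE * A - Ym))) l n"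
    by (rule mconv_smult[OF k4 c4 a4])
  have k6: "mconv (\<lambda>k. rho \<cdot>\<^sub>m T k) (rho \<cdot>\<^sub>m Bm) l n" by (rule mconv_smult[OF m2 Tc Bc])
  show "mconv (\<lambda>k. lambda \<cdot>\<^sub>m (transpose_mat RE * (RE * S k - Ym)) + rho \<cdot>\<^sub>m T k)
     (lambda \<cdot>\<^sub>m (transpose_mat RE * (RE * A - Ym)) + rho \<cdot>\<^sub>m Bm) l n"
    by (rule mconv_add[OF k5 k6 c6]) (use Bc in auto)
  show "lambda \<cdot>\<^sub>m (transpose_mat RE * (RE * A - Ym)) + rho \<cdot>\<^sub>m Bm \<in> carrier_mat l n" using Bc by auto
qed auto

lemma BR3_closed: assumes m1: "mconv S A l n" and m2: "mconv T Bm l n"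
  and Sc: "\<forall>k. S k \<in> carrier_mat l n" and Tc: "\<forall>k. T k \<in> carrier_mat l n"
  and Ac: "A \<in> carrier_mat l n" and Bc: "Bm \<in> carrier_mat l n"
  and z: "\<forall>k. S k = (S k - T k) * Wt"
  shows "A = (A - Bm) * Wt"
proof -
  have c1: "\<forall>k. S k - T k \<in> carrier_mat l n" using Tc by (auto intro: carr)
  have c2: "\<forall>k. (S k - T k) * Wt \<in> carrier_mat l n" using c1 Wt mult_carrier_mat by blast
  have k1: "mconv (\<lambda>k. S k - T k) (A - Bm) l n" by (rule mconv_minus[OF m1 m2 Tc Bc])
  have k2: "mconv (\<lambda>k. (S k - T k) * Wt) ((A - Bm) * Wt) l n"
    by (rule mconv_mult_right[OF k1 c1 _ Wt]) (use Bc in \<open>auto intro: carr\<close>)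
  have k3: "mconv (\<lambda>k. S k - (S k - T k) * Wt) (A - (A - Bm) * Wt) l n"
    by (rule mconv_minus[OF m1 k2 c2]) (use Bc Wt in \<open>auto intro: carr\<close>)
  have "\<forall>k. S k - (S k - T k) * Wt = 0\<^sub>m l n"
  proof
    fix k have "S k - S k = 0\<^sub>m l n" using Sc[rule_format, of k] by (intro eq_matI) auto
    then show "S k - (S k - T k) * Wt = 0\<^sub>m l n" using z by metis
  qed
  from mconv_zero_seq[OF k3 this] have h0: "A - (A - Bm) * Wt = 0\<^sub>m l n" using Bc Wt by (auto intro: carr)
  define Wm where "Wm = (A - Bm) * Wt"
  have W: "Wm \<in> carrier_mat l n" unfolding Wm_def using Bc Wt by (auto intro: carr)
  have h: "A - Wm = 0\<^sub>m l n" using h0 unfolding Wm_def .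
  have "A = Wm"
  proof (rule eq_matI)
    fix i j assume "i < dim_row Wm" "j < dim_col Wm"
    then have i: "i < l" and j: "j < n" using W by auto
    have "(A - Wm) $$ (i,j) = 0\<^sub>m l n $$ (i,j)" using h by simp
    then show "A $$ (i,j) = Wm $$ (i,j)" using i j W by simp
  qed (use Ac W in auto)
  then show ?thesis unfolding Wm_def .
qed

end

lemma entry_bound: assumes "A \<in> carrier_mat r c" "S \<in> carrier_mat r c" "fip (A - S) (A - S) \<le> b" "i < r" "j < c"
  shows "\<bar>A $$ (i,j)\<bar> \<le> \<bar>S $$ (i,j)\<bar> + sqrt b"
proof -
  have AS: "A - S \<in> carrier_mat r c" using assms(2) by (rule minus_carrier_mat)
  have "((A - S) $$ (i,j))\<^sup>2 \<le> b" using entry_sq_le[OF AS assms(4,5)] assms(3) by linarith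
  then have "\<bar>(A - S) $$ (i,j)\<bar> \<le> sqrt b" using real_sqrt_le_mono by fastforce
  then show ?thesis using assms by auto
qed

context admm begin

lemma identities:
  "V2 (Suc m) * B - V1 (Suc m) = (D1 m - D1 (Suc m)) - (D2 m - D2 (Suc m)) * B"
  "V3 (Suc m) - V2 (Suc m) = (D2 m - D2 (Suc m)) - (D3 m - D3 (Suc m))"
  "D1 (Suc m) * transpose_mat B + D2 (Suc m) + D3 (Suc m)
     = (V1 (Suc m) - V1 m) * transpose_mat B + (V2 (Suc m) - V2 m) + (V3 (Suc m) - V3 m)"
  "X (Suc m) = V2 (Suc m) + (D2 m - D2 (Suc m))"
proof -
  have d1: "D1 (Suc m) = D1 m - (X (Suc m) * B - V1 (Suc m))" using Dupd1 by blast
  have d2: "D2 (Suc m) = D2 m - (X (Suc m) - V2 (Suc m))" using Dupd2 by blast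
  have d3: "D3 (Suc m) = D3 m - (X (Suc m) - V3 (Suc m))" using Dupd3 by blast
  have XB: "X (Suc m) * B \<in> carrier_mat l n" using cV'(7)[of m] B by simp
  have e1: "X (Suc m) * B - V1 (Suc m) = D1 m - D1 (Suc m)" unfolding d1 using XB by (intro eq_matI) auto
  have e2: "V2 (Suc m) = X (Suc m) - (D2 m - D2 (Suc m))" unfolding d2 by (intro eq_matI) auto
  show "X (Suc m) = V2 (Suc m) + (D2 m - D2 (Suc m))" unfolding d2 by (intro eq_matI) auto
  show "V3 (Suc m) - V2 (Suc m) = (D2 m - D2 (Suc m)) - (D3 m - D3 (Suc m))" unfolding d2 d3 by (intro eq_matI) auto
  have "V2 (Suc m) * B = X (Suc m) * B - (D2 m - D2 (Suc m)) * B"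
    by (subst e2, rule minus_mult_distrib_mat[of _ l n]) (use B in \<open>auto intro: carr\<close>)
  moreover have dB: "(D2 m - D2 (Suc m)) * B \<in> carrier_mat l n" using B by (auto intro: carr)
  ultimately show "V2 (Suc m) * B - V1 (Suc m) = (D1 m - D1 (Suc m)) - (D2 m - D2 (Suc m)) * B"
  proof -
    assume h: "V2 (Suc m) * B = X (Suc m) * B - (D2 m - D2 (Suc m)) * B"
    define P where "P = X (Suc m) * B"
    define Q where "Q = (D2 m - D2 (Suc m)) * B"
    have Pc: "P \<in> carrier_mat l n" "Q \<in> carrier_mat l n" unfolding P_def Q_def using XB dB by auto
    have "V2 (Suc m) * B - V1 (Suc m) = (P - Q) - V1 (Suc m)" unfolding h P_def Q_def ..
    also have "\<dots> = (P - V1 (Suc m)) - Q" using Pc by (intro eq_matI) auto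
    also have "P - V1 (Suc m) = D1 m - D1 (Suc m)" unfolding P_def by (rule e1)
    finally show ?thesis unfolding Q_def .
  qed
  define g1 where "g1 = X (Suc m) * B - V1 m - D1 m"
  define g2 where "g2 = X (Suc m) - V2 m - D2 m"
  define g3 where "g3 = X (Suc m) - V3 m - D3 m"
  have G0: "g1 * transpose_mat B + g2 + g3 = 0\<^sub>m l n" using XO unfolding g1_def g2_def g3_def by blast
  have gc: "g1 \<in> carrier_mat l n" unfolding g1_def using XB by (auto intro: carr)
  have f1: "D1 (Suc m) = (V1 (Suc m) - V1 m) - g1" unfolding d1 g1_def using XB by (intro eq_matI) auto
  have f2: "D2 (Suc m) = (V2 (Suc m) - V2 m) - g2" unfolding d2 g2_def by (intro eq_matI) auto
  have f3: "D3 (Suc m) = (V3 (Suc m) - V3 m) - g3" unfolding d3 g3_def by (intro eq_matI) auto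
  have f1B: "D1 (Suc m) * transpose_mat B = (V1 (Suc m) - V1 m) * transpose_mat B - g1 * transpose_mat B"
    by (subst f1, rule minus_mult_distrib_mat[of _ l n]) (use B gc in \<open>auto intro: carr\<close>)
  define P where "P = (V1 (Suc m) - V1 m) * transpose_mat B"
  define Q where "Q = g1 * transpose_mat B"
  have Pc: "P \<in> carrier_mat l n" "Q \<in> carrier_mat l n" unfolding P_def Q_def using B gc by (auto intro: carr)
  have G0': "Q + g2 + g3 = 0\<^sub>m l n" using G0 unfolding Q_def .
  show "D1 (Suc m) * transpose_mat B + D2 (Suc m) + D3 (Suc m)
     = (V1 (Suc m) - V1 m) * transpose_mat B + (V2 (Suc m) - V2 m) + (V3 (Suc m) - V3 m)"
  proof -
    have "D1 (Suc m) * transpose_mat B + D2 (Suc m) + D3 (Suc m) = (P - Q) + ((V2 (Suc m) - V2 m) - g2) + ((V3 (Suc m) - V3 m) - g3)"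
      unfolding f1B P_def[symmetric] Q_def[symmetric] using f2 f3 by simp
    also have "\<dots> = P + (V2 (Suc m) - V2 m) + (V3 (Suc m) - V3 m) - (Q + g2 + g3)"
      using Pc unfolding g2_def g3_def by (intro eq_matI) auto
    also have "\<dots> = P + (V2 (Suc m) - V2 m) + (V3 (Suc m) - V3 m)" unfolding G0' using Pc by (intro eq_matI) auto
    finally show ?thesis unfolding P_def .
  qed
qed

end

lemma minus_zero_eq: assumes "(A :: real mat) \<in> carrier_mat r c" "B \<in> carrier_mat r c" "A - B = 0\<^sub>m r c"
  shows "A = B"
proof (rule eq_matI)
  fix i j assume "i < dim_row B" "j < dim_col B"
  then have i: "i < r" and j: "j < c" using assms by auto
  have "(A - B) $$ (i,j) = 0\<^sub>m r c $$ (i,j)" using assms(3) by simp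
  then have "A $$ (i,j) - B $$ (i,j) = 0" using i j assms(1,2) by simp
  then show "A $$ (i,j) = B $$ (i,j)" by simp
qed (use assms in auto)

lemma zero_minus_zero: "0\<^sub>m r c - 0\<^sub>m r c = (0\<^sub>m r c :: real mat)"
  by (intro eq_matI) auto

context admm begin

definition sel :: "nat \<Rightarrow> nat \<Rightarrow> real mat" where
  "sel m = (if m = 0 then V1 else if m = 1 then V2 else if m = 2 then V3
     else if m = 3 then D1 else if m = 4 then D2 else D3)"

lemma sel_carrier: "sel m k \<in> carrier_mat l n"
  unfolding sel_def using cV' by auto

theorem X_conv: "\<exists>L\<in>carrier_mat l n. mconv X L l n"
proof -
  obtain xs v1s v2s v3s d1s d2s d3s where S: "saddle xs v1s v2s v3s d1s d2s d3s"
    using saddle_exists by blast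
  note sc = saddle_carrier[OF S]
  let ?e = "ee v1s v2s v3s d1s d2s d3s"
  have ebound: "?e k \<le> ?e 0" for k
  proof (induction k)
    case (Suc k) then show ?case using fejer[OF S, of k] dw_nonneg[of k] by linarith
  qed simp
  define bs where "bs (m::nat) = (if m = 0 then v1s else if m = 1 then v2s else if m = 2 then v3s
     else if m = 3 then d1s else if m = 4 then d2s else d3s)" for m
  have bsc: "bs m \<in> carrier_mat l n" for m unfolding bs_def using sc by auto
  have fb: "fip (sel m (Suc k) - bs m) (sel m (Suc k) - bs m) \<le> ?e 0" for m k
  proof -
    have "phi v1s v2s v3s d1s d2s d3s k \<le> ?e 0" using phi_le_ee[OF S, of k] ebound[of k] by linarith
    moreover have "fip (sel m (Suc k) - bs m) (sel m (Suc k) - bs m) \<le> phi v1s v2s v3s d1s d2s d3s k"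
      unfolding phi_def sel_def bs_def
      using fip_nonneg[of "V1 (Suc k) - v1s"] fip_nonneg[of "V2 (Suc k) - v2s"] fip_nonneg[of "V3 (Suc k) - v3s"]
        fip_nonneg[of "D1 (Suc k) - d1s"] fip_nonneg[of "D2 (Suc k) - d2s"] fip_nonneg[of "D3 (Suc k) - d3s"]
      by auto
    ultimately show ?thesis by linarith
  qed
  define I where "I = {..<(6::nat)} \<times> {..<l} \<times> {..<n}"
  define f where "f k = (\<lambda>(m,i,j). sel m (Suc k) $$ (i,j))" for k
  have "\<forall>x\<in>I. \<exists>b. \<forall>k. \<bar>f k x\<bar> \<le> b"
  proof
    fix x assume "x \<in> I"
    then obtain m i j where x: "x = (m,i,j)" "i < l" "j < n" unfolding I_def by auto
    show "\<exists>b. \<forall>k. \<bar>f k x\<bar> \<le> b"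
      using entry_bound[OF sel_carrier bsc fb x(2,3)] unfolding f_def x by auto
  qed
  then obtain g where g: "strict_mono g" "\<forall>x\<in>I. convergent (\<lambda>k. f (g k) x)"
    using bounded_subseq[of I f] unfolding I_def by auto
  define hat where "hat m = lm (\<lambda>k. sel m (Suc (g k))) l n" for m
  have hc: "hat m \<in> carrier_mat l n" for m unfolding hat_def lm_def by auto
  have hm: "mconv (\<lambda>k. sel m (Suc (g k))) (hat m) l n" if "m < 6" for m
    unfolding hat_def
  proof (rule lm_mconv(1))
    show "\<forall>i<l. \<forall>j<n. convergent (\<lambda>k. sel m (Suc (g k)) $$ (i, j))"
      using g(2) that unfolding I_def f_def by auto
  qed
  define V1h where "V1h = hat 0"
  define V2h where "V2h = hat 1"
  define V3h where "V3h = hat 2"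
  define D1h where "D1h = hat 3"
  define D2h where "D2h = hat 4"
  define D3h where "D3h = hat 5"
  have mV1: "mconv (\<lambda>k. V1 (Suc (g k))) V1h l n" using hm[of 0] unfolding V1h_def sel_def by simp
  have mV2: "mconv (\<lambda>k. V2 (Suc (g k))) V2h l n" using hm[of 1] unfolding V2h_def sel_def by simp
  have mV3: "mconv (\<lambda>k. V3 (Suc (g k))) V3h l n" using hm[of 2] unfolding V3h_def sel_def by simp
  have mD1: "mconv (\<lambda>k. D1 (Suc (g k))) D1h l n" using hm[of 3] unfolding D1h_def sel_def by simp
  have mD2: "mconv (\<lambda>k. D2 (Suc (g k))) D2h l n" using hm[of 4] unfolding D2h_def sel_def by simp
  have mD3: "mconv (\<lambda>k. D3 (Suc (g k))) D3h l n" using hm[of 5] unfolding D3h_def sel_def by simp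
  have hcs: "V1h \<in> carrier_mat l n" "V2h \<in> carrier_mat l n" "V3h \<in> carrier_mat l n"
    "D1h \<in> carrier_mat l n" "D2h \<in> carrier_mat l n" "D3h \<in> carrier_mat l n"
    unfolding V1h_def V2h_def V3h_def D1h_def D2h_def D3h_def using hc by auto
  have cS: "\<forall>k. V1 (Suc (g k)) \<in> carrier_mat l n" "\<forall>k. V2 (Suc (g k)) \<in> carrier_mat l n"
    "\<forall>k. V3 (Suc (g k)) \<in> carrier_mat l n" "\<forall>k. D1 (Suc (g k)) \<in> carrier_mat l n"
    "\<forall>k. D2 (Suc (g k)) \<in> carrier_mat l n" "\<forall>k. D3 (Suc (g k)) \<in> carrier_mat l n"
    using cV' by auto
  \<comment> \<open>the limit is a saddle point\<close>
  have br1: "transpose_mat E * (E * V1h * M - Yh) * transpose_mat M + rho \<cdot>\<^sub>m D1h = 0\<^sub>m l n"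
    by (rule BR1_closed[OF mV1 mD1 cS(1) cS(4) hcs(1) hcs(4)]) (use BR1k in blast)
  have br2: "lambda \<cdot>\<^sub>m (transpose_mat RE * (RE * V2h - Ym)) + rho \<cdot>\<^sub>m D2h = 0\<^sub>m l n"
    by (rule BR2_closed[OF mV2 mD2 cS(2) cS(5) hcs(2) hcs(5)]) (use BR2k in blast)
  have br3: "V3h = (V3h - D3h) * Wt"
    by (rule BR3_closed[OF mV3 mD3 cS(3) cS(6) hcs(3) hcs(6)]) (use BR3k in blast)
  note dz = dV_zero
  have dzg: "mconv (\<lambda>k. V1 (Suc (g k)) - V1 (g k)) (0\<^sub>m l n) l n"
    "mconv (\<lambda>k. V2 (Suc (g k)) - V2 (g k)) (0\<^sub>m l n) l n"
    "mconv (\<lambda>k. V3 (Suc (g k)) - V3 (g k)) (0\<^sub>m l n) l n"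
    "mconv (\<lambda>k. D1 (g k) - D1 (Suc (g k))) (0\<^sub>m l n) l n"
    "mconv (\<lambda>k. D2 (g k) - D2 (Suc (g k))) (0\<^sub>m l n) l n"
    "mconv (\<lambda>k. D3 (g k) - D3 (Suc (g k))) (0\<^sub>m l n) l n"
    using mconv_subseq[OF dz(1) g(1)] mconv_subseq[OF dz(2) g(1)] mconv_subseq[OF dz(3) g(1)]
      mconv_subseq[OF dz(4) g(1)] mconv_subseq[OF dz(5) g(1)] mconv_subseq[OF dz(6) g(1)] by auto
  have dc: "\<forall>k. V1 (Suc (g k)) - V1 (g k) \<in> carrier_mat l n" "\<forall>k. V2 (Suc (g k)) - V2 (g k) \<in> carrier_mat l n"
    "\<forall>k. V3 (Suc (g k)) - V3 (g k) \<in> carrier_mat l n" "\<forall>k. D1 (g k) - D1 (Suc (g k)) \<in> carrier_mat l n"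
    "\<forall>k. D2 (g k) - D2 (Suc (g k)) \<in> carrier_mat l n" "\<forall>k. D3 (g k) - D3 (Suc (g k)) \<in> carrier_mat l n"
    using cV' by (auto intro: carr)
  have z0: "0\<^sub>m l n \<in> carrier_mat l n" by simp
  have z0B: "0\<^sub>m l n * B = 0\<^sub>m l n" "0\<^sub>m l n * transpose_mat B = 0\<^sub>m l n" using B by auto
  have s1: "V2h * B = V1h"
  proof -
    have k1: "mconv (\<lambda>k. V2 (Suc (g k)) * B - V1 (Suc (g k))) (V2h * B - V1h) l n"
      by (rule mconv_minus[OF mconv_mult_right[OF mV2 cS(2) hcs(2) B] mV1 cS(1) hcs(1)])
    have k2: "mconv (\<lambda>k. (D1 (g k) - D1 (Suc (g k))) - (D2 (g k) - D2 (Suc (g k))) * B) (0\<^sub>m l n - 0\<^sub>m l n * B) l n"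
      by (rule mconv_minus[OF dzg(4) mconv_mult_right[OF dzg(5) dc(5) z0 B]]) (use dc B in auto)
    have "(\<lambda>k. V2 (Suc (g k)) * B - V1 (Suc (g k))) = (\<lambda>k. (D1 (g k) - D1 (Suc (g k))) - (D2 (g k) - D2 (Suc (g k))) * B)"
      using identities(1) by auto
    note eqs = this
    have "V2h * B - V1h = 0\<^sub>m l n - 0\<^sub>m l n * B"
      using mconv_unique[OF k1[unfolded eqs] k2] hcs B by (auto intro: carr)
    then have h: "V2h * B - V1h = 0\<^sub>m l n" using z0B by (auto intro!: eq_matI)
    define P where "P = V2h * B"
    have Pc: "P \<in> carrier_mat l n" unfolding P_def using hcs B by auto
    have "P - V1h = 0\<^sub>m l n" using h unfolding P_def .
    then have "P = V1h" using minus_zero_eq[OF Pc hcs(1)] by blast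
    then show ?thesis unfolding P_def .
  qed
  have s3: "V2h = V3h"
  proof -
    have k1: "mconv (\<lambda>k. V3 (Suc (g k)) - V2 (Suc (g k))) (V3h - V2h) l n"
      by (rule mconv_minus[OF mV3 mV2 cS(2) hcs(2)])
    have k2: "mconv (\<lambda>k. (D2 (g k) - D2 (Suc (g k))) - (D3 (g k) - D3 (Suc (g k)))) (0\<^sub>m l n - 0\<^sub>m l n) l n"
      by (rule mconv_minus[OF dzg(5) dzg(6) dc(6) z0])
    have "(\<lambda>k. V3 (Suc (g k)) - V2 (Suc (g k))) = (\<lambda>k. (D2 (g k) - D2 (Suc (g k))) - (D3 (g k) - D3 (Suc (g k))))"
      using identities(2) by auto
    note eqs = this
    have "V3h - V2h = 0\<^sub>m l n - 0\<^sub>m l n"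
      using mconv_unique[OF k1[unfolded eqs] k2] hcs by (auto intro: carr)
    then have "V3h = V2h" using minus_zero_eq[OF hcs(3) hcs(2)] zero_minus_zero by metis
    then show ?thesis by simp
  qed
  have sG: "D1h * transpose_mat B + D2h + D3h = 0\<^sub>m l n"
  proof -
    have Bt: "transpose_mat B \<in> carrier_mat n n" using B by simp
    have k1: "mconv (\<lambda>k. D1 (Suc (g k)) * transpose_mat B + D2 (Suc (g k)) + D3 (Suc (g k))) (D1h * transpose_mat B + D2h + D3h) l n"
      by (rule mconv_add[OF mconv_add[OF mconv_mult_right[OF mD1 cS(4) hcs(4) Bt] mD2 cS(5) hcs(5)] mD3 cS(6) hcs(6)])
    have k2: "mconv (\<lambda>k. (V1 (Suc (g k)) - V1 (g k)) * transpose_mat B + (V2 (Suc (g k)) - V2 (g k)) + (V3 (Suc (g k)) - V3 (g k)))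
       (0\<^sub>m l n * transpose_mat B + 0\<^sub>m l n + 0\<^sub>m l n) l n"
      by (rule mconv_add[OF mconv_add[OF mconv_mult_right[OF dzg(1) dc(1) z0 Bt] dzg(2) dc(2) z0] dzg(3) dc(3) z0])
    have "(\<lambda>k. D1 (Suc (g k)) * transpose_mat B + D2 (Suc (g k)) + D3 (Suc (g k)))
        = (\<lambda>k. (V1 (Suc (g k)) - V1 (g k)) * transpose_mat B + (V2 (Suc (g k)) - V2 (g k)) + (V3 (Suc (g k)) - V3 (g k)))"
      using identities(3) by auto
    note eqs = this
    have "D1h * transpose_mat B + D2h + D3h = 0\<^sub>m l n * transpose_mat B + 0\<^sub>m l n + 0\<^sub>m l n"
      using mconv_unique[OF k1[unfolded eqs] k2] hcs B by auto
    then show ?thesis using z0B by (auto intro!: eq_matI)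
  qed
  have Sh: "saddle V2h V1h V2h V3h D1h D2h D3h"
    unfolding saddle_def BR_def using hcs br1 br2 br3 s1 s3 sG by auto
  \<comment> \<open>Fejer w.r.t. the limit saddle point\<close>
  let ?eh = "ee V1h V2h V3h D1h D2h D3h"
  have ehdec: "\<forall>k. ?eh (Suc k) \<le> ?eh k" using fejer[OF Sh] dw_nonneg by (smt (verit))
  have ehnn: "\<forall>k. 0 \<le> ?eh k" using ee_nonneg by blast
  have ehsub: "(\<lambda>k. ?eh (g k)) \<longlonglongrightarrow> 0"
  proof -
    have w: "mconv (\<lambda>k. V1 (Suc (g k)) - D1 (Suc (g k)) - (V1h - D1h)) (V1h - D1h - (V1h - D1h)) l n"
      "mconv (\<lambda>k. V2 (Suc (g k)) - D2 (Suc (g k)) - (V2h - D2h)) (V2h - D2h - (V2h - D2h)) l n"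
      "mconv (\<lambda>k. V3 (Suc (g k)) - D3 (Suc (g k)) - (V3h - D3h)) (V3h - D3h - (V3h - D3h)) l n"
      by (rule mconv_minus[OF mconv_minus[OF mV1 mD1 cS(4) hcs(4)] mconv_const], use hcs in \<open>auto intro: carr\<close>)
         (rule mconv_minus[OF mconv_minus[OF mV2 mD2 cS(5) hcs(5)] mconv_const], use hcs in \<open>auto intro: carr\<close>,
          rule mconv_minus[OF mconv_minus[OF mV3 mD3 cS(6) hcs(6)] mconv_const], use hcs in \<open>auto intro: carr\<close>)
    have wc: "\<forall>k. V1 (Suc (g k)) - D1 (Suc (g k)) - (V1h - D1h) \<in> carrier_mat l n"
       "\<forall>k. V2 (Suc (g k)) - D2 (Suc (g k)) - (V2h - D2h) \<in> carrier_mat l n"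
       "\<forall>k. V3 (Suc (g k)) - D3 (Suc (g k)) - (V3h - D3h) \<in> carrier_mat l n"
      using hcs by (auto intro: carr)
    have zz: "fip (A - A) (A - A) = 0" if "A \<in> carrier_mat l n" for A
    proof -
      have "A - A = 0\<^sub>m l n" using that by (intro eq_matI) auto
      then show ?thesis by (simp add: fip_zero_left)
    qed
    have ac: "V1h - D1h \<in> carrier_mat l n" "V2h - D2h \<in> carrier_mat l n" "V3h - D3h \<in> carrier_mat l n"
      using hcs by (auto intro: carr)
    have wcl: "V1h - D1h - (V1h - D1h) \<in> carrier_mat l n" "V2h - D2h - (V2h - D2h) \<in> carrier_mat l n"
      "V3h - D3h - (V3h - D3h) \<in> carrier_mat l n" using hcs by (auto intro: carr)
    have t: "(\<lambda>k. fip (V1 (Suc (g k)) - D1 (Suc (g k)) - (V1h - D1h)) (V1 (Suc (g k)) - D1 (Suc (g k)) - (V1h - D1h))) \<longlonglongrightarrow> 0"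
      "(\<lambda>k. fip (V2 (Suc (g k)) - D2 (Suc (g k)) - (V2h - D2h)) (V2 (Suc (g k)) - D2 (Suc (g k)) - (V2h - D2h))) \<longlonglongrightarrow> 0"
      "(\<lambda>k. fip (V3 (Suc (g k)) - D3 (Suc (g k)) - (V3h - D3h)) (V3 (Suc (g k)) - D3 (Suc (g k)) - (V3h - D3h))) \<longlonglongrightarrow> 0"
      using mconv_fip[OF w(1) w(1) wc(1) wcl(1)] mconv_fip[OF w(2) w(2) wc(2) wcl(2)] mconv_fip[OF w(3) w(3) wc(3) wcl(3)]
      unfolding zz[OF ac(1)] zz[OF ac(2)] zz[OF ac(3)] by auto
    show ?thesis unfolding ee_def using tendsto_add[OF tendsto_add[OF t(1) t(2)] t(3)] by simp
  qed
  have eh0: "?eh \<longlonglongrightarrow> 0" by (rule decseq_subseq_zero[OF ehdec ehnn g(1) ehsub])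
  \<comment> \<open>convergence of V2 and D2, hence of X\<close>
  have p2: "(\<lambda>k. fip (V2 (Suc k) - V2h) (V2 (Suc k) - V2h)) \<longlonglongrightarrow> 0"
    "(\<lambda>k. fip (D2 (Suc k) - D2h) (D2 (Suc k) - D2h)) \<longlonglongrightarrow> 0"
  proof -
    have le: "fip (V2 (Suc k) - V2h) (V2 (Suc k) - V2h) \<le> ?eh k" "fip (D2 (Suc k) - D2h) (D2 (Suc k) - D2h) \<le> ?eh k" for k
      using phi_le_ee[OF Sh, of k] unfolding phi_def
      using fip_nonneg[of "V1 (Suc k) - V1h"] fip_nonneg[of "V2 (Suc k) - V2h"] fip_nonneg[of "V3 (Suc k) - V3h"]
        fip_nonneg[of "D1 (Suc k) - D1h"] fip_nonneg[of "D2 (Suc k) - D2h"] fip_nonneg[of "D3 (Suc k) - D3h"]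
      by linarith+
    show "(\<lambda>k. fip (V2 (Suc k) - V2h) (V2 (Suc k) - V2h)) \<longlonglongrightarrow> 0"
      by (rule sandwich0[OF _ _ eh0]) (use le fip_nonneg in auto)
    show "(\<lambda>k. fip (D2 (Suc k) - D2h) (D2 (Suc k) - D2h)) \<longlonglongrightarrow> 0"
      by (rule sandwich0[OF _ _ eh0]) (use le fip_nonneg in auto)
  qed
  have cV2: "\<forall>k. V2 (Suc k) \<in> carrier_mat l n" "\<forall>k. D2 (Suc k) \<in> carrier_mat l n" using cV' by auto
  have mv2: "mconv (\<lambda>k. V2 (Suc k)) V2h l n" by (rule mconv_of_fip[OF p2(1) cV2(1) hcs(2)])
  have md2: "mconv (\<lambda>k. D2 (Suc k)) D2h l n" by (rule mconv_of_fip[OF p2(2) cV2(2) hcs(5)])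
  have md2': "mconv (\<lambda>k. D2 k) D2h l n" by (rule mconv_shift[OF md2])
  have dd: "mconv (\<lambda>k. D2 k - D2 (Suc k)) (D2h - D2h) l n"
    by (rule mconv_minus[OF md2' md2 cV2(2) hcs(5)])
  have mx: "mconv (\<lambda>k. V2 (Suc k) + (D2 k - D2 (Suc k))) (V2h + (D2h - D2h)) l n"
    by (rule mconv_add[OF mv2 dd]) (use cV' hcs in \<open>auto intro: carr\<close>)
  have "(\<lambda>k. X (Suc k)) = (\<lambda>k. V2 (Suc k) + (D2 k - D2 (Suc k)))" using identities(4) by auto
  moreover have "V2h + (D2h - D2h) = V2h" using hcs by (intro eq_matI) auto
  ultimately have "mconv (\<lambda>k. X (Suc k)) V2h l n" using mx by simp
  then have "mconv X V2h l n" by (rule mconv_shift)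
  then show ?thesis using hcs by blast
qed

end

theorem corollary3:
  fixes Lh Lm Ls h w p nh K :: nat
    and Yh Ym B M R E W :: "real mat"
    and rho lambda tau :: real
    and C :: "nat \<Rightarrow> real mat" and beta :: "nat \<Rightarrow> nat \<Rightarrow> real"
    and X V1 V2 V3 D1 D2 D3 :: "nat \<Rightarrow> real mat"
  assumes dims: "0 < Lh" "0 < Lm" "0 < Ls" "0 < h" "0 < w" "0 < nh" "0 < p"
    and Yh: "Yh \<in> carrier_mat Lh nh"
    and Ym: "Ym \<in> carrier_mat Lm (h*w)"
    and B: "B \<in> carrier_mat (h*w) (h*w)"
    and B_cyclic: "\<exists>b. \<forall>r c r' c'. r < h \<longrightarrow> c < w \<longrightarrow> r' < h \<longrightarrow> c' < w \<longrightarrow>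
                     B $$ (pix w r c, pix w r' c') = b ((r' + h - r) mod h) ((c' + w - c) mod w)"
    and M_subsampling: "\<exists>s. inj_on s {..<nh} \<and> (\<forall>q<nh. s q < h*w) \<and>
                     M = mat (h*w) nh (\<lambda>(j,q). if j = s q then 1 else 0)"
    and R: "R \<in> carrier_mat Lm Lh"
    and E: "E \<in> carrier_mat Lh Ls"
    and pos: "0 < rho" "0 < lambda" "0 < tau"
    and C_psd: "\<forall>j<K. psd_mat (p*p) (C j)"
    and beta_nonneg: "\<forall>i<h*w. \<forall>j<K. 0 \<le> beta j i"
    and beta_sum: "\<forall>i<h*w. (\<Sum>j<K. beta j i) = 1"
    and W_def: "W = gmm_W h w p K C beta (tau / rho)"
    and init: "V1 0 = 0\<^sub>m Ls (h*w)" "V2 0 = 0\<^sub>m Ls (h*w)" "V3 0 = 0\<^sub>m Ls (h*w)"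
              "D1 0 = 0\<^sub>m Ls (h*w)" "D2 0 = 0\<^sub>m Ls (h*w)" "D3 0 = 0\<^sub>m Ls (h*w)"
    and X_step: "\<forall>k. X (Suc k) \<in> carrier_mat Ls (h*w) \<and>
        (\<forall>Z \<in> carrier_mat Ls (h*w).
            (frob_norm (X (Suc k) * B - V1 k - D1 k))\<^sup>2 + (frob_norm (X (Suc k) - V2 k - D2 k))\<^sup>2
              + (frob_norm (X (Suc k) - V3 k - D3 k))\<^sup>2
          \<le> (frob_norm (Z * B - V1 k - D1 k))\<^sup>2 + (frob_norm (Z - V2 k - D2 k))\<^sup>2
              + (frob_norm (Z - V3 k - D3 k))\<^sup>2)"
    and V1_step: "\<forall>k. V1 (Suc k) \<in> carrier_mat Ls (h*w) \<and>
        (\<forall>Z \<in> carrier_mat Ls (h*w).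
            (frob_norm (E * V1 (Suc k) * M - Yh))\<^sup>2 + rho * (frob_norm (X (Suc k) * B - V1 (Suc k) - D1 k))\<^sup>2
          \<le> (frob_norm (E * Z * M - Yh))\<^sup>2 + rho * (frob_norm (X (Suc k) * B - Z - D1 k))\<^sup>2)"
    and V2_step: "\<forall>k. V2 (Suc k) \<in> carrier_mat Ls (h*w) \<and>
        (\<forall>Z \<in> carrier_mat Ls (h*w).
            lambda * (frob_norm (R * E * V2 (Suc k) - Ym))\<^sup>2 + rho * (frob_norm (X (Suc k) - V2 (Suc k) - D2 k))\<^sup>2
          \<le> lambda * (frob_norm (R * E * Z - Ym))\<^sup>2 + rho * (frob_norm (X (Suc k) - Z - D2 k))\<^sup>2)"
    and V3_step: "\<forall>k. V3 (Suc k) = transpose_mat (W * transpose_mat (X (Suc k) - D3 k))"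
    and D1_step: "\<forall>k. D1 (Suc k) = D1 k - (X (Suc k) * B - V1 (Suc k))"
    and D2_step: "\<forall>k. D2 (Suc k) = D2 k - (X (Suc k) - V2 (Suc k))"
    and D3_step: "\<forall>k. D3 (Suc k) = D3 k - (X (Suc k) - V3 (Suc k))"
  shows "\<exists>L \<in> carrier_mat Ls (h*w). \<forall>i<Ls. \<forall>j<h*w. (\<lambda>k. X k $$ (i,j)) \<longlonglongrightarrow> L $$ (i,j)"
proof -
  define n where "n = h * w"
  define Wt where "Wt = transpose_mat W"
  have Wc: "W \<in> carrier_mat n n"
    unfolding W_def n_def using W_props(1)[OF dims(4,5,7) C_psd beta_nonneg beta_sum _ zero_carrier_vec] pos by auto
  have Wtc: "Wt \<in> carrier_mat n n" unfolding Wt_def using Wc by simp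
  have Mc: "M \<in> carrier_mat n nh" using M_subsampling unfolding n_def by auto
  have REc: "R * E \<in> carrier_mat Lm Ls" using R E by simp
  have sig: "tau / rho > 0" using pos by simp
  have W1: "\<forall>Y\<in>carrier_mat Ls n. fip (Y * Wt) (Y * Wt) \<le> fip Y (Y * Wt)"
    unfolding Wt_def W_def n_def using W_mat(1)[OF dims(4,5,7) C_psd beta_nonneg beta_sum sig] by blast
  have W2: "\<forall>Y\<in>carrier_mat Ls n. Y * Wt = Y \<longrightarrow> Y = 0\<^sub>m Ls n"
    unfolding Wt_def W_def n_def using W_mat(2)[OF dims(4,5,7) C_psd beta_nonneg beta_sum sig] by blast
  have cX: "\<forall>k. X (Suc k) \<in> carrier_mat Ls n" using X_step unfolding n_def by blast
  have cV1: "V1 (Suc k) \<in> carrier_mat Ls n" for k using V1_step unfolding n_def by blast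
  have cV2: "V2 (Suc k) \<in> carrier_mat Ls n" for k using V2_step unfolding n_def by blast
  have V3e: "V3 (Suc k) = (X (Suc k) - D3 k) * Wt" if "D3 k \<in> carrier_mat Ls n" for k
  proof -
    have "X (Suc k) - D3 k \<in> carrier_mat Ls n" using that by (rule minus_carrier_mat)
    then show ?thesis using V3_step mult_transpose_eq[OF Wc] unfolding Wt_def by metis
  qed
  have cD3: "D3 k \<in> carrier_mat Ls n" for k
  proof (induction k)
    case 0 then show ?case using init unfolding n_def by simp
  next
    case (Suc k)
    have "V3 (Suc k) \<in> carrier_mat Ls n" using V3e[OF Suc] Wtc Suc by (auto intro: carr)
    then have "X (Suc k) - V3 (Suc k) \<in> carrier_mat Ls n" by (rule minus_carrier_mat)
    then show ?case using D3_step by (metis minus_carrier_mat)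
  qed
  have cV3: "V3 k \<in> carrier_mat Ls n" for k
  proof (cases k)
    case 0 then show ?thesis using init unfolding n_def by simp
  next
    case (Suc k') then show ?thesis using V3e[OF cD3[of k']] Wtc cD3[of k'] cX by (auto intro: carr)
  qed
  have cD1: "D1 k \<in> carrier_mat Ls n" for k
  proof (cases k)
    case 0 then show ?thesis using init unfolding n_def by simp
  next
    case (Suc k')
    have "X (Suc k') * B - V1 (Suc k') \<in> carrier_mat Ls n" using cV1 by (rule minus_carrier_mat)
    then show ?thesis using D1_step Suc by (metis minus_carrier_mat)
  qed
  have cD2: "D2 k \<in> carrier_mat Ls n" for k
  proof (cases k)
    case 0 then show ?thesis using init unfolding n_def by simp
  next
    case (Suc k')
    have "X (Suc k') - V2 (Suc k') \<in> carrier_mat Ls n" using cV2 by (rule minus_carrier_mat)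
    then show ?thesis using D2_step Suc by (metis minus_carrier_mat)
  qed
  have cV1': "V1 k \<in> carrier_mat Ls n" for k by (cases k) (use init cV1 n_def in auto)
  have cV2': "V2 k \<in> carrier_mat Ls n" for k by (cases k) (use init cV2 n_def in auto)
  have cV: "\<forall>k. V1 k \<in> carrier_mat Ls n \<and> V2 k \<in> carrier_mat Ls n \<and> V3 k \<in> carrier_mat Ls n \<and>
                 D1 k \<in> carrier_mat Ls n \<and> D2 k \<in> carrier_mat Ls n \<and> D3 k \<in> carrier_mat Ls n"
    using cV1' cV2' cV3 cD1 cD2 cD3 by blast
  have XO: "\<forall>k. (X (Suc k) * B - V1 k - D1 k) * transpose_mat B + (X (Suc k) - V2 k - D2 k)
                 + (X (Suc k) - V3 k - D3 k) = 0\<^sub>m Ls n"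
  proof
    fix k
    show "(X (Suc k) * B - V1 k - D1 k) * transpose_mat B + (X (Suc k) - V2 k - D2 k)
                 + (X (Suc k) - V3 k - D3 k) = 0\<^sub>m Ls n"
      by (rule xstep_grad) (use cX B cV X_step n_def in auto)
  qed
  have BR1k: "\<forall>k. transpose_mat E * (E * V1 (Suc k) * M - Yh) * transpose_mat M + rho \<cdot>\<^sub>m D1 (Suc k) = 0\<^sub>m Ls n"
  proof
    fix k
    define T where "T = transpose_mat E * (E * V1 (Suc k) * M - Yh) * transpose_mat M"
    have Tc: "T \<in> carrier_mat Ls n" unfolding T_def using E Mc Yh by (meson mult_carrier_mat transpose_carrier_mat minus_carrier_mat)
    have XBc: "X (Suc k) * B \<in> carrier_mat Ls n" using cX[rule_format, of k] B unfolding n_def by simp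
    have g: "T - rho \<cdot>\<^sub>m (X (Suc k) * B - V1 (Suc k) - D1 k) = 0\<^sub>m Ls n"
      unfolding T_def by (rule v1step_grad[OF E Mc Yh XBc cV1 cD1 pos(1)]) (use V1_step n_def in auto)
    have "T + rho \<cdot>\<^sub>m D1 (Suc k) = T - rho \<cdot>\<^sub>m (X (Suc k) * B - V1 (Suc k) - D1 k)"
      unfolding D1_step[rule_format] using Tc XBc cV1[of k] cD1[of k] by (intro eq_matI) (auto simp: algebra_simps)
    then show "transpose_mat E * (E * V1 (Suc k) * M - Yh) * transpose_mat M + rho \<cdot>\<^sub>m D1 (Suc k) = 0\<^sub>m Ls n"
      using g unfolding T_def by simp
  qed
  have BR2k: "\<forall>k. lambda \<cdot>\<^sub>m (transpose_mat (R * E) * (R * E * V2 (Suc k) - Ym)) + rho \<cdot>\<^sub>m D2 (Suc k) = 0\<^sub>m Ls n"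
  proof
    fix k
    define T where "T = lambda \<cdot>\<^sub>m (transpose_mat (R * E) * (R * E * V2 (Suc k) - Ym))"
    have Tc: "T \<in> carrier_mat Ls n" unfolding T_def using REc Ym unfolding n_def
      by (meson mult_carrier_mat transpose_carrier_mat minus_carrier_mat smult_carrier_mat)
    have g: "T - rho \<cdot>\<^sub>m (X (Suc k) - V2 (Suc k) - D2 k) = 0\<^sub>m Ls n"
      unfolding T_def by (rule v2step_grad[OF REc _ _ cV2 cD2 pos(1) pos(2)]) (use Ym cX V2_step n_def in auto)
    have "T + rho \<cdot>\<^sub>m D2 (Suc k) = T - rho \<cdot>\<^sub>m (X (Suc k) - V2 (Suc k) - D2 k)"
      unfolding D2_step[rule_format] using Tc cX[rule_format, of k] cV2[of k] cD2[of k] by (intro eq_matI) (auto simp: algebra_simps)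
    then show "lambda \<cdot>\<^sub>m (transpose_mat (R * E) * (R * E * V2 (Suc k) - Ym)) + rho \<cdot>\<^sub>m D2 (Suc k) = 0\<^sub>m Ls n"
      using g unfolding T_def by simp
  qed
  have BR3k: "\<forall>k. V3 (Suc k) = (V3 (Suc k) - D3 (Suc k)) * Wt"
  proof
    fix k
    have "X (Suc k) - D3 k = V3 (Suc k) - D3 (Suc k)"
      unfolding D3_step[rule_format] using cX[rule_format, of k] cD3[of k] cV3[of "Suc k"] by (intro eq_matI) auto
    then show "V3 (Suc k) = (V3 (Suc k) - D3 (Suc k)) * Wt" using V3e[OF cD3] by simp
  qed
  interpret A: admm Ls n Lh Lm nh Yh Ym B M "R * E" E Wt rho lambda X V1 V2 V3 D1 D2 D3
    by (unfold_locales) (use Yh Ym B Mc REc E Wtc pos W1 W2 cV cX XO BR1k BR2k BR3k D1_step D2_step D3_step n_def in auto)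
  from A.X_conv show ?thesis unfolding mconv_def n_def .
qed

end
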